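(* Let $R$ and $H$ be hyperdomains, $X=\operatorname{Spec}R$ and $Y=\operatorname{Spec}H$ with their structure sheaves $\mathcal{O}_X,\mathcal{O}_Y$. Then there is a natural bijection \[\operatorname{Hom}(R,H)\cong\operatorname{Hom}(Y,X)\] between homomorphisms of hyperrings $R\to H$ and morphisms of locally hyperringed spaces $(Y,\mathcal{O}_Y)\to(X,\mathcal{O}_X)$; a homomorphism $\varphi$ corresponds to the morphism with underlying map $\mathfrak{p}\mapsto\varphi^{-1}(\mathfrak{p})$, and a morphism to the homomorphism obtained on global sections.
   Context: Hyperring: a set with a hyperoperation $+$ into nonempty subsets (extended to subsets by $A+B=\bigcup a+b$) making $(R,+,0)$ a canonical hypergroup (commutative, associative, unique $0$ with $0+x=\{x\}$, unique $-x$ with $0\in x+(-x)$, $x\in y+z\iff z\in x+(-y)$), and a commutative monoid $(R,\cdot,1)$, with $x(y+z)=xy+xz$, $0x=0$, $0\ne1$. Homomorphisms satisfy $\varphi(a+b)\subseteq\varphi(a)+\varphi(b)$, $\varphi(ab)=\varphi(a)\varphi(b)$. A hyperdomain has no zero-divisors. Hyperideals, primes, $\operatorname{Spec}$ with the Zariski topology and $D(f)$ are as for rings. Localization $T^{-1}R$ at a multiplicative submonoid $T$: pairs modulo $(r_1,t_1)\sim(r_2,t_2)\iff xr_1t_2=xr_2t_1$ for some $x\in T$, with $\frac{r_1}{t_1}+\frac{r_2}{t_2}=\{\frac y{t_1t_2}\mid y\in r_1t_2+t_1r_2\}$; $R_\mathfrak{p}=(R\setminus\mathfrak{p})^{-1}R$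 has a unique maximal hyperideal. The structure sheaf: $\mathcal{O}_X(U)$ is the set of maps $s:U\to\bigsqcup_{\mathfrak{p}\in U}R_\mathfrak{p}$, $s(\mathfrak{p})\in R_\mathfrak{p}$, locally of the form $\mathfrak{q}\mapsto\frac af$ with $f\notin\mathfrak{q}$, with pointwise multiplication and $s+t=\{r\mid r(\mathfrak{p})\in s(\mathfrak{p})+t(\mathfrak{p})\ \forall\mathfrak{p}\}$; for a hyperdomain this is a sheaf of hyperrings with $\mathcal{O}_X(X)\cong R$ and stalks $\mathcal{O}_{X,\mathfrak{p}}\cong R_\mathfrak{p}$. A morphism of locally hyperringed spaces $(Y,\mathcal{O}_Y)\to(X,\mathcal{O}_X)$ is a pair $(f,f^\#)$ of a continuous map $f:Y\to X$ and a morphism of sheaves of hyperrings $f^\#:\mathcal{O}_X\to f_*\mathcal{O}_Y$ (hyperring homomorphisms compatible with restrictions) such that each induced stalk map $\mathcal{O}_{X,f(\mathfrak{p})}\to\mathcal{O}_{Y,\mathfrak{p}}$ is local, i.e. the preimage of the maximal hyperideal is the maximal hyperideal. *)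

theory Defs
  imports Main "HOL-Library.FuncSet"
begin

record 'a hyperring =
  carrier :: "'a set"
  hadd :: "'a \<Rightarrow> 'a \<Rightarrow> 'a set"
  hmul :: "'a \<Rightarrow> 'a \<Rightarrow> 'a"
  hzero :: 'a
  hone :: 'a

definition hadd_set :: "'a hyperring \<Rightarrow> 'a set \<Rightarrow> 'a set \<Rightarrow> 'a set" where
  "hadd_set A X Y = (\<Union>x\<in>X. \<Union>y\<in>Y. hadd A x y)"

definition hneg :: "'a hyperring \<Rightarrow> 'a \<Rightarrow> 'a" where
  "hneg A x = (THE y. y \<in> carrier A \<and> hzero A \<in> hadd A x y)"

definition canonical_hypergroup :: "'a hyperring \<Rightarrow> bool" where
  "canonical_hypergroup A \<longleftrightarrow>
     hzero A \<in> carrier A \<and>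
     (\<forall>a\<in>carrier A. \<forall>b\<in>carrier A. hadd A a b \<noteq> {} \<and> hadd A a b \<subseteq> carrier A) \<and>
     (\<forall>a\<in>carrier A. \<forall>b\<in>carrier A. hadd A a b = hadd A b a) \<and>
     (\<forall>a\<in>carrier A. \<forall>b\<in>carrier A. \<forall>c\<in>carrier A.
        hadd_set A (hadd A a b) {c} = hadd_set A {a} (hadd A b c)) \<and>
     (\<forall>x\<in>carrier A. hadd A (hzero A) x = {x}) \<and>
     (\<forall>e\<in>carrier A. (\<forall>x\<in>carrier A. hadd A e x = {x}) \<longrightarrow> e = hzero A) \<and>
     (\<forall>x\<in>carrier A. \<exists>!y. y \<in> carrier A \<and> hzero A \<in> hadd A x y) \<and>
     (\<forall>x\<in>carrier A. \<forall>y\<in>carrier A. \<forall>z\<in>carrier A.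
        x \<in> hadd A y z \<longleftrightarrow> z \<in> hadd A x (hneg A y))"

definition hyperring :: "'a hyperring \<Rightarrow> bool" where
  "hyperring A \<longleftrightarrow>
     canonical_hypergroup A \<and>
     (\<forall>a\<in>carrier A. \<forall>b\<in>carrier A. hmul A a b \<in> carrier A) \<and>
     (\<forall>a\<in>carrier A. \<forall>b\<in>carrier A. \<forall>c\<in>carrier A.
        hmul A (hmul A a b) c = hmul A a (hmul A b c)) \<and>
     (\<forall>a\<in>carrier A. \<forall>b\<in>carrier A. hmul A a b = hmul A b a) \<and>
     hone A \<in> carrier A \<and>
     (\<forall>x\<in>carrier A. hmul A (hone A) x = x) \<and>
     (\<forall>x\<in>carrier A. \<forall>y\<in>carrier A. \<forall>z\<in>carrier A.
        hmul A x ` hadd A y z = hadd A (hmul A x y) (hmul A x z)) \<and>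
     (\<forall>x\<in>carrier A. hmul A (hzero A) x = hzero A) \<and>
     hzero A \<noteq> hone A"

definition hyperdomain :: "'a hyperring \<Rightarrow> bool" where
  "hyperdomain A \<longleftrightarrow> hyperring A \<and>
     (\<forall>a\<in>carrier A. \<forall>b\<in>carrier A. hmul A a b = hzero A \<longrightarrow> a = hzero A \<or> b = hzero A)"

definition hyperring_hom :: "'a hyperring \<Rightarrow> 'b hyperring \<Rightarrow> ('a \<Rightarrow> 'b) \<Rightarrow> bool" where
  "hyperring_hom A B \<phi> \<longleftrightarrow>
     \<phi> \<in> carrier A \<rightarrow> carrier B \<and>
     (\<forall>a\<in>carrier A. \<forall>b\<in>carrier A. \<phi> ` hadd A a b \<subseteq> hadd B (\<phi> a) (\<phi> b)) \<and>
     (\<forall>a\<in>carrier A. \<forall>b\<in>carrier A. \<phi> (hmul A a b) = hmul B (\<phi> a) (\<phi> b)) \<and>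
     \<phi> (hzero A) = hzero B \<and> \<phi> (hone A) = hone B"

definition hyperring_homs :: "'a hyperring \<Rightarrow> 'b hyperring \<Rightarrow> ('a \<Rightarrow> 'b) set" where
  "hyperring_homs A B = {\<phi>. hyperring_hom A B \<phi> \<and> \<phi> \<in> extensional (carrier A)}"

definition hyperideal :: "'a hyperring \<Rightarrow> 'a set \<Rightarrow> bool" where
  "hyperideal A I \<longleftrightarrow> I \<subseteq> carrier A \<and> I \<noteq> {} \<and>
     (\<forall>a\<in>I. \<forall>b\<in>I. hadd A a b \<subseteq> I) \<and>
     (\<forall>a\<in>I. hneg A a \<in> I) \<and>
     (\<forall>r\<in>carrier A. \<forall>a\<in>I. hmul A r a \<in> I)"

definition prime_hyperideal :: "'a hyperring \<Rightarrow> 'a set \<Rightarrow> bool" where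
  "prime_hyperideal A P \<longleftrightarrow> hyperideal A P \<and> P \<noteq> carrier A \<and>
     (\<forall>a\<in>carrier A. \<forall>b\<in>carrier A. hmul A a b \<in> P \<longrightarrow> a \<in> P \<or> b \<in> P)"

definition maximal_hyperideal :: "'a hyperring \<Rightarrow> 'a set \<Rightarrow> bool" where
  "maximal_hyperideal A M \<longleftrightarrow> hyperideal A M \<and> M \<noteq> carrier A \<and>
     (\<forall>J. hyperideal A J \<and> M \<subseteq> J \<longrightarrow> J = M \<or> J = carrier A)"

definition Spec :: "'a hyperring \<Rightarrow> 'a set set" where
  "Spec A = {P. prime_hyperideal A P}"

definition zariski_open :: "'a hyperring \<Rightarrow> 'a set set \<Rightarrow> bool" where
  "zariski_open A U \<longleftrightarrow> (\<exists>S\<subseteq>carrier A. U = {P\<in>Spec A. \<not> S \<subseteq> P})"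

definition loc_rel :: "'a hyperring \<Rightarrow> 'a set \<Rightarrow> 'a \<times> 'a \<Rightarrow> 'a \<times> 'a \<Rightarrow> bool" where
  "loc_rel A T p q \<longleftrightarrow> (case p of (r1, t1) \<Rightarrow> case q of (r2, t2) \<Rightarrow>
     r1 \<in> carrier A \<and> r2 \<in> carrier A \<and> t1 \<in> T \<and> t2 \<in> T \<and>
     (\<exists>x\<in>T. hmul A x (hmul A r1 t2) = hmul A x (hmul A r2 t1)))"

definition loc_class :: "'a hyperring \<Rightarrow> 'a set \<Rightarrow> 'a \<Rightarrow> 'a \<Rightarrow> ('a \<times> 'a) set" where
  "loc_class A T r t = {p. loc_rel A T p (r, t)}"

definition loc_carrier :: "'a hyperring \<Rightarrow> 'a set \<Rightarrow> ('a \<times> 'a) set set" where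
  "loc_carrier A T = {loc_class A T r t | r t. r \<in> carrier A \<and> t \<in> T}"

definition loc_rep :: "('a \<times> 'a) set \<Rightarrow> 'a \<times> 'a" where
  "loc_rep c = (SOME p. p \<in> c)"

definition loc_mul :: "'a hyperring \<Rightarrow> 'a set \<Rightarrow> ('a \<times> 'a) set \<Rightarrow> ('a \<times> 'a) set \<Rightarrow> ('a \<times> 'a) set" where
  "loc_mul A T c d = (case loc_rep c of (r1, t1) \<Rightarrow> case loc_rep d of (r2, t2) \<Rightarrow>
     loc_class A T (hmul A r1 r2) (hmul A t1 t2))"

definition loc_add :: "'a hyperring \<Rightarrow> 'a set \<Rightarrow> ('a \<times> 'a) set \<Rightarrow> ('a \<times> 'a) set \<Rightarrow> ('a \<times> 'a) set set" where
  "loc_add A T c d = (case loc_rep c of (r1, t1) \<Rightarrow> case loc_rep d of (r2, t2) \<Rightarrow>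
     {loc_class A T y (hmul A t1 t2) | y. y \<in> hadd A (hmul A r1 t2) (hmul A t1 r2)})"

text \<open>The localization T^{-1}A; R_p is localization A (carrier A - p).\<close>
definition localization :: "'a hyperring \<Rightarrow> 'a set \<Rightarrow> ('a \<times> 'a) set hyperring" where
  "localization A T = \<lparr> carrier = loc_carrier A T, hadd = loc_add A T, hmul = loc_mul A T,
     hzero = loc_class A T (hzero A) (hone A), hone = loc_class A T (hone A) (hone A) \<rparr>"

type_synonym 'a sect = "'a set \<Rightarrow> ('a \<times> 'a) set"

definition sections :: "'a hyperring \<Rightarrow> 'a set set \<Rightarrow> 'a sect set" where
  "sections A U = {s. s \<in> extensional U \<and>
     (\<forall>P\<in>U. s P \<in> loc_carrier A (carrier A - P)) \<and>
     (\<forall>P\<in>U. \<exists>V. zariski_open A V \<and> P \<in> V \<and> V \<subseteq> U \<and>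
        (\<exists>a\<in>carrier A. \<exists>f\<in>carrier A. \<forall>Q\<in>V. f \<notin> Q \<and> s Q = loc_class A (carrier A - Q) a f))}"

definition OX :: "'a hyperring \<Rightarrow> 'a set set \<Rightarrow> 'a sect hyperring" where
  "OX A U = \<lparr> carrier = sections A U,
     hadd = (\<lambda>s t. {r \<in> sections A U. \<forall>P\<in>U. r P \<in> loc_add A (carrier A - P) (s P) (t P)}),
     hmul = (\<lambda>s t. (\<lambda>P\<in>U. loc_mul A (carrier A - P) (s P) (t P))),
     hzero = (\<lambda>P\<in>U. loc_class A (carrier A - P) (hzero A) (hone A)),
     hone = (\<lambda>P\<in>U. loc_class A (carrier A - P) (hone A) (hone A)) \<rparr>"

definition germ :: "'a hyperring \<Rightarrow> 'a set \<Rightarrow> 'a set set \<Rightarrow> 'a sect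
    \<Rightarrow> ('a set set \<times> 'a sect) set" where
  "germ A P U s = {(V, t). zariski_open A V \<and> P \<in> V \<and> t \<in> sections A V \<and>
     (\<exists>W. zariski_open A W \<and> P \<in> W \<and> W \<subseteq> U \<inter> V \<and> restrict s W = restrict t W)}"

definition stalk_carrier :: "'a hyperring \<Rightarrow> 'a set \<Rightarrow> ('a set set \<times> 'a sect) set set" where
  "stalk_carrier A P = {germ A P U s | U s. zariski_open A U \<and> P \<in> U \<and> s \<in> sections A U}"

definition stalk :: "'a hyperring \<Rightarrow> 'a set \<Rightarrow> ('a set set \<times> 'a sect) set hyperring" where
  "stalk A P = \<lparr> carrier = stalk_carrier A P,
     hadd = (\<lambda>g h. {germ A P W r | W r. zariski_open A W \<and> P \<in> W \<and>
        (\<exists>s t. s \<in> sections A W \<and> t \<in> sections A W \<and> germ A P W s = g \<and> germ A P W t = h \<and>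
               r \<in> hadd (OX A W) s t)}),
     hmul = (\<lambda>g h. case (SOME x. x \<in> g) of (U, s) \<Rightarrow> case (SOME y. y \<in> h) of (V, t) \<Rightarrow>
        germ A P (U \<inter> V) (hmul (OX A (U \<inter> V)) (restrict s (U \<inter> V)) (restrict t (U \<inter> V)))),
     hzero = germ A P (Spec A) (hzero (OX A (Spec A))),
     hone = germ A P (Spec A) (hone (OX A (Spec A))) \<rparr>"

definition preimg :: "('b \<Rightarrow> 'a) \<Rightarrow> 'b set \<Rightarrow> 'a set \<Rightarrow> 'b set" where
  "preimg f Y U = {q \<in> Y. f q \<in> U}"

type_synonym ('a, 'b) sheaf_map = "'a set set \<Rightarrow> 'a sect \<Rightarrow> 'b sect"

definition stalk_map :: "'b hyperring \<Rightarrow> ('b set \<Rightarrow> 'a set) \<Rightarrow> ('a, 'b) sheaf_map \<Rightarrow> 'b set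
    \<Rightarrow> ('a set set \<times> 'a sect) set \<Rightarrow> ('b set set \<times> 'b sect) set" where
  "stalk_map H f fs P g = (case (SOME x. x \<in> g) of (U, s) \<Rightarrow>
     germ H P (preimg f (Spec H) U) (fs U s))"

definition is_lhs_morphism :: "'b hyperring \<Rightarrow> 'a hyperring \<Rightarrow> ('b set \<Rightarrow> 'a set) \<Rightarrow> ('a, 'b) sheaf_map \<Rightarrow> bool" where
  "is_lhs_morphism H R f fs \<longleftrightarrow>
     f \<in> Spec H \<rightarrow> Spec R \<and>
     (\<forall>U. zariski_open R U \<longrightarrow> zariski_open H (preimg f (Spec H) U)) \<and>
     (\<forall>U. zariski_open R U \<longrightarrow> hyperring_hom (OX R U) (OX H (preimg f (Spec H) U)) (fs U)) \<and>
     (\<forall>U V. zariski_open R U \<and> zariski_open R V \<and> V \<subseteq> U \<longrightarrow>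
        (\<forall>s\<in>sections R U. fs V (restrict s V) = restrict (fs U s) (preimg f (Spec H) V))) \<and>
     (\<forall>P\<in>Spec H. \<forall>m n. maximal_hyperideal (stalk R (f P)) m \<and> maximal_hyperideal (stalk H P) n \<longrightarrow>
        {g \<in> carrier (stalk R (f P)). stalk_map H f fs P g \<in> n} = m)"

text \<open>Hom(Y,X), with the data taken extensional so that equality is equality of morphisms.\<close>
definition lhs_morphisms :: "'b hyperring \<Rightarrow> 'a hyperring \<Rightarrow> (('b set \<Rightarrow> 'a set) \<times> ('a, 'b) sheaf_map) set" where
  "lhs_morphisms H R = {(f, fs). is_lhs_morphism H R f fs \<and> f \<in> extensional (Spec H) \<and>
     (\<forall>U. if zariski_open R U then fs U \<in> extensional (sections R U) else fs U = undefined)}"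

definition spec_map :: "'a hyperring \<Rightarrow> 'b hyperring \<Rightarrow> ('a \<Rightarrow> 'b) \<Rightarrow> 'b set \<Rightarrow> 'a set" where
  "spec_map R H \<phi> = (\<lambda>Q\<in>Spec H. {x \<in> carrier R. \<phi> x \<in> Q})"

definition global_canon :: "'a hyperring \<Rightarrow> 'a \<Rightarrow> 'a sect" where
  "global_canon A r = (\<lambda>P\<in>Spec A. loc_class A (carrier A - P) r (hone A))"

text \<open>The homomorphism R \<rightarrow> H obtained on global sections (via O_X(X) = R, O_Y(Y) = H).\<close>
definition global_hom :: "'a hyperring \<Rightarrow> 'b hyperring \<Rightarrow> (('b set \<Rightarrow> 'a set) \<times> ('a, 'b) sheaf_map) \<Rightarrow> 'a \<Rightarrow> 'b" where
  "global_hom R H m = (\<lambda>r\<in>carrier R. THE h. h \<in> carrier H \<and>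
     global_canon H h = snd m (Spec R) (global_canon R r))"

end

theory Submission
  imports Defs
begin

locale hdom = fixes A :: "'a hyperring" assumes hd: "hyperdomain A"
begin

abbreviation "K \<equiv> carrier A"
abbreviation mul (infixl "\<cdot>" 70) where "mul \<equiv> hmul A"
abbreviation add (infixl "\<oplus>" 65) where "add \<equiv> hadd A"
abbreviation "z0 \<equiv> hzero A"
abbreviation "e1 \<equiv> hone A"
abbreviation "ng \<equiv> hneg A"

lemma ax: "canonical_hypergroup A" "hyperring A"
  using hd unfolding hyperdomain_def hyperring_def by auto

lemma zero_in[simp]: "z0 \<in> K" using ax unfolding canonical_hypergroup_def by auto
lemma one_in[simp]: "e1 \<in> K" using ax unfolding hyperring_def by auto
lemma mul_in[simp]: "a \<in> K \<Longrightarrow> b \<in> K \<Longrightarrow> a \<cdot> b \<in> K" using ax unfolding hyperring_def by auto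
lemma add_sub: "a \<in> K \<Longrightarrow> b \<in> K \<Longrightarrow> a \<oplus> b \<subseteq> K" using ax unfolding canonical_hypergroup_def by auto
lemma add_in: "a \<in> K \<Longrightarrow> b \<in> K \<Longrightarrow> x \<in> a \<oplus> b \<Longrightarrow> x \<in> K" using add_sub by blast
lemma add_ne: "a \<in> K \<Longrightarrow> b \<in> K \<Longrightarrow> a \<oplus> b \<noteq> {}" using ax unfolding canonical_hypergroup_def by auto
lemma add_comm: "a \<in> K \<Longrightarrow> b \<in> K \<Longrightarrow> a \<oplus> b = b \<oplus> a" using ax unfolding canonical_hypergroup_def by auto
lemma add_assoc_el: "a \<in> K \<Longrightarrow> b \<in> K \<Longrightarrow> c \<in> K \<Longrightarrow>
   (\<exists>u\<in>a \<oplus> b. z \<in> u \<oplus> c) \<longleftrightarrow> (\<exists>v\<in>b \<oplus> c. z \<in> a \<oplus> v)"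
proof -
  assume "a \<in> K" "b \<in> K" "c \<in> K"
  hence "hadd_set A (a \<oplus> b) {c} = hadd_set A {a} (b \<oplus> c)"
    using ax unfolding canonical_hypergroup_def by auto
  thus ?thesis unfolding hadd_set_def by blast
qed
lemma zero_add[simp]: "x \<in> K \<Longrightarrow> z0 \<oplus> x = {x}" using ax unfolding canonical_hypergroup_def by auto
lemma add_zero[simp]: "x \<in> K \<Longrightarrow> x \<oplus> z0 = {x}" using add_comm[of x z0] by simp
lemma neg_ex1: "x \<in> K \<Longrightarrow> \<exists>!y. y \<in> K \<and> z0 \<in> x \<oplus> y" using ax unfolding canonical_hypergroup_def by auto
lemma rev: "x \<in> K \<Longrightarrow> y \<in> K \<Longrightarrow> z \<in> K \<Longrightarrow> x \<in> y \<oplus> z \<longleftrightarrow> z \<in> x \<oplus> ng y"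
  using ax unfolding canonical_hypergroup_def by auto
lemma mul_assoc: "a \<in> K \<Longrightarrow> b \<in> K \<Longrightarrow> c \<in> K \<Longrightarrow> a \<cdot> b \<cdot> c = a \<cdot> (b \<cdot> c)"
  using ax unfolding hyperring_def by auto
lemma mul_comm: "a \<in> K \<Longrightarrow> b \<in> K \<Longrightarrow> a \<cdot> b = b \<cdot> a"
  using ax unfolding hyperring_def by auto
lemma mul_lcomm: "a \<in> K \<Longrightarrow> b \<in> K \<Longrightarrow> c \<in> K \<Longrightarrow> a \<cdot> (b \<cdot> c) = b \<cdot> (a \<cdot> c)"
  using mul_assoc[of a b c] mul_assoc[of b a c] mul_comm[of a b] by simp
lemmas mul_ac = mul_assoc mul_comm mul_lcomm
lemma one_mul[simp]: "x \<in> K \<Longrightarrow> e1 \<cdot> x = x" using ax unfolding hyperring_def by auto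
lemma mul_one[simp]: "x \<in> K \<Longrightarrow> x \<cdot> e1 = x" using mul_comm[of x e1] by simp
lemma distr: "x \<in> K \<Longrightarrow> y \<in> K \<Longrightarrow> z \<in> K \<Longrightarrow> mul x ` (y \<oplus> z) = (x \<cdot> y) \<oplus> (x \<cdot> z)"
  using ax unfolding hyperring_def by auto
lemma zero_mul[simp]: "x \<in> K \<Longrightarrow> z0 \<cdot> x = z0" using ax unfolding hyperring_def by auto
lemma mul_zero[simp]: "x \<in> K \<Longrightarrow> x \<cdot> z0 = z0" using mul_comm[of x z0] by simp
lemma zero_ne_one[simp]: "z0 \<noteq> e1" "e1 \<noteq> z0" using ax unfolding hyperring_def by auto
lemma nzd: "a \<in> K \<Longrightarrow> b \<in> K \<Longrightarrow> a \<cdot> b = z0 \<Longrightarrow> a = z0 \<or> b = z0"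
  using hd unfolding hyperdomain_def by auto
lemma mul_nz: "a \<in> K \<Longrightarrow> b \<in> K \<Longrightarrow> a \<noteq> z0 \<Longrightarrow> b \<noteq> z0 \<Longrightarrow> a \<cdot> b \<noteq> z0"
  using nzd by blast

lemma neg_in[simp]: "x \<in> K \<Longrightarrow> ng x \<in> K"
  and neg_zero: "x \<in> K \<Longrightarrow> z0 \<in> x \<oplus> ng x"
proof -
  assume x: "x \<in> K"
  have "ng x \<in> K \<and> z0 \<in> x \<oplus> ng x" unfolding hneg_def by (rule theI'[OF neg_ex1[OF x]])
  thus "ng x \<in> K" "z0 \<in> x \<oplus> ng x" by auto
qed

lemma neg_unique: "x \<in> K \<Longrightarrow> y \<in> K \<Longrightarrow> z0 \<in> x \<oplus> y \<Longrightarrow> y = ng x"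
  using neg_ex1 neg_in neg_zero by blast

lemma cancel: assumes "x \<in> K" "r \<in> K" "s \<in> K" "x \<noteq> z0" "x \<cdot> r = x \<cdot> s" shows "r = s"
proof -
  have "x \<cdot> z0 \<in> mul x ` (s \<oplus> ng s)" using neg_zero[OF assms(3)] by (rule imageI)
  hence "z0 \<in> mul x ` (s \<oplus> ng s)" using assms(1) by simp
  also have "mul x ` (s \<oplus> ng s) = (x \<cdot> s) \<oplus> (x \<cdot> ng s)" using distr[of x s "ng s"] assms by simp
  also have "\<dots> = (x \<cdot> r) \<oplus> (x \<cdot> ng s)" using assms(5) by simp
  also have "\<dots> = mul x ` (r \<oplus> ng s)" using distr[of x r "ng s"] assms by simp
  finally obtain z where z: "z \<in> r \<oplus> ng s" "x \<cdot> z = z0" by (metis imageE)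
  have "z \<in> K" using add_in[OF assms(2) neg_in[OF assms(3)] z(1)] .
  hence "z = z0" using nzd[of x z] z(2) assms by blast
  hence "z0 \<in> r \<oplus> ng s" using z by simp
  hence "r \<in> s \<oplus> z0" using rev[of r s z0] assms by simp
  thus ?thesis using assms by simp
qed

lemma cancel_r: "x \<in> K \<Longrightarrow> r \<in> K \<Longrightarrow> s \<in> K \<Longrightarrow> x \<noteq> z0 \<Longrightarrow> r \<cdot> x = s \<cdot> x \<Longrightarrow> r = s"
  using cancel[of x r s] mul_comm[of r x] mul_comm[of s x] by simp

lemma mul_neg: assumes "x \<in> K" "y \<in> K" shows "x \<cdot> ng y = ng (x \<cdot> y)"
proof -
  have "x \<cdot> z0 \<in> mul x ` (y \<oplus> ng y)" using neg_zero[OF assms(2)] by (rule imageI)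
  hence "z0 \<in> mul x ` (y \<oplus> ng y)" using assms(1) by simp
  hence "z0 \<in> (x \<cdot> y) \<oplus> (x \<cdot> ng y)" using distr[of x y "ng y"] assms by simp
  thus ?thesis using neg_unique assms by simp
qed

lemma neg_one_mul: "x \<in> K \<Longrightarrow> ng e1 \<cdot> x = ng x"
  using mul_neg[of x e1] mul_comm[of "ng e1" x] by simp

lemma neg_add: assumes "x \<in> y \<oplus> z" "y \<in> K" "z \<in> K" shows "ng x \<in> ng y \<oplus> ng z"
proof -
  have x: "x \<in> K" using add_in[OF assms(2,3,1)] .
  have "ng e1 \<cdot> x \<in> mul (ng e1) ` (y \<oplus> z)" using assms by auto
  also have "\<dots> = (ng e1 \<cdot> y) \<oplus> (ng e1 \<cdot> z)" using distr assms by simp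
  finally show ?thesis using assms x by (simp add: neg_one_mul)
qed

end

definition Cc :: "'a hyperring \<Rightarrow> 'a set \<Rightarrow> 'a \<Rightarrow> 'a \<Rightarrow> ('a \<times> 'a) set" where
  "Cc A T a f = {(r,t). r \<in> carrier A \<and> t \<in> T \<and> hmul A r f = hmul A a t}"

context hdom begin

lemma spec_D: assumes "P \<in> Spec A"
  shows "P \<subseteq> K" "P \<noteq> K" "\<And>a b. a \<in> P \<Longrightarrow> b \<in> P \<Longrightarrow> a \<oplus> b \<subseteq> P"
    "\<And>a. a \<in> P \<Longrightarrow> ng a \<in> P" "\<And>r a. r \<in> K \<Longrightarrow> a \<in> P \<Longrightarrow> r \<cdot> a \<in> P"
    "\<And>a b. a \<in> K \<Longrightarrow> b \<in> K \<Longrightarrow> a \<cdot> b \<in> P \<Longrightarrow> a \<in> P \<or> b \<in> P" "P \<noteq> {}"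
  using assms unfolding Spec_def prime_hyperideal_def hyperideal_def by auto

lemma spec_sub: "P \<in> Spec A \<Longrightarrow> x \<in> P \<Longrightarrow> x \<in> K" using spec_D(1) by blast

lemma spec_zero[simp]: "P \<in> Spec A \<Longrightarrow> z0 \<in> P"
proof -
  assume P: "P \<in> Spec A"
  then obtain a where a: "a \<in> P" using spec_D(7) by blast
  have "z0 \<cdot> a \<in> P" using spec_D(5)[OF P _ a] by simp
  thus ?thesis using spec_sub[OF P a] by simp
qed

lemma spec_one[simp]: "P \<in> Spec A \<Longrightarrow> e1 \<notin> P"
proof
  assume P: "P \<in> Spec A" and "e1 \<in> P"
  hence "\<forall>r\<in>K. r \<in> P" using spec_D(5)[OF P, of _ e1] by simp
  thus False using spec_D(1,2)[OF P] by blast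
qed

lemma spec_mul_r: "P \<in> Spec A \<Longrightarrow> a \<in> P \<Longrightarrow> r \<in> K \<Longrightarrow> a \<cdot> r \<in> P"
proof -
  assume h: "P \<in> Spec A" "a \<in> P" "r \<in> K"
  have "a \<in> K" using spec_sub[OF h(1,2)] .
  thus ?thesis using spec_D(5)[OF h(1,3,2)] mul_comm[of a r] h(3) by simp
qed

lemma spec_mul_notin: "P \<in> Spec A \<Longrightarrow> a \<in> K \<Longrightarrow> b \<in> K \<Longrightarrow> a \<notin> P \<Longrightarrow> b \<notin> P \<Longrightarrow> a \<cdot> b \<notin> P"
  using spec_D(6) by blast

lemma spec_nz: "P \<in> Spec A \<Longrightarrow> f \<notin> P \<Longrightarrow> f \<noteq> z0" by auto

lemma zero_spec: "{z0} \<in> Spec A"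
proof -
  have 1: "{z0} \<noteq> K" using one_in zero_ne_one(2) by blast
  have 2: "\<forall>a\<in>K. \<forall>b\<in>K. a \<cdot> b \<in> {z0} \<longrightarrow> a \<in> {z0} \<or> b \<in> {z0}" using nzd by blast
  have 3: "\<forall>a\<in>{z0}. \<forall>b\<in>{z0}. a \<oplus> b \<subseteq> {z0}" by simp
  have "z0 \<in> z0 \<oplus> z0" by simp
  hence "z0 = ng z0" using neg_unique[of z0 z0] by simp
  hence 4: "\<forall>a\<in>{z0}. ng a \<in> {z0}" by simp
  have 5: "\<forall>r\<in>K. \<forall>a\<in>{z0}. r \<cdot> a \<in> {z0}" by simp
  show ?thesis unfolding Spec_def prime_hyperideal_def hyperideal_def
    using 1 2 3 4 5 by simp
qed

section \<open>Zariski opens\<close>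

lemma open_Int: assumes "zariski_open A U" "zariski_open A V" shows "zariski_open A (U \<inter> V)"
proof -
  obtain S where S: "S \<subseteq> K" "U = {P\<in>Spec A. \<not> S \<subseteq> P}" using assms(1) unfolding zariski_open_def by blast
  obtain S' where S': "S' \<subseteq> K" "V = {P\<in>Spec A. \<not> S' \<subseteq> P}" using assms(2) unfolding zariski_open_def by blast
  let ?T = "{a \<cdot> b | a b. a \<in> S \<and> b \<in> S'}"
  have "?T \<subseteq> K" using S S' mul_in by blast
  moreover have "U \<inter> V = {P\<in>Spec A. \<not> ?T \<subseteq> P}"
  proof (rule set_eqI, rule iffI)
    fix P assume "P \<in> U \<inter> V"
    then obtain a b where "a \<in> S" "b \<in> S'" "a \<notin> P" "b \<notin> P" "P \<in> Spec A" using S S' by auto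
    hence "a \<cdot> b \<notin> P" using spec_mul_notin S S' by blast
    thus "P \<in> {P\<in>Spec A. \<not> ?T \<subseteq> P}" using \<open>a \<in> S\<close> \<open>b \<in> S'\<close> \<open>P \<in> Spec A\<close> by blast
  next
    fix P assume "P \<in> {P\<in>Spec A. \<not> ?T \<subseteq> P}"
    then obtain a b where ab: "a \<in> S" "b \<in> S'" "a \<cdot> b \<notin> P" and P: "P \<in> Spec A" by blast
    have "a \<notin> P" using ab S S' spec_mul_r[OF P, of a b] by blast
    moreover have "b \<notin> P" using ab S S' spec_D(5)[OF P, of a b] by blast
    ultimately show "P \<in> U \<inter> V" using ab S S' P by blast
  qed
  ultimately show ?thesis unfolding zariski_open_def by blast
qed

lemma open_D1: "f \<in> K \<Longrightarrow> zariski_open A {P\<in>Spec A. f \<notin> P}"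
  unfolding zariski_open_def by (rule exI[of _ "{f}"]) auto

lemma open_Spec: "zariski_open A (Spec A)"
  unfolding zariski_open_def by (rule exI[of _ "{e1}"]) auto

lemma open_empty: "zariski_open A {}"
  unfolding zariski_open_def by (rule exI[of _ "{}"]) auto

lemma open_sub: "zariski_open A U \<Longrightarrow> U \<subseteq> Spec A"
  unfolding zariski_open_def by auto

lemma open_generic: assumes "zariski_open A U" "P \<in> U" shows "{z0} \<in> U"
proof -
  obtain S where S: "S \<subseteq> K" "U = {P\<in>Spec A. \<not> S \<subseteq> P}" using assms(1) unfolding zariski_open_def by blast
  then obtain a where "a \<in> S" "a \<notin> P" using assms by auto
  hence "a \<noteq> z0" using S assms spec_zero by auto
  thus ?thesis using S zero_spec \<open>a \<in> S\<close> by auto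
qed

section \<open>Fraction classes\<close>

lemma C_mem: "(r,t) \<in> Cc A T a f \<longleftrightarrow> r \<in> K \<and> t \<in> T \<and> r \<cdot> f = a \<cdot> t"
  unfolding Cc_def by simp

lemma C_self: "a \<in> K \<Longrightarrow> f \<in> T \<Longrightarrow> (a,f) \<in> Cc A T a f"
  unfolding Cc_def by simp

lemma loc_class_C: assumes "Q \<in> Spec A" "a \<in> K" "f \<in> K" "f \<notin> Q"
  shows "loc_class A (K - Q) a f = Cc A (K - Q) a f"
proof -
  have "(r,t) \<in> loc_class A (K - Q) a f \<longleftrightarrow> (r,t) \<in> Cc A (K - Q) a f" for r t
  proof
    assume "(r,t) \<in> loc_class A (K - Q) a f"
    then obtain x where x: "x \<in> K - Q" "x \<cdot> (r \<cdot> f) = x \<cdot> (a \<cdot> t)" and rt: "r \<in> K" "t \<in> K - Q"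
      unfolding loc_class_def loc_rel_def by auto
    have "x \<noteq> z0" using x assms(1) by auto
    hence "r \<cdot> f = a \<cdot> t" using cancel[OF _ _ _ _ x(2)] x(1) rt assms(2,3) by simp
    thus "(r,t) \<in> Cc A (K - Q) a f" using rt C_mem by simp
  next
    assume "(r,t) \<in> Cc A (K - Q) a f"
    hence h: "r \<in> K" "t \<in> K - Q" "r \<cdot> f = a \<cdot> t" using C_mem by auto
    have "e1 \<in> K - Q" using assms(1) by simp
    thus "(r,t) \<in> loc_class A (K - Q) a f" unfolding loc_class_def loc_rel_def
      using assms h by (auto intro!: bexI[of _ e1])
  qed
  thus ?thesis by (intro set_eqI) (metis surj_pair)
qed

lemma C_cong: assumes "T \<subseteq> K" "a \<in> K" "b \<in> K" "f \<in> K" "g \<in> K" "f \<noteq> z0" "g \<noteq> z0" "a \<cdot> g = b \<cdot> f"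
  shows "Cc A T a f = Cc A T b g"
proof -
  have "r \<cdot> f = a \<cdot> t \<longleftrightarrow> r \<cdot> g = b \<cdot> t" if "r \<in> K" "t \<in> K" for r t
  proof
    assume h: "r \<cdot> f = a \<cdot> t"
    have "r \<cdot> g \<cdot> f = (r \<cdot> f) \<cdot> g" using that assms(2-5) by (simp add: mul_ac)
    also have "\<dots> = (a \<cdot> t) \<cdot> g" using h by simp
    also have "\<dots> = (a \<cdot> g) \<cdot> t" using that assms(2-5) by (simp add: mul_ac)
    also have "\<dots> = (b \<cdot> f) \<cdot> t" using assms(8) by simp
    also have "\<dots> = b \<cdot> t \<cdot> f" using that assms(2-5) by (simp add: mul_ac)
    finally show "r \<cdot> g = b \<cdot> t" using cancel_r[of f "r \<cdot> g" "b \<cdot> t"] that assms by simp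
  next
    assume h: "r \<cdot> g = b \<cdot> t"
    have "r \<cdot> f \<cdot> g = (r \<cdot> g) \<cdot> f" using that assms(2-5) by (simp add: mul_ac)
    also have "\<dots> = (b \<cdot> t) \<cdot> f" using h by simp
    also have "\<dots> = (b \<cdot> f) \<cdot> t" using that assms(2-5) by (simp add: mul_ac)
    also have "\<dots> = (a \<cdot> g) \<cdot> t" using assms(8) by simp
    also have "\<dots> = a \<cdot> t \<cdot> g" using that assms(2-5) by (simp add: mul_ac)
    finally show "r \<cdot> f = a \<cdot> t" using cancel_r[of g "r \<cdot> f" "a \<cdot> t"] that assms by simp
  qed
  thus ?thesis unfolding Cc_def using assms(1) by blast
qed

lemma C_eq: assumes "T \<subseteq> K - {z0}" "a \<in> K" "b \<in> K" "f \<in> K" "g \<in> K"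
  "Cc A T a f = Cc A T b g" "p \<in> Cc A T a f" shows "a \<cdot> g = b \<cdot> f"
proof -
  obtain r t where p: "p = (r,t)" by fastforce
  have h1: "r \<in> K" "t \<in> T" "r \<cdot> f = a \<cdot> t" using assms(7) p C_mem by auto
  have "(r,t) \<in> Cc A T b g" using assms(6,7) p by simp
  hence h2: "r \<cdot> g = b \<cdot> t" using C_mem by simp
  have t: "t \<in> K" "t \<noteq> z0" using h1(2) assms(1) by auto
  have "a \<cdot> g \<cdot> t = (a \<cdot> t) \<cdot> g" using h1(1) t assms(2-5) by (simp add: mul_ac)
  also have "\<dots> = (r \<cdot> f) \<cdot> g" using h1 by simp
  also have "\<dots> = (r \<cdot> g) \<cdot> f" using h1(1) t assms(2-5) by (simp add: mul_ac)
  also have "\<dots> = (b \<cdot> t) \<cdot> f" using h2 by simp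
  also have "\<dots> = b \<cdot> f \<cdot> t" using h1(1) t assms(2-5) by (simp add: mul_ac)
  finally show ?thesis using cancel_r[of t "a \<cdot> g" "b \<cdot> f"] t assms by simp
qed

lemma T_sub: "Q \<in> Spec A \<Longrightarrow> K - Q \<subseteq> K - {z0}" by auto

lemma C_mem_cong: assumes "Q \<in> Spec A" "a \<in> K" "f \<in> K" "f \<noteq> z0" "p \<in> Cc A (K - Q) a f"
  shows "Cc A (K - Q) (fst p) (snd p) = Cc A (K - Q) a f" "fst p \<in> K" "snd p \<in> K" "snd p \<notin> Q"
    "fst p \<cdot> f = a \<cdot> snd p"
proof -
  obtain r t where p: "p = (r,t)" by fastforce
  have h: "r \<in> K" "t \<in> K" "t \<notin> Q" "r \<cdot> f = a \<cdot> t" using assms(5) p C_mem by auto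
  have "t \<noteq> z0" using h(3) assms(1) by auto
  moreover have "r \<cdot> f = a \<cdot> t" using h by simp
  ultimately have "Cc A (K - Q) r t = Cc A (K - Q) a f"
    using C_cong[of "K - Q" r a t f] h assms by blast
  thus "Cc A (K - Q) (fst p) (snd p) = Cc A (K - Q) a f" using p by simp
  show "fst p \<in> K" "snd p \<in> K" "snd p \<notin> Q" "fst p \<cdot> f = a \<cdot> snd p" using p h by auto
qed

lemma loc_carrier_iff: assumes "Q \<in> Spec A"
  shows "c \<in> loc_carrier A (K - Q) \<longleftrightarrow> (\<exists>a f. a \<in> K \<and> f \<in> K \<and> f \<notin> Q \<and> c = Cc A (K - Q) a f)"
proof
  assume "c \<in> loc_carrier A (K - Q)"
  then obtain a f where "a \<in> K" "f \<in> K - Q" "c = loc_class A (K - Q) a f" unfolding loc_carrier_def by blast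
  thus "\<exists>a f. a \<in> K \<and> f \<in> K \<and> f \<notin> Q \<and> c = Cc A (K - Q) a f" using loc_class_C[OF assms] by blast
next
  assume "\<exists>a f. a \<in> K \<and> f \<in> K \<and> f \<notin> Q \<and> c = Cc A (K - Q) a f"
  then obtain a f where "a \<in> K" "f \<in> K" "f \<notin> Q" "c = Cc A (K - Q) a f" by blast
  thus "c \<in> loc_carrier A (K - Q)" unfolding loc_carrier_def using loc_class_C[OF assms] by blast
qed

lemma loc_rep_in: "p \<in> c \<Longrightarrow> loc_rep c \<in> c"
  unfolding loc_rep_def by (rule someI)

lemma loc_mul_C: assumes Q: "Q \<in> Spec A" and ab: "a \<in> K" "b \<in> K" and fg: "f \<in> K" "g \<in> K" "f \<notin> Q" "g \<notin> Q"
  shows "loc_mul A (K - Q) (Cc A (K - Q) a f) (Cc A (K - Q) b g) = Cc A (K - Q) (a \<cdot> b) (f \<cdot> g)"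
proof -
  obtain r1 t1 where 1: "loc_rep (Cc A (K - Q) a f) = (r1,t1)" by fastforce
  obtain r2 t2 where 2: "loc_rep (Cc A (K - Q) b g) = (r2,t2)" by fastforce
  have "(r1,t1) \<in> Cc A (K - Q) a f" using 1 loc_rep_in[OF C_self[where a=a and f=f and T="K-Q"]] ab fg by auto
  hence h1: "r1 \<in> K" "t1 \<in> K" "t1 \<notin> Q" "r1 \<cdot> f = a \<cdot> t1" using C_mem by auto
  have "(r2,t2) \<in> Cc A (K - Q) b g" using 2 loc_rep_in[OF C_self[where a=b and f=g and T="K-Q"]] ab fg by auto
  hence h2: "r2 \<in> K" "t2 \<in> K" "t2 \<notin> Q" "r2 \<cdot> g = b \<cdot> t2" using C_mem by auto
  have t12: "t1 \<cdot> t2 \<notin> Q" using spec_mul_notin[OF Q h1(2) h2(2) h1(3) h2(3)] .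
  have fg': "f \<cdot> g \<noteq> z0" using spec_mul_notin[OF Q fg] spec_zero[OF Q] by metis
  have t12': "t1 \<cdot> t2 \<noteq> z0" using t12 spec_zero[OF Q] by metis
  have "loc_mul A (K - Q) (Cc A (K - Q) a f) (Cc A (K - Q) b g) = loc_class A (K - Q) (r1 \<cdot> r2) (t1 \<cdot> t2)"
    unfolding loc_mul_def 1 2 by simp
  also have "\<dots> = Cc A (K - Q) (r1 \<cdot> r2) (t1 \<cdot> t2)" using loc_class_C[OF Q] h1 h2 t12 by simp
  also have "\<dots> = Cc A (K - Q) (a \<cdot> b) (f \<cdot> g)"
  proof (rule C_cong)
    have "r1 \<cdot> r2 \<cdot> (f \<cdot> g) = (r1 \<cdot> f) \<cdot> (r2 \<cdot> g)" using h1(1,2) h2(1,2) fg(1,2) by (simp add: mul_ac)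
    also have "\<dots> = (a \<cdot> t1) \<cdot> (b \<cdot> t2)" using h1(4) h2(4) by simp
    also have "\<dots> = a \<cdot> b \<cdot> (t1 \<cdot> t2)" using h1(1,2) h2(1,2) ab by (simp add: mul_ac)
    finally show "r1 \<cdot> r2 \<cdot> (f \<cdot> g) = a \<cdot> b \<cdot> (t1 \<cdot> t2)" .
  qed (use h1 h2 ab fg fg' t12' in \<open>simp_all\<close>)
  finally show ?thesis .
qed

lemma loc_add_C: assumes Q: "Q \<in> Spec A" and ab: "a \<in> K" "b \<in> K" and fg: "f \<in> K" "g \<in> K" "f \<notin> Q" "g \<notin> Q"
  shows "loc_add A (K - Q) (Cc A (K - Q) a f) (Cc A (K - Q) b g) =
     {Cc A (K - Q) y (f \<cdot> g) | y. y \<in> (a \<cdot> g) \<oplus> (f \<cdot> b)}"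
proof -
  obtain r1 t1 where 1: "loc_rep (Cc A (K - Q) a f) = (r1,t1)" by fastforce
  obtain r2 t2 where 2: "loc_rep (Cc A (K - Q) b g) = (r2,t2)" by fastforce
  have "(r1,t1) \<in> Cc A (K - Q) a f" using 1 loc_rep_in[OF C_self[where a=a and f=f and T="K-Q"]] ab fg by auto
  hence h1: "r1 \<in> K" "t1 \<in> K" "t1 \<notin> Q" "r1 \<cdot> f = a \<cdot> t1" using C_mem by auto
  have "(r2,t2) \<in> Cc A (K - Q) b g" using 2 loc_rep_in[OF C_self[where a=b and f=g and T="K-Q"]] ab fg by auto
  hence h2: "r2 \<in> K" "t2 \<in> K" "t2 \<notin> Q" "r2 \<cdot> g = b \<cdot> t2" using C_mem by auto
  define v where "v = t1 \<cdot> t2"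
  define u where "u = f \<cdot> g"
  have v: "v \<in> K" "v \<notin> Q" using spec_mul_notin[OF Q h1(2) h2(2) h1(3) h2(3)] h1 h2 unfolding v_def by auto
  have v3: "v \<noteq> z0" using v(2) spec_zero[OF Q] by metis
  have u: "u \<in> K" "u \<notin> Q" using spec_mul_notin[OF Q fg] fg unfolding u_def by auto
  have u3: "u \<noteq> z0" using u(2) spec_zero[OF Q] by metis
  have e1: "u \<cdot> (r1 \<cdot> t2) = v \<cdot> (a \<cdot> g)"
  proof -
    have "u \<cdot> (r1 \<cdot> t2) = (r1 \<cdot> f) \<cdot> (g \<cdot> t2)" unfolding u_def using h1(1,2) h2(1,2) fg(1,2) by (simp add: mul_ac)
    also have "\<dots> = (a \<cdot> t1) \<cdot> (g \<cdot> t2)" using h1(4) by simp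
    also have "\<dots> = v \<cdot> (a \<cdot> g)" unfolding v_def using h1(1,2) h2(1,2) fg(1,2) ab by (simp add: mul_ac)
    finally show ?thesis .
  qed
  have e2: "u \<cdot> (t1 \<cdot> r2) = v \<cdot> (f \<cdot> b)"
  proof -
    have "u \<cdot> (t1 \<cdot> r2) = (r2 \<cdot> g) \<cdot> (f \<cdot> t1)" unfolding u_def using h1(1,2) h2(1,2) fg(1,2) by (simp add: mul_ac)
    also have "\<dots> = (b \<cdot> t2) \<cdot> (f \<cdot> t1)" using h2(4) by simp
    also have "\<dots> = v \<cdot> (f \<cdot> b)" unfolding v_def using h1(1,2) h2(1,2) fg(1,2) ab by (simp add: mul_ac)
    finally show ?thesis .
  qed
  have img: "mul u ` ((r1 \<cdot> t2) \<oplus> (t1 \<cdot> r2)) = mul v ` ((a \<cdot> g) \<oplus> (f \<cdot> b))"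
    using distr[of u "r1 \<cdot> t2" "t1 \<cdot> r2"] distr[of v "a \<cdot> g" "f \<cdot> b"] e1 e2 u(1) v(1) h1(1,2) h2(1,2) ab fg(1,2) by simp
  have L: "loc_add A (K - Q) (Cc A (K - Q) a f) (Cc A (K - Q) b g) =
     {Cc A (K - Q) y v | y. y \<in> (r1 \<cdot> t2) \<oplus> (t1 \<cdot> r2)}"
  proof -
    have "loc_class A (K - Q) y v = Cc A (K - Q) y v" if "y \<in> (r1 \<cdot> t2) \<oplus> (t1 \<cdot> r2)" for y
      using loc_class_C[OF Q _ v(1,2)] add_in[OF _ _ that] h1 h2 by simp
    thus ?thesis unfolding loc_add_def 1 2 v_def by auto
  qed
  show ?thesis unfolding L u_def[symmetric]
  proof (rule set_eqI, rule iffI)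
    fix c assume "c \<in> {Cc A (K - Q) y v | y. y \<in> (r1 \<cdot> t2) \<oplus> (t1 \<cdot> r2)}"
    then obtain y where y: "y \<in> (r1 \<cdot> t2) \<oplus> (t1 \<cdot> r2)" "c = Cc A (K - Q) y v" by blast
    have yK: "y \<in> K" using add_in[OF _ _ y(1)] h1 h2 by simp
    have "u \<cdot> y \<in> mul v ` ((a \<cdot> g) \<oplus> (f \<cdot> b))" using img y(1) by blast
    then obtain y' where y': "y' \<in> (a \<cdot> g) \<oplus> (f \<cdot> b)" "u \<cdot> y = v \<cdot> y'" by blast
    have y'K: "y' \<in> K" using add_in[OF _ _ y'(1)] ab fg by simp
    have "Cc A (K - Q) y v = Cc A (K - Q) y' u"
      by (rule C_cong) (use y' yK y'K u v u3 v3 mul_comm[of y' v] mul_comm[of y u] mul_comm[of y' u] mul_comm[of y v] in \<open>simp_all\<close>)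
    thus "c \<in> {Cc A (K - Q) y u | y. y \<in> (a \<cdot> g) \<oplus> (f \<cdot> b)}" using y y' by blast
  next
    fix c assume "c \<in> {Cc A (K - Q) y u | y. y \<in> (a \<cdot> g) \<oplus> (f \<cdot> b)}"
    then obtain y where y: "y \<in> (a \<cdot> g) \<oplus> (f \<cdot> b)" "c = Cc A (K - Q) y u" by blast
    have yK: "y \<in> K" using add_in[OF _ _ y(1)] ab fg by simp
    have "v \<cdot> y \<in> mul u ` ((r1 \<cdot> t2) \<oplus> (t1 \<cdot> r2))" using img y(1) by blast
    then obtain y' where y': "y' \<in> (r1 \<cdot> t2) \<oplus> (t1 \<cdot> r2)" "v \<cdot> y = u \<cdot> y'" by blast
    have y'K: "y' \<in> K" using add_in[OF _ _ y'(1)] h1 h2 by simp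
    have "Cc A (K - Q) y u = Cc A (K - Q) y' v"
      by (rule C_cong) (use y' yK y'K u v u3 v3 mul_comm[of y' v] mul_comm[of y u] mul_comm[of y' u] mul_comm[of y v] in \<open>simp_all\<close>)
    thus "c \<in> {Cc A (K - Q) y v | y. y \<in> (r1 \<cdot> t2) \<oplus> (t1 \<cdot> r2)}" using y y' by blast
  qed
qed

end

definition hasval :: "'a hyperring \<Rightarrow> 'a set set \<Rightarrow> 'a sect \<Rightarrow> 'a \<Rightarrow> 'a \<Rightarrow> bool" where
  "hasval A U s a f \<longleftrightarrow> a \<in> carrier A \<and> f \<in> carrier A \<and> f \<noteq> hzero A \<and>
     (\<forall>Q\<in>U. s Q = Cc A (carrier A - Q) a f \<and> Cc A (carrier A - Q) a f \<noteq> {})"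

context hdom begin

lemma hasvalD: assumes "hasval A U s a f"
  shows "a \<in> K" "f \<in> K" "f \<noteq> z0" "\<And>Q. Q \<in> U \<Longrightarrow> s Q = Cc A (K - Q) a f"
    "\<And>Q. Q \<in> U \<Longrightarrow> Cc A (K - Q) a f \<noteq> {}"
  using assms unfolding hasval_def by auto

lemma pick_rep: assumes "Q \<in> Spec A" "a \<in> K" "f \<in> K" "f \<noteq> z0" "Cc A (K - Q) a f \<noteq> {}"
  obtains a' f' where "a' \<in> K" "f' \<in> K" "f' \<notin> Q" "Cc A (K - Q) a f = Cc A (K - Q) a' f'" "a' \<cdot> f = a \<cdot> f'"
proof -
  obtain p where p: "p \<in> Cc A (K - Q) a f" using assms(5) by blast
  show ?thesis using C_mem_cong[OF assms(1-4) p] that[of "fst p" "snd p"] by simp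
qed

lemma sec_ext: "s \<in> sections A U \<Longrightarrow> s \<in> extensional U" unfolding sections_def by simp

lemma sec_spec: "s \<in> sections A U \<Longrightarrow> P \<in> U \<Longrightarrow> P \<in> Spec A"
  unfolding sections_def using open_sub by blast

lemma sec_loc: "s \<in> sections A U \<Longrightarrow> P \<in> U \<Longrightarrow> s P \<in> loc_carrier A (K - P)"
  unfolding sections_def by simp

lemma sec_val: assumes s: "s \<in> sections A U" and U: "U \<noteq> {}" shows "\<exists>a f. hasval A U s a f"
proof -
  have loc: "\<And>P. P \<in> U \<Longrightarrow> \<exists>V. zariski_open A V \<and> P \<in> V \<and> V \<subseteq> U \<and>
        (\<exists>a\<in>K. \<exists>f\<in>K. \<forall>Q\<in>V. f \<notin> Q \<and> s Q = loc_class A (K - Q) a f)"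
    using s unfolding sections_def by blast
  obtain P0 where P0: "P0 \<in> U" using U by blast
  obtain V0 a0 f0 where "zariski_open A V0 \<and> P0 \<in> V0 \<and> V0 \<subseteq> U \<and> a0 \<in> K \<and> f0 \<in> K \<and>
    (\<forall>Q\<in>V0. f0 \<notin> Q \<and> s Q = loc_class A (K - Q) a0 f0)" using loc[OF P0] by blast
  hence V0: "zariski_open A V0" "P0 \<in> V0" "V0 \<subseteq> U" "a0 \<in> K" "f0 \<in> K"
    "\<And>Q. Q \<in> V0 \<Longrightarrow> f0 \<notin> Q \<and> s Q = loc_class A (K - Q) a0 f0" by auto
  have g0: "{z0} \<in> V0" using open_generic[OF V0(1,2)] .
  have f0z: "f0 \<noteq> z0" using V0(6)[OF g0] by simp
  have s0: "s {z0} = Cc A (K - {z0}) a0 f0" using V0(6)[OF g0] loc_class_C[OF zero_spec V0(4,5)] by simp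
  have "hasval A U s a0 f0" unfolding hasval_def
  proof (intro conjI V0(4,5) f0z ballI)
    fix P assume P: "P \<in> U"
    obtain V a f where "zariski_open A V \<and> P \<in> V \<and> V \<subseteq> U \<and> a \<in> K \<and> f \<in> K \<and>
      (\<forall>Q\<in>V. f \<notin> Q \<and> s Q = loc_class A (K - Q) a f)" using loc[OF P] by blast
    hence V: "zariski_open A V" "P \<in> V" "V \<subseteq> U" "a \<in> K" "f \<in> K"
      "\<And>Q. Q \<in> V \<Longrightarrow> f \<notin> Q \<and> s Q = loc_class A (K - Q) a f" by auto
    have g: "{z0} \<in> V" using open_generic[OF V(1,2)] .
    have PS: "P \<in> Spec A" using open_sub[OF V(1)] V(2) by blast
    have fz: "f \<noteq> z0" using V(6)[OF g] by simp
    have "s {z0} = Cc A (K - {z0}) a f" using V(6)[OF g] loc_class_C[OF zero_spec V(4,5)] by simp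
    hence eq: "Cc A (K - {z0}) a f = Cc A (K - {z0}) a0 f0" using s0 by simp
    have "(a,f) \<in> Cc A (K - {z0}) a f" using C_self[of a f "K - {z0}"] V(4,5) fz by simp
    hence af: "a \<cdot> f0 = a0 \<cdot> f" using C_eq[OF _ V(4) V0(4) V(5) V0(5) eq] by blast
    have "s P = Cc A (K - P) a f" using V(6)[OF V(2)] loc_class_C[OF PS V(4,5)] by simp
    also have "\<dots> = Cc A (K - P) a0 f0" using C_cong[of "K - P" a a0 f f0, OF _ V(4) V0(4) V(5) V0(5) fz f0z af] by blast
    finally show "s P = Cc A (K - P) a0 f0" .
    have "(a,f) \<in> Cc A (K - P) a f" using C_self[of a f "K - P"] V(4,5) V(6)[OF V(2)] by simp
    thus "Cc A (K - P) a0 f0 \<noteq> {}" using \<open>Cc A (K - P) a f = Cc A (K - P) a0 f0\<close> by blast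
  qed
  thus ?thesis by blast
qed

lemma val_sec: assumes U: "zariski_open A U" and s: "s \<in> extensional U" and v: "hasval A U s a f"
  shows "s \<in> sections A U"
  unfolding sections_def
proof (intro CollectI conjI s ballI)
  fix P assume P: "P \<in> U"
  have PS: "P \<in> Spec A" using P open_sub[OF U] by blast
  obtain a' f' where r: "a' \<in> K" "f' \<in> K" "f' \<notin> P" "Cc A (K - P) a f = Cc A (K - P) a' f'" "a' \<cdot> f = a \<cdot> f'"
    using pick_rep[OF PS hasvalD(1-3)[OF v] hasvalD(5)[OF v P]] by blast
  show "s P \<in> loc_carrier A (K - P)" using loc_carrier_iff[OF PS] hasvalD(4)[OF v P] r by blast
  let ?V = "U \<inter> {Q\<in>Spec A. f' \<notin> Q}"
  have "zariski_open A ?V" using open_Int[OF U open_D1[OF r(2)]] .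
  moreover have "P \<in> ?V" using P PS r by blast
  moreover have "\<forall>Q\<in>?V. f' \<notin> Q \<and> s Q = loc_class A (K - Q) a' f'"
  proof
    fix Q assume Q: "Q \<in> ?V"
    hence QS: "Q \<in> Spec A" "f' \<notin> Q" by auto
    have f'z: "f' \<noteq> z0" using QS by auto
    have "s Q = Cc A (K - Q) a f" using hasvalD(4)[OF v] Q by blast
    also have "\<dots> = Cc A (K - Q) a' f'"
      using C_cong[of "K - Q" a a' f f', OF _ hasvalD(1)[OF v] r(1) hasvalD(2)[OF v] r(2) hasvalD(3)[OF v] f'z]
        r(5) mul_comm[of a' f] mul_comm[of a f'] hasvalD(1,2)[OF v] r(1,2) by simp
    also have "\<dots> = loc_class A (K - Q) a' f'" using loc_class_C[OF QS(1) r(1,2) QS(2)] by simp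
    finally show "f' \<notin> Q \<and> s Q = loc_class A (K - Q) a' f'" using QS by simp
  qed
  ultimately show "\<exists>V. zariski_open A V \<and> P \<in> V \<and> V \<subseteq> U \<and>
        (\<exists>a\<in>K. \<exists>f\<in>K. \<forall>Q\<in>V. f \<notin> Q \<and> s Q = loc_class A (K - Q) a f)"
    using r(1,2) by blast
qed

lemma hasval_empty: "a \<in> K \<Longrightarrow> f \<in> K \<Longrightarrow> f \<noteq> z0 \<Longrightarrow> hasval A {} s a f"
  unfolding hasval_def by simp

lemma sec_iff: assumes U: "zariski_open A U"
  shows "s \<in> sections A U \<longleftrightarrow> s \<in> extensional U \<and> (\<exists>a f. hasval A U s a f)"
proof
  assume s: "s \<in> sections A U"
  show "s \<in> extensional U \<and> (\<exists>a f. hasval A U s a f)"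
  proof (cases "U = {}")
    case True thus ?thesis using sec_ext[OF s] hasval_empty[of z0 e1 s] by (simp, blast)
  next
    case False thus ?thesis using s sec_ext sec_val by blast
  qed
next
  assume "s \<in> extensional U \<and> (\<exists>a f. hasval A U s a f)"
  thus "s \<in> sections A U" using val_sec[OF U] by blast
qed

lemma val_unique: assumes "hasval A U s a f" "hasval A U s b g" "P \<in> U" "P \<in> Spec A"
  shows "a \<cdot> g = b \<cdot> f"
proof -
  have "Cc A (K - P) a f = Cc A (K - P) b g" using hasvalD(4)[OF assms(1,3)] hasvalD(4)[OF assms(2,3)] by simp
  moreover obtain p where "p \<in> Cc A (K - P) a f" using hasvalD(5)[OF assms(1,3)] by blast
  ultimately show ?thesis using C_eq[OF T_sub[OF assms(4)]] hasvalD(1,2)[OF assms(1)] hasvalD(1,2)[OF assms(2)] by blast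
qed

lemma val_cong: assumes v: "hasval A U s a f" and b: "b \<in> K" "g \<in> K" "g \<noteq> z0" "a \<cdot> g = b \<cdot> f"
  shows "hasval A U s b g"
proof -
  have "Cc A T a f = Cc A T b g" if "T \<subseteq> K" for T
    using C_cong[OF that hasvalD(1)[OF v] b(1) hasvalD(2)[OF v] b(2) hasvalD(3)[OF v] b(3,4)] .
  thus ?thesis using v b unfolding hasval_def by (metis Diff_subset)
qed

lemma val_mono: "hasval A U s a f \<Longrightarrow> V \<subseteq> U \<Longrightarrow> (\<And>Q. Q \<in> V \<Longrightarrow> t Q = s Q) \<Longrightarrow> hasval A V t a f"
  unfolding hasval_def by (metis subsetD)

lemma val_eq: assumes "s \<in> extensional U" "t \<in> extensional U" "hasval A U s a f" "hasval A U t b g"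
  "a \<cdot> g = b \<cdot> f" shows "s = t"
proof (rule extensionalityI[OF assms(1,2)])
  fix Q assume Q: "Q \<in> U"
  have "s Q = Cc A (K - Q) a f" using hasvalD(4)[OF assms(3) Q] .
  also have "\<dots> = Cc A (K - Q) b g"
    using C_cong[of "K - Q" a b f g] hasvalD(1-3)[OF assms(3)] hasvalD(1-3)[OF assms(4)] assms(5) by blast
  also have "\<dots> = t Q" using hasvalD(4)[OF assms(4) Q] by simp
  finally show "s Q = t Q" .
qed

lemma sec_restrict: assumes "zariski_open A V" "zariski_open A U" "V \<subseteq> U" "s \<in> sections A U"
  shows "restrict s V \<in> sections A V"
proof -
  obtain a f where "hasval A U s a f" using sec_iff[OF assms(2)] assms(4) by blast
  hence "hasval A V (restrict s V) a f" using val_mono assms(3) by (metis restrict_apply')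
  thus ?thesis using sec_iff[OF assms(1)] by auto
qed

lemma mul_at: assumes Q: "Q \<in> Spec A" and K: "a \<in> K" "b \<in> K" "f \<in> K" "g \<in> K" "f \<noteq> z0" "g \<noteq> z0"
  and ne: "Cc A (K - Q) a f \<noteq> {}" "Cc A (K - Q) b g \<noteq> {}"
  shows "loc_mul A (K - Q) (Cc A (K - Q) a f) (Cc A (K - Q) b g) = Cc A (K - Q) (a \<cdot> b) (f \<cdot> g)"
    "Cc A (K - Q) (a \<cdot> b) (f \<cdot> g) \<noteq> {}"
proof -
  obtain a' f' where 1: "a' \<in> K" "f' \<in> K" "f' \<notin> Q" "Cc A (K - Q) a f = Cc A (K - Q) a' f'" "a' \<cdot> f = a \<cdot> f'"
    using pick_rep[OF Q K(1,3,5) ne(1)] by blast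
  obtain b' g' where 2: "b' \<in> K" "g' \<in> K" "g' \<notin> Q" "Cc A (K - Q) b g = Cc A (K - Q) b' g'" "b' \<cdot> g = b \<cdot> g'"
    using pick_rep[OF Q K(2,4,6) ne(2)] by blast
  have fg: "f \<cdot> g \<noteq> z0" using mul_nz K by simp
  have fg': "f' \<cdot> g' \<notin> Q" using spec_mul_notin[OF Q 1(2) 2(2) 1(3) 2(3)] .
  hence fg'z: "f' \<cdot> g' \<noteq> z0" using spec_zero[OF Q] by metis
  have "Cc A (K - Q) (a' \<cdot> b') (f' \<cdot> g') = Cc A (K - Q) (a \<cdot> b) (f \<cdot> g)"
  proof (rule C_cong)
    have "a' \<cdot> b' \<cdot> (f \<cdot> g) = (a' \<cdot> f) \<cdot> (b' \<cdot> g)" using 1(1) 2(1) K by (simp add: mul_ac)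
    also have "\<dots> = (a \<cdot> f') \<cdot> (b \<cdot> g')" using 1(5) 2(5) by simp
    also have "\<dots> = a \<cdot> b \<cdot> (f' \<cdot> g')" using 1(2) 2(2) K by (simp add: mul_ac)
    finally show "a' \<cdot> b' \<cdot> (f \<cdot> g) = a \<cdot> b \<cdot> (f' \<cdot> g')" .
  qed (use 1 2 K fg fg'z in simp_all)
  thus "loc_mul A (K - Q) (Cc A (K - Q) a f) (Cc A (K - Q) b g) = Cc A (K - Q) (a \<cdot> b) (f \<cdot> g)"
    using loc_mul_C[OF Q 1(1) 2(1) 1(2) 2(2) 1(3) 2(3)] 1(4) 2(4) by simp
  have "(a' \<cdot> b', f' \<cdot> g') \<in> Cc A (K - Q) (a' \<cdot> b') (f' \<cdot> g')" using C_self 1 2 fg' by simp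
  thus "Cc A (K - Q) (a \<cdot> b) (f \<cdot> g) \<noteq> {}" using \<open>Cc A (K - Q) (a' \<cdot> b') (f' \<cdot> g') = _\<close> by blast
qed

lemma OX_mul_val: assumes U: "U \<subseteq> Spec A" and s: "hasval A U s a f" and t: "hasval A U t b g"
  shows "hasval A U (hmul (OX A U) s t) (a \<cdot> b) (f \<cdot> g)"
  unfolding hasval_def
proof (intro conjI ballI)
  show "a \<cdot> b \<in> K" "f \<cdot> g \<in> K" "f \<cdot> g \<noteq> z0" using hasvalD(1-3)[OF s] hasvalD(1-3)[OF t] mul_nz by auto
  fix Q assume Q: "Q \<in> U"
  have QS: "Q \<in> Spec A" using U Q by blast
  note m = mul_at[OF QS hasvalD(1)[OF s] hasvalD(1)[OF t] hasvalD(2)[OF s] hasvalD(2)[OF t]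
        hasvalD(3)[OF s] hasvalD(3)[OF t] hasvalD(5)[OF s Q] hasvalD(5)[OF t Q]]
  show "hmul (OX A U) s t Q = Cc A (K - Q) (a \<cdot> b) (f \<cdot> g)"
    unfolding OX_def using Q hasvalD(4)[OF s Q] hasvalD(4)[OF t Q] m(1) by simp
  show "Cc A (K - Q) (a \<cdot> b) (f \<cdot> g) \<noteq> {}" using m(2) .
qed

lemma C_ne: "Q \<in> Spec A \<Longrightarrow> a \<in> K \<Longrightarrow> f \<in> K \<Longrightarrow> f \<notin> Q \<Longrightarrow> Cc A (K - Q) a f \<noteq> {}"
  using C_self[of a f "K - Q"] by auto

lemma OX_const_val: assumes U: "U \<subseteq> Spec A" and a: "a \<in> K"
  shows "hasval A U (\<lambda>P\<in>U. loc_class A (K - P) a e1) a e1"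
  unfolding hasval_def
proof (intro conjI ballI a one_in zero_ne_one(2))
  fix Q assume Q: "Q \<in> U"
  hence QS: "Q \<in> Spec A" using U by blast
  show "(\<lambda>P\<in>U. loc_class A (K - P) a e1) Q = Cc A (K - Q) a e1"
    using Q loc_class_C[OF QS a one_in spec_one[OF QS]] by simp
  show "Cc A (K - Q) a e1 \<noteq> {}" using C_ne[OF QS a one_in spec_one[OF QS]] .
qed

lemma OX_zero_val: "U \<subseteq> Spec A \<Longrightarrow> hasval A U (hzero (OX A U)) z0 e1"
  unfolding OX_def using OX_const_val[of U z0] by simp

lemma OX_one_val: "U \<subseteq> Spec A \<Longrightarrow> hasval A U (hone (OX A U)) e1 e1"
  unfolding OX_def using OX_const_val[of U e1] by simp

lemma OX_zero_sec: assumes "zariski_open A U" shows "hzero (OX A U) \<in> sections A U"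
proof -
  have "hzero (OX A U) \<in> extensional U" unfolding OX_def by simp
  thus ?thesis using sec_iff[OF assms] OX_zero_val[OF open_sub[OF assms]] by blast
qed

lemma OX_one_sec: assumes "zariski_open A U" shows "hone (OX A U) \<in> sections A U"
proof -
  have "hone (OX A U) \<in> extensional U" unfolding OX_def by simp
  thus ?thesis using sec_iff[OF assms] OX_one_val[OF open_sub[OF assms]] by blast
qed

lemma OX_mul_sec: assumes U: "zariski_open A U" and "s \<in> sections A U" "t \<in> sections A U"
  shows "hmul (OX A U) s t \<in> sections A U"
proof -
  obtain a f b g where "hasval A U s a f" "hasval A U t b g" using assms sec_iff[OF U] by blast
  hence "hasval A U (hmul (OX A U) s t) (a \<cdot> b) (f \<cdot> g)" using OX_mul_val[OF open_sub[OF U]] by blast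
  moreover have "hmul (OX A U) s t \<in> extensional U" unfolding OX_def by simp
  ultimately show ?thesis using sec_iff[OF U] by blast
qed

end

context hdom begin

lemma hid_D: assumes "hyperideal A J"
  shows "J \<subseteq> K" "J \<noteq> {}" "\<And>a b. a \<in> J \<Longrightarrow> b \<in> J \<Longrightarrow> a \<oplus> b \<subseteq> J"
    "\<And>a. a \<in> J \<Longrightarrow> ng a \<in> J" "\<And>r a. r \<in> K \<Longrightarrow> a \<in> J \<Longrightarrow> r \<cdot> a \<in> J"
  using assms unfolding hyperideal_def by auto

lemma hid_zero: assumes "hyperideal A J" shows "z0 \<in> J"
proof -
  obtain m where m: "m \<in> J" using hid_D(2)[OF assms] by blast
  have "m \<in> K" using hid_D(1)[OF assms] m by blast
  thus ?thesis using hid_D(5)[OF assms zero_in m] by simp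
qed

lemma gen_ideal: assumes M: "hyperideal A M" and a: "a \<in> K"
  defines "J \<equiv> {z. \<exists>m\<in>M. \<exists>r\<in>K. z \<in> m \<oplus> (a \<cdot> r)}"
  shows "hyperideal A J" "M \<subseteq> J" "a \<in> J"
proof -
  note MK = hid_D(1)[OF M]
  have JK: "J \<subseteq> K"
  proof
    fix z assume "z \<in> J"
    then obtain m r where mr: "m \<in> M" "r \<in> K" "z \<in> m \<oplus> (a \<cdot> r)" unfolding J_def by blast
    have "m \<in> K" using MK mr(1) by blast
    thus "z \<in> K" using add_in[OF _ mul_in[OF a mr(2)] mr(3)] by blast
  qed
  show MJ: "M \<subseteq> J"
  proof
    fix m assume m: "m \<in> M"
    hence "m \<in> m \<oplus> (a \<cdot> z0)" using MK a by auto
    thus "m \<in> J" unfolding J_def using m zero_in by blast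
  qed
  show "a \<in> J"
  proof -
    have "a \<in> z0 \<oplus> (a \<cdot> e1)" using a by simp
    thus ?thesis unfolding J_def using hid_zero[OF M] one_in by blast
  qed
  show "hyperideal A J" unfolding hyperideal_def
  proof (intro conjI ballI)
    show "J \<subseteq> K" using JK .
    show "J \<noteq> {}" using MJ hid_D(2)[OF M] by blast
  next
    fix x y assume x: "x \<in> J" and y: "y \<in> J"
    obtain m1 r1 where 1: "m1 \<in> M" "r1 \<in> K" "x \<in> m1 \<oplus> (a \<cdot> r1)" using x unfolding J_def by blast
    obtain m2 r2 where 2: "m2 \<in> M" "r2 \<in> K" "y \<in> m2 \<oplus> (a \<cdot> r2)" using y unfolding J_def by blast
    have m1: "m1 \<in> K" and m2: "m2 \<in> K" using 1 2 MK by auto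
    have xK: "x \<in> K" and yK: "y \<in> K" using x y JK by auto
    have p1: "a \<cdot> r1 \<in> K" and p2: "a \<cdot> r2 \<in> K" using a 1 2 by auto
    show "x \<oplus> y \<subseteq> J"
    proof
      fix z assume z: "z \<in> x \<oplus> y"
      have "\<exists>u\<in>m1 \<oplus> (a \<cdot> r1). z \<in> u \<oplus> y" using 1(3) z by blast
      then obtain v where v: "v \<in> (a \<cdot> r1) \<oplus> y" "z \<in> m1 \<oplus> v"
        using add_assoc_el[OF m1 p1 yK] by blast
      have vK: "v \<in> K" using add_in[OF p1 yK v(1)] .
      have "v \<in> y \<oplus> (a \<cdot> r1)" using v(1) add_comm[OF p1 yK] by simp
      hence "\<exists>u\<in>m2 \<oplus> (a \<cdot> r2). v \<in> u \<oplus> (a \<cdot> r1)" using 2(3) by blast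
      then obtain w where w: "w \<in> (a \<cdot> r2) \<oplus> (a \<cdot> r1)" "v \<in> m2 \<oplus> w"
        using add_assoc_el[OF m2 p2 p1] by blast
      have wK: "w \<in> K" using add_in[OF p2 p1 w(1)] .
      have "\<exists>v\<in>m2 \<oplus> w. z \<in> m1 \<oplus> v" using w(2) v(2) by blast
      then obtain u where u: "u \<in> m1 \<oplus> m2" "z \<in> u \<oplus> w"
        using add_assoc_el[OF m1 m2 wK] by blast
      have uM: "u \<in> M" using hid_D(3)[OF M 1(1) 2(1)] u(1) by blast
      have "w \<in> mul a ` (r2 \<oplus> r1)" using w(1) distr[OF a 2(2) 1(2)] by simp
      then obtain r where r: "r \<in> r2 \<oplus> r1" "w = a \<cdot> r" by blast
      have rK: "r \<in> K" using add_in[OF 2(2) 1(2) r(1)] .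
      show "z \<in> J" unfolding J_def using uM rK u(2) r(2) by blast
    qed
  next
    fix x assume x: "x \<in> J"
    obtain m r where 1: "m \<in> M" "r \<in> K" "x \<in> m \<oplus> (a \<cdot> r)" using x unfolding J_def by blast
    have mK: "m \<in> K" using 1 MK by auto
    have "ng x \<in> ng m \<oplus> ng (a \<cdot> r)" using neg_add[OF 1(3) mK] a 1(2) by simp
    hence "ng x \<in> ng m \<oplus> (a \<cdot> ng r)" using mul_neg[OF a 1(2)] by simp
    thus "ng x \<in> J" unfolding J_def using hid_D(4)[OF M 1(1)] neg_in[OF 1(2)] by blast
  next
    fix s x assume s: "s \<in> K" and x: "x \<in> J"
    obtain m r where 1: "m \<in> M" "r \<in> K" "x \<in> m \<oplus> (a \<cdot> r)" using x unfolding J_def by blast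
    have mK: "m \<in> K" using 1 MK by auto
    have "s \<cdot> x \<in> mul s ` (m \<oplus> (a \<cdot> r))" using 1(3) by blast
    also have "\<dots> = (s \<cdot> m) \<oplus> (s \<cdot> (a \<cdot> r))" using distr[OF s mK] a 1(2) by simp
    also have "s \<cdot> (a \<cdot> r) = a \<cdot> (s \<cdot> r)" using mul_lcomm[OF s a 1(2)] .
    finally have "s \<cdot> x \<in> (s \<cdot> m) \<oplus> (a \<cdot> (s \<cdot> r))" .
    thus "s \<cdot> x \<in> J" unfolding J_def using hid_D(5)[OF M s 1(1)] mul_in[OF s 1(2)] by blast
  qed
qed

lemma ideal_one: assumes I: "hyperideal A I" and nP: "\<forall>Q\<in>Spec A. \<not> I \<subseteq> Q" shows "e1 \<in> I"
proof (rule ccontr)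
  assume e: "e1 \<notin> I"
  define MM where "MM = {J. hyperideal A J \<and> I \<subseteq> J \<and> e1 \<notin> J}"
  have "\<forall>C\<in>chains MM. \<exists>U\<in>MM. \<forall>X\<in>C. X \<subseteq> U"
  proof
    fix C assume C: "C \<in> chains MM"
    show "\<exists>U\<in>MM. \<forall>X\<in>C. X \<subseteq> U"
    proof (cases "C = {}")
      case True thus ?thesis using I e unfolding MM_def by blast
    next
      case False
      have CM: "C \<subseteq> MM" and ch: "\<And>X Y. X \<in> C \<Longrightarrow> Y \<in> C \<Longrightarrow> X \<subseteq> Y \<or> Y \<subseteq> X"
        using C unfolding chains_def chain_subset_def by auto
      have hC: "\<And>X. X \<in> C \<Longrightarrow> hyperideal A X" using CM unfolding MM_def by blast
      have "hyperideal A (\<Union>C)" unfolding hyperideal_def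
      proof (intro conjI ballI)
        show "\<Union>C \<subseteq> K" using hid_D(1)[OF hC] by blast
        show "\<Union>C \<noteq> {}" using False hid_D(2)[OF hC] by blast
      next
        fix x y assume "x \<in> \<Union>C" "y \<in> \<Union>C"
        then obtain X Y where X: "X \<in> C" "x \<in> X" and Y: "Y \<in> C" "y \<in> Y" by blast
        show "x \<oplus> y \<subseteq> \<Union>C"
        proof (cases "X \<subseteq> Y")
          case True thus ?thesis using hid_D(3)[OF hC[OF Y(1)], of x y] X Y by blast
        next
          case False hence "Y \<subseteq> X" using ch[OF X(1) Y(1)] by blast
          thus ?thesis using hid_D(3)[OF hC[OF X(1)], of x y] X Y by blast
        qed
      next
        fix x assume "x \<in> \<Union>C"
        then obtain X where X: "X \<in> C" "x \<in> X" by blast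
        thus "ng x \<in> \<Union>C" using hid_D(4)[OF hC[OF X(1)] X(2)] by blast
      next
        fix r x assume r: "r \<in> K" and "x \<in> \<Union>C"
        then obtain X where X: "X \<in> C" "x \<in> X" by blast
        thus "r \<cdot> x \<in> \<Union>C" using hid_D(5)[OF hC[OF X(1)] r X(2)] by blast
      qed
      moreover have "I \<subseteq> \<Union>C" using False CM unfolding MM_def by blast
      moreover have "e1 \<notin> \<Union>C" using CM unfolding MM_def by blast
      ultimately show ?thesis unfolding MM_def by blast
    qed
  qed
  then obtain M where M: "M \<in> MM" and mx: "\<forall>X\<in>MM. M \<subseteq> X \<longrightarrow> X = M"
    using Zorn_Lemma2[of MM] by blast
  have hM: "hyperideal A M" and IM: "I \<subseteq> M" and eM: "e1 \<notin> M" using M unfolding MM_def by auto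
  have MK: "M \<noteq> K" using eM one_in by blast
  have "\<forall>a\<in>K. \<forall>b\<in>K. a \<cdot> b \<in> M \<longrightarrow> a \<in> M \<or> b \<in> M"
  proof (intro ballI impI)
    fix a b assume a: "a \<in> K" and b: "b \<in> K" and ab: "a \<cdot> b \<in> M"
    show "a \<in> M \<or> b \<in> M"
    proof (cases "a \<in> M")
      case True thus ?thesis by blast
    next
      case False note aM = this
      define J where "J = {z. \<exists>m\<in>M. \<exists>r\<in>K. z \<in> m \<oplus> (a \<cdot> r)}"
      note g = gen_ideal[OF hM a, folded J_def]
      have "e1 \<in> J"
      proof (rule ccontr)
        assume "e1 \<notin> J"
        hence "J \<in> MM" using g IM unfolding MM_def by blast
        hence "J = M" using mx g(2) by blast
        thus False using g(3) aM by blast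
      qed
      then obtain m r where mr: "m \<in> M" "r \<in> K" "e1 \<in> m \<oplus> (a \<cdot> r)" unfolding J_def by blast
      have mK: "m \<in> K" using mr hid_D(1)[OF hM] by blast
      have "b \<cdot> e1 \<in> mul b ` (m \<oplus> (a \<cdot> r))" using mr(3) by blast
      also have "\<dots> = (b \<cdot> m) \<oplus> (b \<cdot> (a \<cdot> r))" using distr[OF b mK] a mr(2) by simp
      also have "b \<cdot> (a \<cdot> r) = r \<cdot> (a \<cdot> b)" using a b mr(2) by (simp add: mul_ac)
      finally have "b \<in> (b \<cdot> m) \<oplus> (r \<cdot> (a \<cdot> b))" using b by simp
      moreover have "b \<cdot> m \<in> M" using hid_D(5)[OF hM b mr(1)] .
      moreover have "r \<cdot> (a \<cdot> b) \<in> M" using hid_D(5)[OF hM mr(2) ab] .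
      ultimately have "b \<in> M" using hid_D(3)[OF hM] by blast
      thus ?thesis by blast
    qed
  qed
  hence "M \<in> Spec A" unfolding Spec_def prime_hyperideal_def using hM MK by blast
  thus False using nP IM by blast
qed

lemma gc_val: "hasval A (Spec A) (global_canon A r) r e1" if "r \<in> K"
  unfolding global_canon_def using OX_const_val[OF subset_refl that] .

lemma gc_sec: "r \<in> K \<Longrightarrow> global_canon A r \<in> sections A (Spec A)"
  using sec_iff[OF open_Spec] gc_val unfolding global_canon_def by fastforce

lemma gc_inj: assumes "r \<in> K" "r' \<in> K" "global_canon A r = global_canon A r'" shows "r = r'"
proof -
  have "hasval A (Spec A) (global_canon A r) r' e1" using gc_val[OF assms(2)] assms(3) by simp
  hence "r \<cdot> e1 = r' \<cdot> e1" using val_unique[OF gc_val[OF assms(1)] _ zero_spec zero_spec] by blast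
  thus ?thesis using assms by simp
qed

lemma glob_sec: assumes s: "s \<in> sections A (Spec A)" shows "\<exists>h\<in>K. s = global_canon A h"
proof -
  obtain a f where v: "hasval A (Spec A) s a f" using sec_val[OF s] zero_spec by blast
  note af = hasvalD(1-3)[OF v]
  define I where "I = {t \<in> K. \<exists>r\<in>K. r \<cdot> f = a \<cdot> t}"
  have hI: "hyperideal A I" unfolding hyperideal_def
  proof (intro conjI ballI)
    show "I \<subseteq> K" unfolding I_def by blast
    show "I \<noteq> {}" unfolding I_def using af by (auto intro!: exI[of _ z0] bexI[of _ z0])
  next
    fix t1 t2 assume "t1 \<in> I" "t2 \<in> I"
    then obtain r1 r2 where 1: "t1 \<in> K" "r1 \<in> K" "r1 \<cdot> f = a \<cdot> t1" and 2: "t2 \<in> K" "r2 \<in> K" "r2 \<cdot> f = a \<cdot> t2"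
      unfolding I_def by blast
    show "t1 \<oplus> t2 \<subseteq> I"
    proof
      fix t assume t: "t \<in> t1 \<oplus> t2"
      have tK: "t \<in> K" using add_in[OF 1(1) 2(1) t] .
      have "a \<cdot> t \<in> mul a ` (t1 \<oplus> t2)" using t by blast
      also have "\<dots> = (a \<cdot> t1) \<oplus> (a \<cdot> t2)" using distr[OF af(1) 1(1) 2(1)] .
      also have "\<dots> = (f \<cdot> r1) \<oplus> (f \<cdot> r2)" using 1 2 af mul_comm[of r1 f] mul_comm[of r2 f] by simp
      also have "\<dots> = mul f ` (r1 \<oplus> r2)" using distr[OF af(2) 1(2) 2(2)] by simp
      finally obtain r where r: "r \<in> r1 \<oplus> r2" "a \<cdot> t = f \<cdot> r" by blast
      have rK: "r \<in> K" using add_in[OF 1(2) 2(2) r(1)] .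
      show "t \<in> I" unfolding I_def using tK rK r(2) mul_comm[OF rK af(2)] by auto
    qed
  next
    fix t assume "t \<in> I"
    then obtain r where 1: "t \<in> K" "r \<in> K" "r \<cdot> f = a \<cdot> t" unfolding I_def by blast
    have "ng r \<cdot> f = ng (r \<cdot> f)" using mul_neg[OF af(2) 1(2)] mul_comm[OF af(2) neg_in[OF 1(2)]] mul_comm[OF af(2) 1(2)] by simp
    also have "\<dots> = a \<cdot> ng t" using 1(3) mul_neg[OF af(1) 1(1)] by simp
    finally show "ng t \<in> I" unfolding I_def using 1 by auto
  next
    fix r' t assume r': "r' \<in> K" and "t \<in> I"
    then obtain r where 1: "t \<in> K" "r \<in> K" "r \<cdot> f = a \<cdot> t" unfolding I_def by blast
    have "(r' \<cdot> r) \<cdot> f = r' \<cdot> (r \<cdot> f)" using mul_assoc[OF r' 1(2) af(2)] .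
    also have "\<dots> = r' \<cdot> (a \<cdot> t)" using 1(3) by simp
    also have "\<dots> = a \<cdot> (r' \<cdot> t)" using mul_lcomm[OF r' af(1) 1(1)] .
    finally show "r' \<cdot> t \<in> I" unfolding I_def using 1 r' by auto
  qed
  have "\<forall>Q\<in>Spec A. \<not> I \<subseteq> Q"
  proof (intro ballI notI)
    fix Q assume Q: "Q \<in> Spec A" and IQ: "I \<subseteq> Q"
    obtain p where p: "p \<in> Cc A (K - Q) a f" using hasvalD(5)[OF v Q] by blast
    obtain r t where "p = (r,t)" by fastforce
    hence "r \<in> K" "t \<in> K" "t \<notin> Q" "r \<cdot> f = a \<cdot> t" using p C_mem by auto
    hence "t \<in> I" unfolding I_def by blast
    thus False using IQ \<open>t \<notin> Q\<close> by blast
  qed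
  hence "e1 \<in> I" using ideal_one[OF hI] by blast
  then obtain r where r: "r \<in> K" "r \<cdot> f = a" unfolding I_def using af by auto
  have "hasval A (Spec A) s r e1" using val_cong[OF v r(1) one_in zero_ne_one(2)] r af by simp
  hence "s = global_canon A r" using val_eq[OF sec_ext[OF s] _ _ gc_val[OF r(1)]] r(1) unfolding global_canon_def
    by simp
  thus ?thesis using r by blast
qed

end

section \<open>Transfer of maximal hyperideals along an isomorphism\<close>

locale hiso =
  fixes A :: "'a hyperring" and B :: "'b hyperring" and e :: "'a \<Rightarrow> 'b"
  assumes bij: "bij_betw e (carrier A) (carrier B)"
    and add_sub: "\<And>x y. x \<in> carrier A \<Longrightarrow> y \<in> carrier A \<Longrightarrow> hadd A x y \<subseteq> carrier A"
    and add_e: "\<And>x y. x \<in> carrier A \<Longrightarrow> y \<in> carrier A \<Longrightarrow> e ` hadd A x y = hadd B (e x) (e y)"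
    and mul_in: "\<And>x y. x \<in> carrier A \<Longrightarrow> y \<in> carrier A \<Longrightarrow> hmul A x y \<in> carrier A"
    and mul_e: "\<And>x y. x \<in> carrier A \<Longrightarrow> y \<in> carrier A \<Longrightarrow> e (hmul A x y) = hmul B (e x) (e y)"
    and zero_in: "hzero A \<in> carrier A"
    and zero_e: "e (hzero A) = hzero B"
    and negB: "\<And>x. x \<in> carrier B \<Longrightarrow> \<exists>!y. y \<in> carrier B \<and> hzero B \<in> hadd B x y"
begin

lemma e_in: "x \<in> carrier A \<Longrightarrow> e x \<in> carrier B" using bij bij_betwE by blast
lemma e_inj: "x \<in> carrier A \<Longrightarrow> y \<in> carrier A \<Longrightarrow> e x = e y \<Longrightarrow> x = y"
  using bij unfolding bij_betw_def inj_on_def by blast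
lemma e_surj: "z \<in> carrier B \<Longrightarrow> \<exists>x\<in>carrier A. z = e x"
  using bij unfolding bij_betw_def by blast

lemma zero_add_iff: assumes "x \<in> carrier A" "y \<in> carrier A"
  shows "hzero A \<in> hadd A x y \<longleftrightarrow> hzero B \<in> hadd B (e x) (e y)"
proof
  assume "hzero A \<in> hadd A x y" thus "hzero B \<in> hadd B (e x) (e y)" using add_e[OF assms] zero_e by force
next
  assume "hzero B \<in> hadd B (e x) (e y)"
  then obtain z where z: "z \<in> hadd A x y" "e z = hzero B" using add_e[OF assms] by force
  have "z \<in> carrier A" using add_sub[OF assms] z by blast
  hence "z = hzero A" using e_inj[OF _ zero_in] z zero_e by simp
  thus "hzero A \<in> hadd A x y" using z by simp
qed

lemma neg_e: assumes x: "x \<in> carrier A" shows "hneg A x \<in> carrier A" "e (hneg A x) = hneg B (e x)"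
proof -
  obtain y where y: "y \<in> carrier B" "hzero B \<in> hadd B (e x) y" using negB[OF e_in[OF x]] by blast
  obtain y' where y': "y' \<in> carrier A" "y = e y'" using e_surj[OF y(1)] by blast
  have ex: "\<exists>!y. y \<in> carrier A \<and> hzero A \<in> hadd A x y"
  proof (rule ex1I[of _ y'])
    show "y' \<in> carrier A \<and> hzero A \<in> hadd A x y'" using y y' zero_add_iff[OF x y'(1)] by simp
  next
    fix z assume z: "z \<in> carrier A \<and> hzero A \<in> hadd A x z"
    hence "hzero B \<in> hadd B (e x) (e z)" using zero_add_iff[OF x] by blast
    hence "e z = y" using negB[OF e_in[OF x]] y e_in z by blast
    thus "z = y'" using e_inj z y' by blast
  qed
  have h: "hneg A x \<in> carrier A \<and> hzero A \<in> hadd A x (hneg A x)" unfolding hneg_def by (rule theI'[OF ex])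
  thus "hneg A x \<in> carrier A" by blast
  have c: "e (hneg A x) \<in> carrier B \<and> hzero B \<in> hadd B (e x) (e (hneg A x))"
    using h zero_add_iff[OF x] e_in by blast
  show "e (hneg A x) = hneg B (e x)" unfolding hneg_def[of B]
    using the1_equality[OF negB[OF e_in[OF x]] c] by simp
qed

lemma hid_iff: assumes I: "I \<subseteq> carrier A" shows "hyperideal A I \<longleftrightarrow> hyperideal B (e ` I)"
proof -
  have sub: "\<And>S. S \<subseteq> carrier A \<Longrightarrow> (S \<subseteq> I \<longleftrightarrow> e ` S \<subseteq> e ` I)"
  proof -
    fix S assume S: "S \<subseteq> carrier A"
    show "S \<subseteq> I \<longleftrightarrow> e ` S \<subseteq> e ` I"
    proof
      assume "e ` S \<subseteq> e ` I"
      thus "S \<subseteq> I" using S I e_inj by blast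
    qed blast
  qed
  have mem: "\<And>x. x \<in> carrier A \<Longrightarrow> x \<in> I \<longleftrightarrow> e x \<in> e ` I" using I e_inj by blast
  have c1: "(\<forall>a\<in>I. \<forall>b\<in>I. hadd A a b \<subseteq> I) \<longleftrightarrow> (\<forall>a\<in>e ` I. \<forall>b\<in>e ` I. hadd B a b \<subseteq> e ` I)"
  proof -
    have "hadd A a b \<subseteq> I \<longleftrightarrow> hadd B (e a) (e b) \<subseteq> e ` I" if "a \<in> I" "b \<in> I" for a b
    proof -
      have ab: "a \<in> carrier A" "b \<in> carrier A" using that I by auto
      show ?thesis using sub[OF add_sub[OF ab]] add_e[OF ab] by simp
    qed
    thus ?thesis by blast
  qed
  have c2: "(\<forall>a\<in>I. hneg A a \<in> I) \<longleftrightarrow> (\<forall>a\<in>e ` I. hneg B a \<in> e ` I)"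
  proof -
    have "hneg A a \<in> I \<longleftrightarrow> hneg B (e a) \<in> e ` I" if "a \<in> I" for a
    proof -
      have a: "a \<in> carrier A" using that I by auto
      show ?thesis using mem[OF neg_e(1)[OF a]] neg_e(2)[OF a] by simp
    qed
    thus ?thesis by blast
  qed
  have c3: "(\<forall>r\<in>carrier A. \<forall>a\<in>I. hmul A r a \<in> I) \<longleftrightarrow> (\<forall>r\<in>carrier B. \<forall>a\<in>e ` I. hmul B r a \<in> e ` I)"
  proof -
    have m: "hmul A r a \<in> I \<longleftrightarrow> hmul B (e r) (e a) \<in> e ` I" if "r \<in> carrier A" "a \<in> I" for r a
    proof -
      have a: "a \<in> carrier A" using that I by auto
      show ?thesis using mem[OF mul_in[OF that(1) a]] mul_e[OF that(1) a] by simp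
    qed
    show ?thesis
    proof
      assume h: "\<forall>r\<in>carrier A. \<forall>a\<in>I. hmul A r a \<in> I"
      show "\<forall>r\<in>carrier B. \<forall>a\<in>e ` I. hmul B r a \<in> e ` I"
      proof (intro ballI)
        fix r a assume r: "r \<in> carrier B" and a: "a \<in> e ` I"
        obtain r' where r': "r' \<in> carrier A" "r = e r'" using e_surj[OF r] by blast
        obtain a' where a': "a' \<in> I" "a = e a'" using a by blast
        show "hmul B r a \<in> e ` I" using m[OF r'(1) a'(1)] h r' a' by simp
      qed
    next
      assume h: "\<forall>r\<in>carrier B. \<forall>a\<in>e ` I. hmul B r a \<in> e ` I"
      show "\<forall>r\<in>carrier A. \<forall>a\<in>I. hmul A r a \<in> I"
      proof (intro ballI)
        fix r a assume r: "r \<in> carrier A" and a: "a \<in> I"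
        show "hmul A r a \<in> I" using m[OF r a] h e_in[OF r] a by blast
      qed
    qed
  qed
  have c0: "e ` I \<subseteq> carrier B" using I e_in by blast
  show ?thesis unfolding hyperideal_def using c0 c1 c2 c3 I by auto
qed

lemma img_eq_iff: "I \<subseteq> carrier A \<Longrightarrow> J \<subseteq> carrier A \<Longrightarrow> e ` I = e ` J \<longleftrightarrow> I = J"
  using e_inj by (metis inj_on_def inj_on_image_eq_iff subset_trans subset_refl)

lemma eA: "e ` carrier A = carrier B" using bij unfolding bij_betw_def by blast

lemma maximal_iff: "maximal_hyperideal A M \<longleftrightarrow> M \<subseteq> carrier A \<and> maximal_hyperideal B (e ` M)"
proof
  assume M: "maximal_hyperideal A M"
  have hA: "hyperideal A M" using M unfolding maximal_hyperideal_def by (elim conjE)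
  hence MA: "M \<subseteq> carrier A" unfolding hyperideal_def by (elim conjE)
  from hA have hM: "hyperideal B (e ` M)" using hid_iff[OF MA] by simp
  have ne: "e ` M \<noteq> carrier B"
  proof
    assume "e ` M = carrier B"
    hence "e ` M = e ` carrier A" using eA by simp
    hence "M = carrier A" using img_eq_iff[OF MA subset_refl] by blast
    thus False using M unfolding maximal_hyperideal_def by blast
  qed
  have "\<forall>J. hyperideal B J \<and> e ` M \<subseteq> J \<longrightarrow> J = e ` M \<or> J = carrier B"
  proof (intro allI impI)
    fix J assume J: "hyperideal B J \<and> e ` M \<subseteq> J"
    define J' where "J' = {x \<in> carrier A. e x \<in> J}"
    have JB: "J \<subseteq> carrier B" using J unfolding hyperideal_def by blast
    have J'A: "J' \<subseteq> carrier A" unfolding J'_def by blast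
    have eJ: "e ` J' = J"
    proof
      show "e ` J' \<subseteq> J" unfolding J'_def by blast
      show "J \<subseteq> e ` J'"
      proof
        fix z assume z: "z \<in> J"
        obtain x where "x \<in> carrier A" "z = e x" using e_surj z JB by blast
        thus "z \<in> e ` J'" unfolding J'_def using z by blast
      qed
    qed
    have "hyperideal A J'" using hid_iff[OF J'A] eJ J by simp
    moreover have "M \<subseteq> J'" unfolding J'_def using MA J by blast
    ultimately have "J' = M \<or> J' = carrier A" using M unfolding maximal_hyperideal_def by blast
    thus "J = e ` M \<or> J = carrier B"
    proof
      assume "J' = M" thus ?thesis using eJ by simp
    next
      assume "J' = carrier A" thus ?thesis using eJ eA by simp
    qed
  qed
  thus "M \<subseteq> carrier A \<and> maximal_hyperideal B (e ` M)" using MA hM ne unfolding maximal_hyperideal_def by blast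
next
  assume h: "M \<subseteq> carrier A \<and> maximal_hyperideal B (e ` M)"
  hence MA: "M \<subseteq> carrier A" by blast
  have "hyperideal B (e ` M)" using h unfolding maximal_hyperideal_def by blast
  hence hM: "hyperideal A M" using hid_iff[OF MA] by simp
  have ne: "M \<noteq> carrier A"
  proof
    assume "M = carrier A" hence "e ` M = carrier B" using eA by simp
    thus False using h unfolding maximal_hyperideal_def by blast
  qed
  have "\<forall>J. hyperideal A J \<and> M \<subseteq> J \<longrightarrow> J = M \<or> J = carrier A"
  proof (intro allI impI)
    fix J assume J: "hyperideal A J \<and> M \<subseteq> J"
    have JA: "J \<subseteq> carrier A" using J unfolding hyperideal_def by blast
    have "hyperideal B (e ` J)" using J hid_iff[OF JA] by simp
    moreover have "e ` M \<subseteq> e ` J" using J by blast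
    ultimately have "e ` J = e ` M \<or> e ` J = carrier B" using h unfolding maximal_hyperideal_def by blast
    thus "J = M \<or> J = carrier A"
    proof
      assume "e ` J = e ` M" thus ?thesis using img_eq_iff[OF JA MA] by blast
    next
      assume "e ` J = carrier B" hence "e ` J = e ` carrier A" using eA by simp
      thus ?thesis using img_eq_iff[OF JA subset_refl] by blast
    qed
  qed
  thus "maximal_hyperideal A M" using hM ne unfolding maximal_hyperideal_def by blast
qed

end


definition NUL :: "'a hyperring \<Rightarrow> 'a set \<Rightarrow> ('a \<times> 'a) set set" where
  "NUL A P = {c \<in> loc_carrier A (carrier A - P). \<forall>p\<in>c. fst p \<in> P}"

context hdom begin

lemma NUL_C: assumes P: "P \<in> Spec A" and a: "a \<in> K" "f \<in> K" "f \<notin> P"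
  shows "Cc A (K - P) a f \<in> NUL A P \<longleftrightarrow> a \<in> P"
proof
  assume "Cc A (K - P) a f \<in> NUL A P"
  moreover have "(a,f) \<in> Cc A (K - P) a f" using C_self a by simp
  ultimately show "a \<in> P" unfolding NUL_def by fastforce
next
  assume aP: "a \<in> P"
  have "\<forall>p\<in>Cc A (K - P) a f. fst p \<in> P"
  proof
    fix p assume p: "p \<in> Cc A (K - P) a f"
    obtain r t where rt: "p = (r,t)" by fastforce
    hence h: "r \<in> K" "t \<in> K" "t \<notin> P" "r \<cdot> f = a \<cdot> t" using p C_mem by auto
    have "a \<cdot> t \<in> P" using spec_mul_r[OF P aP h(2)] .
    hence "r \<cdot> f \<in> P" using h(4) by simp
    hence "r \<in> P" using spec_D(6)[OF P h(1) a(2)] a(3) by blast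
    thus "fst p \<in> P" using rt by simp
  qed
  moreover have "Cc A (K - P) a f \<in> loc_carrier A (K - P)" using loc_carrier_iff[OF P] a by blast
  ultimately show "Cc A (K - P) a f \<in> NUL A P" unfolding NUL_def by blast
qed

lemma L_simps: "carrier (localization A T) = loc_carrier A T" "hadd (localization A T) = loc_add A T"
  "hmul (localization A T) = loc_mul A T" "hzero (localization A T) = loc_class A T z0 e1"
  "hone (localization A T) = loc_class A T e1 e1"
  unfolding localization_def by simp_all

lemma L_zero: "P \<in> Spec A \<Longrightarrow> hzero (localization A (K - P)) = Cc A (K - P) z0 e1"
  using L_simps(4) loc_class_C[of P z0 e1] by simp

lemma L_elem: assumes "P \<in> Spec A" "c \<in> loc_carrier A (K - P)"
  obtains a f where "a \<in> K" "f \<in> K" "f \<notin> P" "c = Cc A (K - P) a f"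
  using assms loc_carrier_iff by blast

lemma L_in: "P \<in> Spec A \<Longrightarrow> a \<in> K \<Longrightarrow> f \<in> K \<Longrightarrow> f \<notin> P \<Longrightarrow> Cc A (K - P) a f \<in> loc_carrier A (K - P)"
  using loc_carrier_iff by blast

lemma L_add_sub: assumes P: "P \<in> Spec A" and c: "c \<in> loc_carrier A (K - P)" and d: "d \<in> loc_carrier A (K - P)"
  shows "loc_add A (K - P) c d \<subseteq> loc_carrier A (K - P)"
proof -
  obtain a f where 1: "a \<in> K" "f \<in> K" "f \<notin> P" "c = Cc A (K - P) a f" using L_elem[OF P c] by blast
  obtain b g where 2: "b \<in> K" "g \<in> K" "g \<notin> P" "d = Cc A (K - P) b g" using L_elem[OF P d] by blast
  have fg: "f \<cdot> g \<in> K" "f \<cdot> g \<notin> P" using spec_mul_notin[OF P 1(2) 2(2) 1(3) 2(3)] 1 2 by auto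
  show ?thesis unfolding 1(4) 2(4) loc_add_C[OF P 1(1) 2(1) 1(2) 2(2) 1(3) 2(3)]
  proof
    fix x assume "x \<in> {Cc A (K - P) y (f \<cdot> g) | y. y \<in> (a \<cdot> g) \<oplus> (f \<cdot> b)}"
    then obtain y where y: "y \<in> (a \<cdot> g) \<oplus> (f \<cdot> b)" "x = Cc A (K - P) y (f \<cdot> g)" by blast
    have "y \<in> K" using add_in[OF _ _ y(1)] 1 2 by simp
    thus "x \<in> loc_carrier A (K - P)" using L_in[OF P _ fg] y(2) by simp
  qed
qed

lemma L_mul_in: assumes P: "P \<in> Spec A" and c: "c \<in> loc_carrier A (K - P)" and d: "d \<in> loc_carrier A (K - P)"
  shows "loc_mul A (K - P) c d \<in> loc_carrier A (K - P)"
proof -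
  obtain a f where 1: "a \<in> K" "f \<in> K" "f \<notin> P" "c = Cc A (K - P) a f" using L_elem[OF P c] by blast
  obtain b g where 2: "b \<in> K" "g \<in> K" "g \<notin> P" "d = Cc A (K - P) b g" using L_elem[OF P d] by blast
  have fg: "f \<cdot> g \<in> K" "f \<cdot> g \<notin> P" using spec_mul_notin[OF P 1(2) 2(2) 1(3) 2(3)] 1 2 by auto
  show ?thesis unfolding 1(4) 2(4) loc_mul_C[OF P 1(1) 2(1) 1(2) 2(2) 1(3) 2(3)]
    using L_in[OF P _ fg] 1 2 by simp
qed

lemma L_neg: assumes P: "P \<in> Spec A" and a: "a \<in> K" "f \<in> K" "f \<notin> P"
  shows "\<exists>!d. d \<in> loc_carrier A (K - P) \<and> Cc A (K - P) z0 e1 \<in> loc_add A (K - P) (Cc A (K - P) a f) d"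
    "hneg (localization A (K - P)) (Cc A (K - P) a f) = Cc A (K - P) (ng a) f"
proof -
  have fz: "f \<noteq> z0" using a(3) P by auto
  have ex: "Cc A (K - P) (ng a) f \<in> loc_carrier A (K - P) \<and>
      Cc A (K - P) z0 e1 \<in> loc_add A (K - P) (Cc A (K - P) a f) (Cc A (K - P) (ng a) f)"
  proof
    show "Cc A (K - P) (ng a) f \<in> loc_carrier A (K - P)" using L_in[OF P neg_in[OF a(1)] a(2,3)] .
    have "f \<cdot> z0 \<in> mul f ` (a \<oplus> ng a)" using neg_zero[OF a(1)] by (rule imageI)
    hence "z0 \<in> (f \<cdot> a) \<oplus> (f \<cdot> ng a)" using distr[OF a(2) a(1) neg_in[OF a(1)]] a by simp
    hence z: "z0 \<in> (a \<cdot> f) \<oplus> (f \<cdot> ng a)" using mul_comm[OF a(1,2)] by simp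
    have "Cc A (K - P) z0 (f \<cdot> f) = Cc A (K - P) z0 e1"
      by (rule C_cong) (use a fz mul_nz[OF a(2) a(2) fz fz] in simp_all)
    thus "Cc A (K - P) z0 e1 \<in> loc_add A (K - P) (Cc A (K - P) a f) (Cc A (K - P) (ng a) f)"
      unfolding loc_add_C[OF P a(1) neg_in[OF a(1)] a(2) a(2) a(3) a(3)] using z by blast
  qed
  have un: "d = Cc A (K - P) (ng a) f" if d: "d \<in> loc_carrier A (K - P)"
    "Cc A (K - P) z0 e1 \<in> loc_add A (K - P) (Cc A (K - P) a f) d" for d
  proof -
    obtain b g where 2: "b \<in> K" "g \<in> K" "g \<notin> P" "d = Cc A (K - P) b g" using L_elem[OF P d(1)] by blast
    have gz: "g \<noteq> z0" using 2(3) P by auto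
    obtain y where y: "y \<in> (a \<cdot> g) \<oplus> (f \<cdot> b)" "Cc A (K - P) z0 e1 = Cc A (K - P) y (f \<cdot> g)"
      using d(2) unfolding 2(4) loc_add_C[OF P a(1) 2(1) a(2) 2(2) a(3) 2(3)] by blast
    have yK: "y \<in> K" using add_in[OF _ _ y(1)] a 2 by simp
    have "(z0, e1) \<in> Cc A (K - P) z0 e1" using C_self[of z0 e1 "K - P"] P by simp
    hence "z0 \<cdot> (f \<cdot> g) = y \<cdot> e1" using C_eq[OF T_sub[OF P] zero_in yK one_in mul_in[OF a(2) 2(2)] y(2)] by simp
    hence "y = z0" using yK a 2 by simp
    hence "z0 \<in> (a \<cdot> g) \<oplus> (f \<cdot> b)" using y(1) by simp
    hence "f \<cdot> b = ng (a \<cdot> g)" using neg_unique[of "a \<cdot> g" "f \<cdot> b"] a 2 by simp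
    also have "\<dots> = g \<cdot> ng a" using mul_neg[OF 2(2) a(1)] mul_comm[OF a(1) 2(2)] by simp
    finally have fb: "f \<cdot> b = g \<cdot> ng a" .
    show "d = Cc A (K - P) (ng a) f" unfolding 2(4)
      by (rule C_cong) (use 2 a gz fz fb mul_comm[OF 2(1) a(2)] mul_comm[OF neg_in[OF a(1)] 2(2)] in simp_all)
  qed
  show ex1: "\<exists>!d. d \<in> loc_carrier A (K - P) \<and> Cc A (K - P) z0 e1 \<in> loc_add A (K - P) (Cc A (K - P) a f) d"
    using ex un by blast
  show "hneg (localization A (K - P)) (Cc A (K - P) a f) = Cc A (K - P) (ng a) f"
    unfolding hneg_def[of "localization A (K - P)"] L_simps L_zero[OF P, unfolded L_simps]
    using the1_equality[OF ex1 ex] by simp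
qed

lemma L_negU: assumes P: "P \<in> Spec A" and c: "c \<in> loc_carrier A (K - P)"
  shows "\<exists>!d. d \<in> carrier (localization A (K - P)) \<and>
     hzero (localization A (K - P)) \<in> hadd (localization A (K - P)) c d"
  using L_neg(1)[OF P] L_elem[OF P c] L_zero[OF P] unfolding L_simps by metis

lemma NUL_hid: assumes P: "P \<in> Spec A" shows "hyperideal (localization A (K - P)) (NUL A P)"
  unfolding hyperideal_def L_simps
proof (intro conjI ballI)
  show "NUL A P \<subseteq> loc_carrier A (K - P)" unfolding NUL_def by blast
  have "Cc A (K - P) z0 e1 \<in> NUL A P" using NUL_C[OF P zero_in one_in spec_one[OF P]] P by simp
  thus "NUL A P \<noteq> {}" by blast
next
  fix c d assume c: "c \<in> NUL A P" and d: "d \<in> NUL A P"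
  obtain a f where 1: "a \<in> K" "f \<in> K" "f \<notin> P" "c = Cc A (K - P) a f" using L_elem[OF P] c unfolding NUL_def by blast
  obtain b g where 2: "b \<in> K" "g \<in> K" "g \<notin> P" "d = Cc A (K - P) b g" using L_elem[OF P] d unfolding NUL_def by blast
  have aP: "a \<in> P" using c NUL_C[OF P 1(1-3)] 1(4) by simp
  have bP: "b \<in> P" using d NUL_C[OF P 2(1-3)] 2(4) by simp
  have fg: "f \<cdot> g \<in> K" "f \<cdot> g \<notin> P" using spec_mul_notin[OF P 1(2) 2(2) 1(3) 2(3)] 1 2 by auto
  show "loc_add A (K - P) c d \<subseteq> NUL A P" unfolding 1(4) 2(4) loc_add_C[OF P 1(1) 2(1) 1(2) 2(2) 1(3) 2(3)]
  proof
    fix x assume "x \<in> {Cc A (K - P) y (f \<cdot> g) | y. y \<in> (a \<cdot> g) \<oplus> (f \<cdot> b)}"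
    then obtain y where y: "y \<in> (a \<cdot> g) \<oplus> (f \<cdot> b)" "x = Cc A (K - P) y (f \<cdot> g)" by blast
    have yK: "y \<in> K" using add_in[OF _ _ y(1)] 1 2 by simp
    have "a \<cdot> g \<in> P" using spec_mul_r[OF P aP 2(2)] .
    moreover have "f \<cdot> b \<in> P" using spec_D(5)[OF P 1(2) bP] .
    ultimately have "y \<in> P" using spec_D(3)[OF P] y(1) by blast
    thus "x \<in> NUL A P" using NUL_C[OF P yK fg] y(2) by simp
  qed
next
  fix c assume c: "c \<in> NUL A P"
  obtain a f where 1: "a \<in> K" "f \<in> K" "f \<notin> P" "c = Cc A (K - P) a f" using L_elem[OF P] c unfolding NUL_def by blast
  have aP: "a \<in> P" using c NUL_C[OF P 1(1-3)] 1(4) by simp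
  have "hneg (localization A (K - P)) c = Cc A (K - P) (ng a) f" using L_neg(2)[OF P 1(1-3)] 1(4) by simp
  thus "hneg (localization A (K - P)) c \<in> NUL A P" using NUL_C[OF P neg_in[OF 1(1)] 1(2,3)] spec_D(4)[OF P aP] by simp
next
  fix r c assume r: "r \<in> loc_carrier A (K - P)" and c: "c \<in> NUL A P"
  obtain a f where 1: "a \<in> K" "f \<in> K" "f \<notin> P" "c = Cc A (K - P) a f" using L_elem[OF P] c unfolding NUL_def by blast
  obtain b g where 2: "b \<in> K" "g \<in> K" "g \<notin> P" "r = Cc A (K - P) b g" using L_elem[OF P r] by blast
  have aP: "a \<in> P" using c NUL_C[OF P 1(1-3)] 1(4) by simp
  have fg: "g \<cdot> f \<in> K" "g \<cdot> f \<notin> P" using spec_mul_notin[OF P 2(2) 1(2) 2(3) 1(3)] 1 2 by auto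
  show "loc_mul A (K - P) r c \<in> NUL A P" unfolding 1(4) 2(4) loc_mul_C[OF P 2(1) 1(1) 2(2) 1(2) 2(3) 1(3)]
    using NUL_C[OF P mul_in[OF 2(1) 1(1)] fg] spec_D(5)[OF P 2(1) aP] by simp
qed

lemma L_unit: assumes P: "P \<in> Spec A" and J: "hyperideal (localization A (K - P)) J"
  and c: "c \<in> J" "c \<notin> NUL A P" shows "J = loc_carrier A (K - P)"
proof -
  have JL: "J \<subseteq> loc_carrier A (K - P)" and Jm: "\<And>r x. r \<in> loc_carrier A (K - P) \<Longrightarrow> x \<in> J \<Longrightarrow> loc_mul A (K - P) r x \<in> J"
    using J unfolding hyperideal_def L_simps by auto
  obtain a f where 1: "a \<in> K" "f \<in> K" "f \<notin> P" "c = Cc A (K - P) a f" using L_elem[OF P] c JL by blast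
  have aP: "a \<notin> P" using c NUL_C[OF P 1(1-3)] 1(4) by simp
  have az: "a \<noteq> z0" using aP P by auto
  have fz: "f \<noteq> z0" using 1(3) P by auto
  show ?thesis
  proof
    show "loc_carrier A (K - P) \<subseteq> J"
    proof
      fix d assume d: "d \<in> loc_carrier A (K - P)"
      obtain b g where 2: "b \<in> K" "g \<in> K" "g \<notin> P" "d = Cc A (K - P) b g" using L_elem[OF P d] by blast
      have gz: "g \<noteq> z0" using 2(3) P by auto
      have ga: "g \<cdot> a \<in> K" "g \<cdot> a \<notin> P" using spec_mul_notin[OF P 2(2) 1(1) 2(3) aP] 1 2 by auto
      have "loc_mul A (K - P) (Cc A (K - P) (b \<cdot> f) (g \<cdot> a)) c = Cc A (K - P) (b \<cdot> f \<cdot> a) (g \<cdot> a \<cdot> f)"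
        unfolding 1(4) using loc_mul_C[OF P mul_in[OF 2(1) 1(2)] 1(1) ga(1) 1(2) ga(2) 1(3)] .
      also have "\<dots> = d" unfolding 2(4)
      proof (rule C_cong)
        show "b \<cdot> f \<cdot> a \<cdot> g = b \<cdot> (g \<cdot> a \<cdot> f)" using 1(1,2) 2(1,2) by (simp add: mul_ac)
      qed (use 1 2 gz mul_nz[OF mul_in[OF 2(2) 1(1)] 1(2) mul_nz[OF 2(2) 1(1) gz az] fz] in simp_all)
      finally show "d \<in> J" using Jm[OF L_in[OF P mul_in[OF 2(1) 1(2)] ga] c(1)] by simp
    qed
  qed (use JL in blast)
qed

lemma NUL_max: assumes P: "P \<in> Spec A"
  shows "maximal_hyperideal (localization A (K - P)) m \<longleftrightarrow> m = NUL A P"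
proof -
  have ne: "NUL A P \<noteq> loc_carrier A (K - P)"
  proof
    assume "NUL A P = loc_carrier A (K - P)"
    hence "Cc A (K - P) e1 e1 \<in> NUL A P" using L_in[OF P one_in one_in spec_one[OF P]] by simp
    thus False using NUL_C[OF P one_in one_in spec_one[OF P]] spec_one[OF P] by simp
  qed
  have sub: "J \<subseteq> NUL A P" if "hyperideal (localization A (K - P)) J" "J \<noteq> loc_carrier A (K - P)" for J
    using L_unit[OF P that(1)] that(2) by blast
  have mN: "maximal_hyperideal (localization A (K - P)) (NUL A P)"
    unfolding maximal_hyperideal_def L_simps(1)
  proof (intro conjI allI impI)
    show "hyperideal (localization A (K - P)) (NUL A P)" using NUL_hid[OF P] .
    show "NUL A P \<noteq> loc_carrier A (K - P)" using ne .
    fix J assume J: "hyperideal (localization A (K - P)) J \<and> NUL A P \<subseteq> J"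
    show "J = NUL A P \<or> J = loc_carrier A (K - P)"
    proof (cases "J = loc_carrier A (K - P)")
      case False thus ?thesis using sub[of J] J by blast
    qed simp
  qed
  show ?thesis
  proof
    assume m: "maximal_hyperideal (localization A (K - P)) m"
    have hm: "hyperideal (localization A (K - P)) m" and mne: "m \<noteq> loc_carrier A (K - P)"
      and mx: "\<And>J. hyperideal (localization A (K - P)) J \<Longrightarrow> m \<subseteq> J \<Longrightarrow> J = m \<or> J = loc_carrier A (K - P)"
      using m unfolding maximal_hyperideal_def L_simps(1) by blast+
    have "m \<subseteq> NUL A P" using sub[OF hm mne] .
    thus "m = NUL A P" using mx[OF NUL_hid[OF P]] ne by blast
  qed (use mN in simp)
qed

end

definition pv :: "'a hyperring \<Rightarrow> 'a set \<Rightarrow> ('a set set \<times> 'a sect) set \<Rightarrow> ('a \<times> 'a) set" where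
  "pv A P g = snd (SOME x. x \<in> g) P"

definition NUS :: "'a hyperring \<Rightarrow> 'a set \<Rightarrow> ('a set set \<times> 'a sect) set set" where
  "NUS A P = {g \<in> stalk_carrier A P. pv A P g \<in> NUL A P}"

definition sec :: "'a hyperring \<Rightarrow> 'a set set \<Rightarrow> 'a \<Rightarrow> 'a \<Rightarrow> 'a sect" where
  "sec A U a f = (\<lambda>Q\<in>U. Cc A (carrier A - Q) a f)"

context hdom begin

lemma mk_sec: assumes U: "zariski_open A U" and a: "a \<in> K" "f \<in> K" "f \<noteq> z0" and nf: "\<And>Q. Q \<in> U \<Longrightarrow> f \<notin> Q"
  shows "sec A U a f \<in> sections A U" "hasval A U (sec A U a f) a f"
proof -
  show v: "hasval A U (sec A U a f) a f" unfolding hasval_def sec_def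
    using a nf C_ne open_sub[OF U] by auto
  have "sec A U a f \<in> extensional U" unfolding sec_def by simp
  thus "sec A U a f \<in> sections A U" using sec_iff[OF U] v by blast
qed

lemma germ_self: "zariski_open A U \<Longrightarrow> P \<in> U \<Longrightarrow> s \<in> sections A U \<Longrightarrow> (U,s) \<in> germ A P U s"
  unfolding germ_def by blast

lemma germ_mem: assumes "x \<in> germ A P U s"
  shows "zariski_open A (fst x)" "P \<in> fst x" "snd x \<in> sections A (fst x)" "snd x P = s P"
proof -
  obtain V t where x: "x = (V,t)" by fastforce
  obtain W where W: "zariski_open A W" "P \<in> W" "W \<subseteq> U \<inter> V" "restrict s W = restrict t W"
    "zariski_open A V" "P \<in> V" "t \<in> sections A V" using assms unfolding germ_def x by blast
  have "restrict s W P = restrict t W P" using W(4) by simp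
  hence "s P = t P" using W(2) by simp
  thus "zariski_open A (fst x)" "P \<in> fst x" "snd x \<in> sections A (fst x)" "snd x P = s P" using x W by auto
qed

lemma germ_agree: assumes W0: "zariski_open A W0" "P \<in> W0" "W0 \<subseteq> U \<inter> V" and eq: "\<And>Q. Q \<in> W0 \<Longrightarrow> s Q = t Q"
  shows "germ A P U s \<subseteq> germ A P V t"
proof
  fix x assume x: "x \<in> germ A P U s"
  obtain V' t' where xx: "x = (V',t')" by fastforce
  obtain W where W: "zariski_open A W" "P \<in> W" "W \<subseteq> U \<inter> V'" "restrict s W = restrict t' W"
    "zariski_open A V'" "P \<in> V'" "t' \<in> sections A V'" using x unfolding germ_def xx by blast
  let ?W = "W \<inter> W0"
  have "zariski_open A ?W" using open_Int[OF W(1) W0(1)] .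
  moreover have "P \<in> ?W" using W W0 by blast
  moreover have "?W \<subseteq> V \<inter> V'" using W W0 by blast
  moreover have "restrict t ?W = restrict t' ?W"
  proof (rule ext)
    fix Q show "restrict t ?W Q = restrict t' ?W Q"
    proof (cases "Q \<in> ?W")
      case True
      hence "restrict s W Q = restrict t' W Q" using W(4) by simp
      hence "s Q = t' Q" using True by simp
      moreover have "Q \<in> W0" using True by blast
      ultimately have tQ: "t Q = t' Q" using eq by metis
      show ?thesis using True tQ by (simp only: restrict_apply')
    next
      case False thus ?thesis by (simp only: restrict_apply if_False)
    qed
  qed
  ultimately show "x \<in> germ A P V t" unfolding germ_def xx using W(5-7) by blast
qed

lemma germ_eq: assumes U: "zariski_open A U" "P \<in> U" "s \<in> sections A U"
  and V: "zariski_open A V" "P \<in> V" "t \<in> sections A V" and st: "s P = t P"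
  shows "germ A P U s = germ A P V t"
proof -
  obtain a f where 1: "hasval A U s a f" using sec_val[OF U(3)] U(2) by blast
  obtain b g where 2: "hasval A V t b g" using sec_val[OF V(3)] V(2) by blast
  have PS: "P \<in> Spec A" using open_sub[OF U(1)] U(2) by blast
  have "Cc A (K - P) a f = Cc A (K - P) b g" using hasvalD(4)[OF 1 U(2)] hasvalD(4)[OF 2 V(2)] st by simp
  moreover obtain p where "p \<in> Cc A (K - P) a f" using hasvalD(5)[OF 1 U(2)] by blast
  ultimately have ag: "a \<cdot> g = b \<cdot> f"
    using C_eq[OF T_sub[OF PS] hasvalD(1)[OF 1] hasvalD(1)[OF 2] hasvalD(2)[OF 1] hasvalD(2)[OF 2]] by blast
  have eq: "s Q = t Q" if "Q \<in> U \<inter> V" for Q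
  proof -
    have "s Q = Cc A (K - Q) a f" using hasvalD(4)[OF 1] that by blast
    also have "\<dots> = Cc A (K - Q) b g"
      using C_cong[OF _ hasvalD(1)[OF 1] hasvalD(1)[OF 2] hasvalD(2)[OF 1] hasvalD(2)[OF 2] hasvalD(3)[OF 1] hasvalD(3)[OF 2] ag]
      by blast
    also have "\<dots> = t Q" using hasvalD(4)[OF 2] that by simp
    finally show ?thesis .
  qed
  have o: "zariski_open A (U \<inter> V)" using open_Int[OF U(1) V(1)] .
  show ?thesis
  proof
    show "germ A P U s \<subseteq> germ A P V t" using germ_agree[OF o _ subset_refl] U V eq by blast
    show "germ A P V t \<subseteq> germ A P U s" using germ_agree[OF o _ _, of P V U t s] U V eq by (simp add: Int_commute)
  qed
qed

lemma germ_pv: assumes "zariski_open A U" "P \<in> U" "s \<in> sections A U" shows "pv A P (germ A P U s) = s P"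
proof -
  have "(SOME x. x \<in> germ A P U s) \<in> germ A P U s" using germ_self[OF assms] by (rule someI)
  thus ?thesis unfolding pv_def using germ_mem(4) by blast
qed

lemma stalk_elem: assumes "g \<in> stalk_carrier A P"
  obtains U s where "zariski_open A U" "P \<in> U" "s \<in> sections A U" "g = germ A P U s"
  using assms unfolding stalk_carrier_def by blast

lemma stalk_some: assumes g: "g \<in> stalk_carrier A P"
  shows "(SOME x. x \<in> g) \<in> g" "zariski_open A (fst (SOME x. x \<in> g))" "P \<in> fst (SOME x. x \<in> g)"
    "snd (SOME x. x \<in> g) \<in> sections A (fst (SOME x. x \<in> g))" "snd (SOME x. x \<in> g) P = pv A P g"
proof -
  obtain U s where U: "zariski_open A U" "P \<in> U" "s \<in> sections A U" "g = germ A P U s" using stalk_elem[OF g] by blast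
  show i: "(SOME x. x \<in> g) \<in> g" using germ_self[OF U(1-3)] U(4) by (metis someI)
  show "zariski_open A (fst (SOME x. x \<in> g))" "P \<in> fst (SOME x. x \<in> g)"
    "snd (SOME x. x \<in> g) \<in> sections A (fst (SOME x. x \<in> g))" using germ_mem(1-3) i U(4) by blast+
  show "snd (SOME x. x \<in> g) P = pv A P g" unfolding pv_def ..
qed

lemma stalk_spec: "g \<in> stalk_carrier A P \<Longrightarrow> P \<in> Spec A"
  using stalk_elem open_sub by blast

lemma pv_in: assumes g: "g \<in> stalk_carrier A P" shows "pv A P g \<in> loc_carrier A (K - P)"
proof -
  obtain U s where U: "zariski_open A U" "P \<in> U" "s \<in> sections A U" "g = germ A P U s" using stalk_elem[OF g] by blast
  show ?thesis using germ_pv[OF U(1-3)] sec_loc[OF U(3,2)] U(4) by simp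
qed

lemma pv_inj: assumes g: "g \<in> stalk_carrier A P" and h: "h \<in> stalk_carrier A P" and e: "pv A P g = pv A P h"
  shows "g = h"
proof -
  obtain U s where U: "zariski_open A U" "P \<in> U" "s \<in> sections A U" "g = germ A P U s" using stalk_elem[OF g] by blast
  obtain V t where V: "zariski_open A V" "P \<in> V" "t \<in> sections A V" "h = germ A P V t" using stalk_elem[OF h] by blast
  have "s P = t P" using e germ_pv[OF U(1-3)] germ_pv[OF V(1-3)] U(4) V(4) by simp
  thus ?thesis using germ_eq[OF U(1-3) V(1-3)] U(4) V(4) by simp
qed

lemma germ_in: "zariski_open A U \<Longrightarrow> P \<in> U \<Longrightarrow> s \<in> sections A U \<Longrightarrow> germ A P U s \<in> stalk_carrier A P"
  unfolding stalk_carrier_def by blast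

lemma pv_surj: assumes P: "P \<in> Spec A" and c: "c \<in> loc_carrier A (K - P)"
  shows "\<exists>g\<in>stalk_carrier A P. c = pv A P g"
proof -
  obtain a f where 1: "a \<in> K" "f \<in> K" "f \<notin> P" "c = Cc A (K - P) a f" using L_elem[OF P c] by blast
  let ?U = "{Q\<in>Spec A. f \<notin> Q}"
  have U: "zariski_open A ?U" "P \<in> ?U" using open_D1[OF 1(2)] P 1(3) by auto
  have fz: "f \<noteq> z0" using 1(3) P by auto
  note s = mk_sec[OF U(1) 1(1,2) fz]
  have "pv A P (germ A P ?U (sec A ?U a f)) = c" using germ_pv[OF U s(1)] U(2) 1(4) unfolding sec_def by simp
  thus ?thesis using germ_in[OF U s(1)] by (metis (no_types, lifting) mem_Collect_eq)
qed

lemma stalk_mul: assumes g: "g \<in> stalk_carrier A P" and h: "h \<in> stalk_carrier A P"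
  shows "hmul (stalk A P) g h \<in> stalk_carrier A P"
    "pv A P (hmul (stalk A P) g h) = loc_mul A (K - P) (pv A P g) (pv A P h)"
proof -
  obtain U s where x: "(SOME x. x \<in> g) = (U,s)" by fastforce
  obtain V t where y: "(SOME x. x \<in> h) = (V,t)" by fastforce
  note sg = stalk_some[OF g, unfolded x, simplified]
  note sh = stalk_some[OF h, unfolded y, simplified]
  have o: "zariski_open A (U \<inter> V)" using open_Int sg sh by blast
  have P: "P \<in> U \<inter> V" using sg sh by blast
  have r1: "restrict s (U \<inter> V) \<in> sections A (U \<inter> V)" using sec_restrict[OF o sg(2) _ sg(4)] by blast
  have r2: "restrict t (U \<inter> V) \<in> sections A (U \<inter> V)" using sec_restrict[OF o sh(2) _ sh(4)] by blast
  have m: "hmul (OX A (U \<inter> V)) (restrict s (U \<inter> V)) (restrict t (U \<inter> V)) \<in> sections A (U \<inter> V)"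
    using OX_mul_sec[OF o r1 r2] .
  have e: "hmul (stalk A P) g h = germ A P (U \<inter> V) (hmul (OX A (U \<inter> V)) (restrict s (U \<inter> V)) (restrict t (U \<inter> V)))"
    unfolding stalk_def using x y by simp
  show "hmul (stalk A P) g h \<in> stalk_carrier A P" using e germ_in[OF o P m] by simp
  have "pv A P (hmul (stalk A P) g h) = loc_mul A (K - P) (s P) (t P)"
    unfolding e germ_pv[OF o P m] using P unfolding OX_def by simp
  thus "pv A P (hmul (stalk A P) g h) = loc_mul A (K - P) (pv A P g) (pv A P h)" using sg(5) sh(5) by simp
qed

lemma stalk_zero: assumes P: "P \<in> Spec A"
  shows "hzero (stalk A P) \<in> stalk_carrier A P" "pv A P (hzero (stalk A P)) = loc_class A (K - P) z0 e1"
proof -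
  have z: "hzero (stalk A P) = germ A P (Spec A) (hzero (OX A (Spec A)))" unfolding stalk_def by simp
  show "hzero (stalk A P) \<in> stalk_carrier A P" using z germ_in[OF open_Spec P OX_zero_sec[OF open_Spec]] by simp
  show "pv A P (hzero (stalk A P)) = loc_class A (K - P) z0 e1"
    using z germ_pv[OF open_Spec P OX_zero_sec[OF open_Spec]] P unfolding OX_def by simp
qed

end

context hdom begin

lemma stalk_add: assumes g: "g \<in> stalk_carrier A P" and h: "h \<in> stalk_carrier A P"
  shows "hadd (stalk A P) g h \<subseteq> stalk_carrier A P"
    "pv A P ` hadd (stalk A P) g h = loc_add A (K - P) (pv A P g) (pv A P h)"
proof -
  have P: "P \<in> Spec A" using stalk_spec[OF g] .
  have H: "hadd (stalk A P) g h = {germ A P W r | W r. zariski_open A W \<and> P \<in> W \<and>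
        (\<exists>s t. s \<in> sections A W \<and> t \<in> sections A W \<and> germ A P W s = g \<and> germ A P W t = h \<and>
               r \<in> hadd (OX A W) s t)}" unfolding stalk_def by simp
  have OXa: "\<And>W s t. hadd (OX A W) s t = {r \<in> sections A W. \<forall>Q\<in>W. r Q \<in> loc_add A (K - Q) (s Q) (t Q)}"
    unfolding OX_def by simp
  show "hadd (stalk A P) g h \<subseteq> stalk_carrier A P" unfolding H OXa using germ_in by blast
  show "pv A P ` hadd (stalk A P) g h = loc_add A (K - P) (pv A P g) (pv A P h)"
  proof
    show "pv A P ` hadd (stalk A P) g h \<subseteq> loc_add A (K - P) (pv A P g) (pv A P h)"
    proof
      fix c assume "c \<in> pv A P ` hadd (stalk A P) g h"
      then obtain W r s t where W: "zariski_open A W" "P \<in> W" "s \<in> sections A W" "t \<in> sections A W"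
        "germ A P W s = g" "germ A P W t = h" "r \<in> sections A W" "\<forall>Q\<in>W. r Q \<in> loc_add A (K - Q) (s Q) (t Q)"
        "c = pv A P (germ A P W r)" unfolding H OXa by blast
      have "c = r P" using W(9) germ_pv[OF W(1,2,7)] by simp
      moreover have "s P = pv A P g" "t P = pv A P h" using germ_pv[OF W(1,2,3)] germ_pv[OF W(1,2,4)] W(5,6) by auto
      ultimately show "c \<in> loc_add A (K - P) (pv A P g) (pv A P h)" using W(8) W(2) by auto
    qed
  next
    show "loc_add A (K - P) (pv A P g) (pv A P h) \<subseteq> pv A P ` hadd (stalk A P) g h"
    proof
      fix c assume c: "c \<in> loc_add A (K - P) (pv A P g) (pv A P h)"
      obtain a f where 1: "a \<in> K" "f \<in> K" "f \<notin> P" "pv A P g = Cc A (K - P) a f" using L_elem[OF P pv_in[OF g]] by blast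
      obtain b k where 2: "b \<in> K" "k \<in> K" "k \<notin> P" "pv A P h = Cc A (K - P) b k" using L_elem[OF P pv_in[OF h]] by blast
      obtain y where y: "y \<in> (a \<cdot> k) \<oplus> (f \<cdot> b)" "c = Cc A (K - P) y (f \<cdot> k)"
        using c unfolding 1(4) 2(4) loc_add_C[OF P 1(1) 2(1) 1(2) 2(2) 1(3) 2(3)] by blast
      have yK: "y \<in> K" using add_in[OF _ _ y(1)] 1 2 by simp
      have fk: "f \<cdot> k \<in> K" using 1 2 by simp
      let ?W = "{Q\<in>Spec A. f \<cdot> k \<notin> Q}"
      have W: "zariski_open A ?W" "P \<in> ?W" using open_D1[OF fk] P spec_mul_notin[OF P 1(2) 2(2) 1(3) 2(3)] by auto
      have nf: "f \<notin> Q" if "Q \<in> ?W" for Q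
      proof -
        have "Q \<in> Spec A" "f \<cdot> k \<notin> Q" using that by auto
        thus "f \<notin> Q" using spec_mul_r[of Q f k] 2(2) by blast
      qed
      have nk: "k \<notin> Q" if "Q \<in> ?W" for Q
      proof -
        have "Q \<in> Spec A" "f \<cdot> k \<notin> Q" using that by auto
        thus "k \<notin> Q" using spec_D(5)[of Q f k] 1(2) by blast
      qed
      have fz: "f \<noteq> z0" "k \<noteq> z0" using 1(3) 2(3) P by auto
      have fkz: "f \<cdot> k \<noteq> z0" using mul_nz 1 2 fz by simp
      note s = mk_sec[OF W(1) 1(1,2) fz(1) nf]
      note t = mk_sec[OF W(1) 2(1,2) fz(2) nk]
      have nfk: "\<And>Q. Q \<in> ?W \<Longrightarrow> f \<cdot> k \<notin> Q" by blast
      note r = mk_sec[OF W(1) yK fk fkz nfk]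
      have gs: "germ A P ?W (sec A ?W a f) = g"
      proof -
        obtain U s0 where U: "zariski_open A U" "P \<in> U" "s0 \<in> sections A U" "g = germ A P U s0" using stalk_elem[OF g] by blast
        have "s0 P = pv A P g" using germ_pv[OF U(1-3)] U(4) by simp
        hence "sec A ?W a f P = s0 P" using 1(4) W(2) unfolding sec_def by simp
        thus ?thesis using germ_eq[OF W s(1) U(1-3)] U(4) by simp
      qed
      have ht: "germ A P ?W (sec A ?W b k) = h"
      proof -
        obtain U s0 where U: "zariski_open A U" "P \<in> U" "s0 \<in> sections A U" "h = germ A P U s0" using stalk_elem[OF h] by blast
        have "s0 P = pv A P h" using germ_pv[OF U(1-3)] U(4) by simp
        hence "sec A ?W b k P = s0 P" using 2(4) W(2) unfolding sec_def by simp
        thus ?thesis using germ_eq[OF W t(1) U(1-3)] U(4) by simp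
      qed
      have rin: "sec A ?W y (f \<cdot> k) \<in> hadd (OX A ?W) (sec A ?W a f) (sec A ?W b k)"
        unfolding OXa
      proof (intro CollectI conjI r(1) ballI)
        fix Q assume Q: "Q \<in> ?W"
        have QS: "Q \<in> Spec A" using Q by blast
        have e: "sec A ?W y (f \<cdot> k) Q = Cc A (K - Q) y (f \<cdot> k)" "sec A ?W a f Q = Cc A (K - Q) a f"
          "sec A ?W b k Q = Cc A (K - Q) b k" unfolding sec_def using Q by simp_all
        show "sec A ?W y (f \<cdot> k) Q \<in> loc_add A (K - Q) (sec A ?W a f Q) (sec A ?W b k Q)"
          unfolding e loc_add_C[OF QS 1(1) 2(1) 1(2) 2(2) nf[OF Q] nk[OF Q]] using y(1) by blast
      qed simp_all
      have "zariski_open A ?W \<and> P \<in> ?W \<and> (\<exists>s t. s \<in> sections A ?W \<and> t \<in> sections A ?W \<and>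
          germ A P ?W s = g \<and> germ A P ?W t = h \<and> sec A ?W y (f \<cdot> k) \<in> hadd (OX A ?W) s t)"
        using W s(1) t(1) gs ht rin by blast
      hence gm: "germ A P ?W (sec A ?W y (f \<cdot> k)) \<in> hadd (stalk A P) g h"
        unfolding H by blast
      have pe: "pv A P (germ A P ?W (sec A ?W y (f \<cdot> k))) = c"
      proof -
        have pvr: "pv A P (germ A P ?W (sec A ?W y (f \<cdot> k))) = sec A ?W y (f \<cdot> k) P" using germ_pv[OF W r(1)] .
        have "sec A ?W y (f \<cdot> k) P = Cc A (K - P) y (f \<cdot> k)" using W(2) unfolding sec_def by (simp only: restrict_apply')
        thus ?thesis using pvr y(2) by simp
      qed
      show "c \<in> pv A P ` hadd (stalk A P) g h" using rev_image_eqI[where f="pv A P", OF gm pe[symmetric]] .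
    qed
  qed
qed

lemma stalk_iso: assumes P: "P \<in> Spec A" shows "hiso (stalk A P) (localization A (K - P)) (pv A P)"
proof
  have cS: "carrier (stalk A P) = stalk_carrier A P" unfolding stalk_def by simp
  have "inj_on (pv A P) (stalk_carrier A P)" unfolding inj_on_def using pv_inj by blast
  moreover have "pv A P ` stalk_carrier A P = loc_carrier A (K - P)"
  proof
    show "pv A P ` stalk_carrier A P \<subseteq> loc_carrier A (K - P)" using pv_in by blast
    show "loc_carrier A (K - P) \<subseteq> pv A P ` stalk_carrier A P"
    proof
      fix c assume "c \<in> loc_carrier A (K - P)"
      then obtain g where "g \<in> stalk_carrier A P" "c = pv A P g" using pv_surj[OF P] by blast
      thus "c \<in> pv A P ` stalk_carrier A P" by blast
    qed
  qed
  ultimately show "bij_betw (pv A P) (carrier (stalk A P)) (carrier (localization A (K - P)))"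
    unfolding cS L_simps bij_betw_def by blast
  fix x y assume x: "x \<in> carrier (stalk A P)" and y: "y \<in> carrier (stalk A P)"
  show "hadd (stalk A P) x y \<subseteq> carrier (stalk A P)" using stalk_add(1) x y cS by simp
  show "pv A P ` hadd (stalk A P) x y = hadd (localization A (K - P)) (pv A P x) (pv A P y)"
    using stalk_add(2) x y cS L_simps by simp
  show "hmul (stalk A P) x y \<in> carrier (stalk A P)" using stalk_mul(1) x y cS by simp
  show "pv A P (hmul (stalk A P) x y) = hmul (localization A (K - P)) (pv A P x) (pv A P y)"
    using stalk_mul(2) x y cS L_simps by simp
next
  show "hzero (stalk A P) \<in> carrier (stalk A P)" using stalk_zero(1)[OF P] unfolding stalk_def by simp
  show "pv A P (hzero (stalk A P)) = hzero (localization A (K - P))" using stalk_zero(2)[OF P] L_simps by simp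
  fix x assume "x \<in> carrier (localization A (K - P))"
  thus "\<exists>!y. y \<in> carrier (localization A (K - P)) \<and>
     hzero (localization A (K - P)) \<in> hadd (localization A (K - P)) x y"
    using L_negU[OF P] L_simps by simp
qed

lemma NUS_max: assumes P: "P \<in> Spec A" shows "maximal_hyperideal (stalk A P) m \<longleftrightarrow> m = NUS A P"
proof -
  interpret I: hiso "stalk A P" "localization A (K - P)" "pv A P" using stalk_iso[OF P] .
  have cS: "carrier (stalk A P) = stalk_carrier A P" unfolding stalk_def by simp
  have "maximal_hyperideal (stalk A P) m \<longleftrightarrow> m \<subseteq> stalk_carrier A P \<and> pv A P ` m = NUL A P"
    using I.maximal_iff NUL_max[OF P] cS by simp
  also have "\<dots> \<longleftrightarrow> m = NUS A P"
  proof
    assume h: "m \<subseteq> stalk_carrier A P \<and> pv A P ` m = NUL A P"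
    show "m = NUS A P"
    proof
      show "m \<subseteq> NUS A P" unfolding NUS_def using h by blast
      show "NUS A P \<subseteq> m"
      proof
        fix g assume g: "g \<in> NUS A P"
        have gS: "g \<in> stalk_carrier A P" "pv A P g \<in> NUL A P" using g unfolding NUS_def by auto
        hence "pv A P g \<in> pv A P ` m" using h by simp
        then obtain g' where g': "g' \<in> m" "pv A P g = pv A P g'" by blast
        have "g' \<in> stalk_carrier A P" using g' h by blast
        hence "g = g'" using pv_inj[OF gS(1) _ g'(2)] by blast
        thus "g \<in> m" using g' by simp
      qed
    qed
  next
    assume m: "m = NUS A P"
    have "pv A P ` NUS A P = NUL A P"
    proof
      show "pv A P ` NUS A P \<subseteq> NUL A P" unfolding NUS_def by blast
      show "NUL A P \<subseteq> pv A P ` NUS A P"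
      proof
        fix c assume c: "c \<in> NUL A P"
        then obtain g where "g \<in> stalk_carrier A P" "c = pv A P g" using pv_surj[OF P] unfolding NUL_def by blast
        thus "c \<in> pv A P ` NUS A P" unfolding NUS_def using c by blast
      qed
    qed
    thus "m \<subseteq> stalk_carrier A P \<and> pv A P ` m = NUL A P" using m unfolding NUS_def by blast
  qed
  finally show ?thesis .
qed

end

definition pk :: "'a sect \<Rightarrow> 'a set \<Rightarrow> 'a \<times> 'a" where "pk s P = (SOME p. p \<in> s P)"

context hdom begin

lemma pk_prop: assumes s: "s \<in> sections A U" and P: "P \<in> U"
  shows "fst (pk s P) \<in> K" "snd (pk s P) \<in> K" "snd (pk s P) \<notin> P"
    "s P = Cc A (K - P) (fst (pk s P)) (snd (pk s P))" "pk s P \<in> s P"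
proof -
  have PS: "P \<in> Spec A" using sec_spec[OF s P] .
  obtain a f where 1: "a \<in> K" "f \<in> K" "f \<notin> P" "s P = Cc A (K - P) a f" using L_elem[OF PS sec_loc[OF s P]] by blast
  have "(a,f) \<in> s P" using C_self[of a f "K - P"] 1 by simp
  hence p: "pk s P \<in> s P" unfolding pk_def by (rule someI)
  have fz: "f \<noteq> z0" using 1(3) PS by auto
  note c = C_mem_cong[OF PS 1(1,2) fz p[unfolded 1(4)]]
  show "fst (pk s P) \<in> K" using c(2) .
  show "snd (pk s P) \<in> K" using c(3) .
  show "snd (pk s P) \<notin> P" using c(4) .
  show "pk s P \<in> s P" using p .
  show "s P = Cc A (K - P) (fst (pk s P)) (snd (pk s P))" using c(1) 1(4) by simp
qed

lemma pk_rel: assumes s: "s \<in> sections A U" and P: "P \<in> U" "P' \<in> U"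
  shows "fst (pk s P) \<cdot> snd (pk s P') = fst (pk s P') \<cdot> snd (pk s P)"
proof -
  obtain a f where v: "hasval A U s a f" using sec_val[OF s] P by blast
  note af = hasvalD(1-3)[OF v]
  have PS: "P \<in> Spec A" "P' \<in> Spec A" using sec_spec[OF s] P by auto
  have 1: "fst (pk s P) \<cdot> f = a \<cdot> snd (pk s P)"
    using C_mem_cong(5)[OF PS(1) af pk_prop(5)[OF s P(1), unfolded hasvalD(4)[OF v P(1)]]] .
  have 2: "fst (pk s P') \<cdot> f = a \<cdot> snd (pk s P')"
    using C_mem_cong(5)[OF PS(2) af pk_prop(5)[OF s P(2), unfolded hasvalD(4)[OF v P(2)]]] .
  note k = pk_prop(1,2)[OF s P(1)] pk_prop(1,2)[OF s P(2)]
  have "fst (pk s P) \<cdot> snd (pk s P') \<cdot> f = (fst (pk s P) \<cdot> f) \<cdot> snd (pk s P')"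
    using k af by (simp add: mul_ac)
  also have "\<dots> = (a \<cdot> snd (pk s P)) \<cdot> snd (pk s P')" using 1 by simp
  also have "\<dots> = (a \<cdot> snd (pk s P')) \<cdot> snd (pk s P)" using k af by (simp add: mul_ac)
  also have "\<dots> = (fst (pk s P') \<cdot> f) \<cdot> snd (pk s P)" using 2 by simp
  also have "\<dots> = fst (pk s P') \<cdot> snd (pk s P) \<cdot> f" using k af by (simp add: mul_ac)
  finally show ?thesis using cancel_r[OF af(2) _ _ af(3)] k by simp
qed

lemma sec_eq_restrict: assumes U: "zariski_open A U" "zariski_open A U'" "U \<subseteq> U'"
  and s: "s \<in> sections A U" and t: "t \<in> sections A U'" and P0: "P0 \<in> U" "s P0 = t P0"
  shows "s = restrict t U"
proof -
  have P0': "P0 \<in> U'" using P0 U by blast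
  obtain a f where 1: "hasval A U s a f" using sec_val[OF s] P0 by blast
  obtain b g where 2: "hasval A U' t b g" using sec_val[OF t] P0' by blast
  have v2: "hasval A U (restrict t U) b g" using val_mono[OF 2 U(3)] by simp
  have PS: "P0 \<in> Spec A" using sec_spec[OF s P0(1)] .
  have "Cc A (K - P0) a f = Cc A (K - P0) b g" using hasvalD(4)[OF 1 P0(1)] hasvalD(4)[OF 2 P0'] P0(2) by simp
  moreover obtain p where "p \<in> Cc A (K - P0) a f" using hasvalD(5)[OF 1 P0(1)] by blast
  ultimately have "a \<cdot> g = b \<cdot> f"
    using C_eq[OF T_sub[OF PS] hasvalD(1)[OF 1] hasvalD(1)[OF 2] hasvalD(2)[OF 1] hasvalD(2)[OF 2]] by blast
  thus ?thesis using val_eq[OF sec_ext[OF s] _ 1 v2] by simp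
qed

lemma gc_apply: "P \<in> Spec A \<Longrightarrow> r \<in> K \<Longrightarrow> global_canon A r P = Cc A (K - P) r e1"
  unfolding global_canon_def using loc_class_C[of P r e1] by simp

lemma OX_hzero_gc: "hzero (OX A (Spec A)) = global_canon A z0"
  unfolding OX_def global_canon_def by simp
lemma OX_hone_gc: "hone (OX A (Spec A)) = global_canon A e1"
  unfolding OX_def global_canon_def by simp

lemma gc_mul: assumes "a \<in> K" "b \<in> K"
  shows "hmul (OX A (Spec A)) (global_canon A a) (global_canon A b) = global_canon A (a \<cdot> b)"
proof -
  have "hasval A (Spec A) (hmul (OX A (Spec A)) (global_canon A a) (global_canon A b)) (a \<cdot> b) (e1 \<cdot> e1)"
    using OX_mul_val[OF subset_refl gc_val[OF assms(1)] gc_val[OF assms(2)]] .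
  moreover have "hmul (OX A (Spec A)) (global_canon A a) (global_canon A b) \<in> extensional (Spec A)"
    unfolding OX_def by simp
  ultimately show ?thesis
    using val_eq[OF _ sec_ext[OF gc_sec[OF mul_in[OF assms]]] _ gc_val[OF mul_in[OF assms]]] assms by simp
qed

lemma gc_add: assumes "a \<in> K" "b \<in> K" "y \<in> a \<oplus> b"
  shows "global_canon A y \<in> hadd (OX A (Spec A)) (global_canon A a) (global_canon A b)"
proof -
  have y: "y \<in> K" using add_in[OF assms] .
  have "global_canon A y P \<in> loc_add A (K - P) (global_canon A a P) (global_canon A b P)" if P: "P \<in> Spec A" for P
    unfolding gc_apply[OF P y] gc_apply[OF P assms(1)] gc_apply[OF P assms(2)]
      loc_add_C[OF P assms(1,2) one_in one_in spec_one[OF P] spec_one[OF P]]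
    using assms y by auto
  thus ?thesis unfolding OX_def using gc_sec[OF y] by simp
qed

lemma gc_add_rev: assumes "a \<in> K" "b \<in> K" "y \<in> K"
  and h: "global_canon A y \<in> hadd (OX A (Spec A)) (global_canon A a) (global_canon A b)"
  shows "y \<in> a \<oplus> b"
proof -
  have "global_canon A y {z0} \<in> loc_add A (K - {z0}) (global_canon A a {z0}) (global_canon A b {z0})"
    using h zero_spec unfolding OX_def by simp
  hence "Cc A (K - {z0}) y e1 \<in> {Cc A (K - {z0}) y' (e1 \<cdot> e1) | y'. y' \<in> (a \<cdot> e1) \<oplus> (e1 \<cdot> b)}"
    unfolding gc_apply[OF zero_spec assms(3)] gc_apply[OF zero_spec assms(1)] gc_apply[OF zero_spec assms(2)]
      loc_add_C[OF zero_spec assms(1,2) one_in one_in spec_one[OF zero_spec] spec_one[OF zero_spec]] .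
  then obtain y' where y': "y' \<in> a \<oplus> b" "Cc A (K - {z0}) y e1 = Cc A (K - {z0}) y' e1" using assms by auto
  have y'K: "y' \<in> K" using add_in[OF assms(1,2) y'(1)] .
  have "(y, e1) \<in> Cc A (K - {z0}) y e1" using C_self[of y e1 "K - {z0}"] assms(3) by simp
  hence "y \<cdot> e1 = y' \<cdot> e1" using C_eq[OF T_sub[OF zero_spec] assms(3) y'K one_in one_in y'(2)] by blast
  thus ?thesis using y' assms(3) y'K by simp
qed

end

definition fsphi :: "'a hyperring \<Rightarrow> 'b hyperring \<Rightarrow> ('a \<Rightarrow> 'b) \<Rightarrow> ('a, 'b) sheaf_map" where
  "fsphi R H \<phi> = (\<lambda>U. if zariski_open R U then
     (\<lambda>s\<in>sections R U. \<lambda>Q\<in>preimg (spec_map R H \<phi>) (Spec H) U.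
        Cc H (carrier H - Q) (\<phi> (fst (pk s (spec_map R H \<phi> Q)))) (\<phi> (snd (pk s (spec_map R H \<phi> Q)))))
     else undefined)"

locale hdom2 = R: hdom R + H: hdom H for R :: "'a hyperring" and H :: "'b hyperring"

locale hphi = hdom2 + fixes \<phi> :: "'a \<Rightarrow> 'b" assumes hom: "hyperring_hom R H \<phi>"
begin

abbreviation "sm \<equiv> spec_map R H \<phi>"

lemma phi_in: "a \<in> carrier R \<Longrightarrow> \<phi> a \<in> carrier H" using hom unfolding hyperring_hom_def by blast
lemma phi_add: "a \<in> carrier R \<Longrightarrow> b \<in> carrier R \<Longrightarrow> y \<in> hadd R a b \<Longrightarrow> \<phi> y \<in> hadd H (\<phi> a) (\<phi> b)"
  using hom unfolding hyperring_hom_def by blast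
lemma phi_mul: "a \<in> carrier R \<Longrightarrow> b \<in> carrier R \<Longrightarrow> \<phi> (hmul R a b) = hmul H (\<phi> a) (\<phi> b)"
  using hom unfolding hyperring_hom_def by blast
lemma phi_zero: "\<phi> (hzero R) = hzero H" using hom unfolding hyperring_hom_def by blast
lemma phi_one: "\<phi> (hone R) = hone H" using hom unfolding hyperring_hom_def by blast
lemma phi_neg: assumes a: "a \<in> carrier R" shows "\<phi> (hneg R a) = hneg H (\<phi> a)"
proof -
  have "hzero H \<in> hadd H (\<phi> a) (\<phi> (hneg R a))" using phi_add[OF a R.neg_in[OF a] R.neg_zero[OF a]] phi_zero by simp
  thus ?thesis using H.neg_unique[OF phi_in[OF a] phi_in[OF R.neg_in[OF a]]] by simp
qed

lemma sm_apply: "Q \<in> Spec H \<Longrightarrow> sm Q = {x \<in> carrier R. \<phi> x \<in> Q}"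
  unfolding spec_map_def by simp

lemma sm_spec: assumes Q: "Q \<in> Spec H" shows "sm Q \<in> Spec R"
proof -
  note QD = H.spec_D[OF Q]
  let ?P = "{x \<in> carrier R. \<phi> x \<in> Q}"
  have i1: "?P \<subseteq> carrier R" by (rule Collect_restrict)
  have "hzero R \<in> ?P" using phi_zero H.spec_zero[OF Q] R.zero_in by simp
  hence i2: "?P \<noteq> {}" using equals0D by metis
  have i3: "\<forall>a\<in>?P. \<forall>b\<in>?P. hadd R a b \<subseteq> ?P"
  proof (intro ballI subsetI)
    fix a b y assume a: "a \<in> ?P" and b: "b \<in> ?P" and y: "y \<in> hadd R a b"
    have ab: "a \<in> carrier R" "b \<in> carrier R" "\<phi> a \<in> Q" "\<phi> b \<in> Q" using a b by auto
    have "\<phi> y \<in> hadd H (\<phi> a) (\<phi> b)" using phi_add[OF ab(1,2) y] .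
    hence "\<phi> y \<in> Q" using QD(3)[OF ab(3,4)] by blast
    moreover have "y \<in> carrier R" using R.add_in[OF ab(1,2) y] .
    ultimately show "y \<in> ?P" by blast
  qed
  have i4: "\<forall>a\<in>?P. hneg R a \<in> ?P"
  proof
    fix a assume a: "a \<in> ?P"
    have "\<phi> (hneg R a) = hneg H (\<phi> a)" using phi_neg a by blast
    moreover have "hneg H (\<phi> a) \<in> Q" using QD(4) a by blast
    ultimately show "hneg R a \<in> ?P" using R.neg_in a by simp
  qed
  have i5: "\<forall>r\<in>carrier R. \<forall>a\<in>?P. hmul R r a \<in> ?P"
  proof (intro ballI)
    fix r a assume r: "r \<in> carrier R" and a: "a \<in> ?P"
    have "\<phi> (hmul R r a) = hmul H (\<phi> r) (\<phi> a)" using phi_mul r a by blast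
    moreover have "hmul H (\<phi> r) (\<phi> a) \<in> Q" using QD(5)[OF phi_in[OF r]] a by blast
    ultimately show "hmul R r a \<in> ?P" using R.mul_in r a by simp
  qed
  have i6: "?P \<noteq> carrier R"
  proof
    assume "?P = carrier R"
    hence "hone R \<in> ?P" using R.one_in by simp
    thus False using phi_one H.spec_one[OF Q] by simp
  qed
  have i7: "\<forall>a\<in>carrier R. \<forall>b\<in>carrier R. hmul R a b \<in> ?P \<longrightarrow> a \<in> ?P \<or> b \<in> ?P"
  proof (intro ballI impI)
    fix a b assume a: "a \<in> carrier R" and b: "b \<in> carrier R" and ab: "hmul R a b \<in> ?P"
    have "hmul H (\<phi> a) (\<phi> b) \<in> Q" using ab phi_mul[OF a b] by simp
    hence "\<phi> a \<in> Q \<or> \<phi> b \<in> Q" using QD(6)[OF phi_in[OF a] phi_in[OF b]] by blast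
    thus "a \<in> ?P \<or> b \<in> ?P" using a b by blast
  qed
  have "hyperideal R ?P" unfolding hyperideal_def using i1 i2 i3 i4 i5 by (intro conjI)
  hence "?P \<in> Spec R" unfolding Spec_def prime_hyperideal_def using i6 i7 by (intro CollectI conjI)
  thus ?thesis using sm_apply[OF Q] by simp
qed

lemma sm_notin: "Q \<in> Spec H \<Longrightarrow> f \<in> carrier R \<Longrightarrow> f \<notin> sm Q \<Longrightarrow> \<phi> f \<notin> Q"
  using sm_apply by auto

lemma sm_in_iff: "Q \<in> Spec H \<Longrightarrow> f \<in> carrier R \<Longrightarrow> f \<in> sm Q \<longleftrightarrow> \<phi> f \<in> Q"
  using sm_apply by auto

lemma preimg_open: assumes U: "zariski_open R U" shows "zariski_open H (preimg sm (Spec H) U)"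
proof -
  obtain S where S: "S \<subseteq> carrier R" "U = {P\<in>Spec R. \<not> S \<subseteq> P}" using U unfolding zariski_open_def by blast
  have "preimg sm (Spec H) U = {Q\<in>Spec H. \<not> \<phi> ` S \<subseteq> Q}"
  proof (rule set_eqI)
    fix Q show "Q \<in> preimg sm (Spec H) U \<longleftrightarrow> Q \<in> {Q\<in>Spec H. \<not> \<phi> ` S \<subseteq> Q}"
    proof (cases "Q \<in> Spec H")
      case True
      have "(\<not> S \<subseteq> sm Q) \<longleftrightarrow> \<not> \<phi> ` S \<subseteq> Q" using sm_apply[OF True] S(1) by auto
      thus ?thesis unfolding preimg_def S(2) using sm_spec[OF True] True by auto
    next
      case False thus ?thesis unfolding preimg_def by simp
    qed
  qed
  moreover have "\<phi> ` S \<subseteq> carrier H" using phi_in S(1) by blast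
  ultimately show ?thesis unfolding zariski_open_def by blast
qed

lemma preimg_D: "Q \<in> preimg sm (Spec H) U \<Longrightarrow> Q \<in> Spec H \<and> sm Q \<in> U"
  unfolding preimg_def by simp

lemma preimg_X: "preimg sm (Spec H) (Spec R) = Spec H"
proof
  show "preimg sm (Spec H) (Spec R) \<subseteq> Spec H" unfolding preimg_def by blast
  show "Spec H \<subseteq> preimg sm (Spec H) (Spec R)"
  proof
    fix Q assume Q: "Q \<in> Spec H"
    thus "Q \<in> preimg sm (Spec H) (Spec R)" unfolding preimg_def using sm_spec[OF Q] by blast
  qed
qed

lemma fsphi_apply: assumes U: "zariski_open R U" and s: "s \<in> sections R U" and Q: "Q \<in> preimg sm (Spec H) U"
  shows "fsphi R H \<phi> U s Q = Cc H (carrier H - Q) (\<phi> (fst (pk s (sm Q)))) (\<phi> (snd (pk s (sm Q))))"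
  unfolding fsphi_def using U s Q by simp

lemma fsphi_ext: assumes U: "zariski_open R U" and s: "s \<in> sections R U"
  shows "fsphi R H \<phi> U s \<in> extensional (preimg sm (Spec H) U)"
  unfolding fsphi_def using U s by simp

lemma pk_facts: assumes U: "zariski_open R U" and s: "s \<in> sections R U" and Q: "Q \<in> preimg sm (Spec H) U"
  shows "fst (pk s (sm Q)) \<in> carrier R" "snd (pk s (sm Q)) \<in> carrier R" "snd (pk s (sm Q)) \<notin> sm Q"
    "\<phi> (snd (pk s (sm Q))) \<notin> Q" "\<phi> (snd (pk s (sm Q))) \<in> carrier H" "\<phi> (fst (pk s (sm Q))) \<in> carrier H"
    "\<phi> (snd (pk s (sm Q))) \<noteq> hzero H" "s (sm Q) = Cc R (carrier R - sm Q) (fst (pk s (sm Q))) (snd (pk s (sm Q)))"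
    "pk s (sm Q) \<in> s (sm Q)"
proof -
  have QQ: "Q \<in> Spec H" "sm Q \<in> U" using preimg_D[OF Q] by auto
  note p = R.pk_prop[OF s QQ(2)]
  show "fst (pk s (sm Q)) \<in> carrier R" "snd (pk s (sm Q)) \<in> carrier R" "snd (pk s (sm Q)) \<notin> sm Q"
    "s (sm Q) = Cc R (carrier R - sm Q) (fst (pk s (sm Q))) (snd (pk s (sm Q)))" "pk s (sm Q) \<in> s (sm Q)"
    using p by auto
  show n: "\<phi> (snd (pk s (sm Q))) \<notin> Q" using sm_notin[OF QQ(1) p(2,3)] .
  show "\<phi> (snd (pk s (sm Q))) \<in> carrier H" "\<phi> (fst (pk s (sm Q))) \<in> carrier H" using phi_in p by auto
  show "\<phi> (snd (pk s (sm Q))) \<noteq> hzero H" using n H.spec_zero[OF QQ(1)] by metis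
qed

lemma fsphi_sec: assumes U: "zariski_open R U" and s: "s \<in> sections R U"
  shows "fsphi R H \<phi> U s \<in> sections H (preimg sm (Spec H) U)"
proof (cases "preimg sm (Spec H) U = {}")
  case True
  thus ?thesis using fsphi_ext[OF U s] H.hasval_empty[OF H.zero_in H.one_in H.zero_ne_one(2)]
    H.sec_iff[OF preimg_open[OF U]] by (simp, blast)
next
  case False
  then obtain Q0 where Q0: "Q0 \<in> preimg sm (Spec H) U" by blast
  note f0 = pk_facts[OF U s Q0]
  have "hasval H (preimg sm (Spec H) U) (fsphi R H \<phi> U s) (\<phi> (fst (pk s (sm Q0)))) (\<phi> (snd (pk s (sm Q0))))"
    unfolding hasval_def
  proof (intro conjI ballI f0(5,6,7))
    fix Q assume Q: "Q \<in> preimg sm (Spec H) U"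
    note f = pk_facts[OF U s Q]
    have QQ: "Q \<in> Spec H" "sm Q \<in> U" using preimg_D[OF Q] by auto
    have "hmul R (fst (pk s (sm Q))) (snd (pk s (sm Q0))) = hmul R (fst (pk s (sm Q0))) (snd (pk s (sm Q)))"
      using R.pk_rel[OF s QQ(2) preimg_D[OF Q0, THEN conjunct2]] .
    hence e: "hmul H (\<phi> (fst (pk s (sm Q)))) (\<phi> (snd (pk s (sm Q0)))) = hmul H (\<phi> (fst (pk s (sm Q0)))) (\<phi> (snd (pk s (sm Q))))"
      using phi_mul f(1,2) f0(1,2) by metis
    have "fsphi R H \<phi> U s Q = Cc H (carrier H - Q) (\<phi> (fst (pk s (sm Q)))) (\<phi> (snd (pk s (sm Q))))"
      using fsphi_apply[OF U s Q] .
    also have "\<dots> = Cc H (carrier H - Q) (\<phi> (fst (pk s (sm Q0)))) (\<phi> (snd (pk s (sm Q0))))"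
      using H.C_cong[OF _ f(6) f0(6) f(5) f0(5) f(7) f0(7) e] by blast
    finally show "fsphi R H \<phi> U s Q = Cc H (carrier H - Q) (\<phi> (fst (pk s (sm Q0)))) (\<phi> (snd (pk s (sm Q0))))" .
    have "Cc H (carrier H - Q) (\<phi> (fst (pk s (sm Q)))) (\<phi> (snd (pk s (sm Q)))) \<noteq> {}"
      using H.C_ne[OF QQ(1) f(6) f(5) f(4)] .
    thus "Cc H (carrier H - Q) (\<phi> (fst (pk s (sm Q0)))) (\<phi> (snd (pk s (sm Q0)))) \<noteq> {}"
      using \<open>Cc H (carrier H - Q) _ _ = Cc H (carrier H - Q) _ _\<close> by simp
  qed
  thus ?thesis using H.sec_iff[OF preimg_open[OF U]] fsphi_ext[OF U s] by blast
qed

end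

context hphi begin

abbreviation "KR \<equiv> carrier R"
abbreviation "KH \<equiv> carrier H"

lemma OXa: "hadd (OX A W) s t = {r \<in> sections A W. \<forall>Q\<in>W. r Q \<in> loc_add A (carrier A - Q) (s Q) (t Q)}"
  unfolding OX_def by simp

lemma fsphi_add: assumes U: "zariski_open R U" and s: "s \<in> sections R U" and t: "t \<in> sections R U"
  and r: "r \<in> hadd (OX R U) s t"
  shows "fsphi R H \<phi> U r \<in> hadd (OX H (preimg sm (Spec H) U)) (fsphi R H \<phi> U s) (fsphi R H \<phi> U t)"
proof -
  have rs: "r \<in> sections R U" and rP: "\<And>P. P \<in> U \<Longrightarrow> r P \<in> loc_add R (KR - P) (s P) (t P)"
    using r unfolding OXa by auto
  have "fsphi R H \<phi> U r Q \<in> loc_add H (KH - Q) (fsphi R H \<phi> U s Q) (fsphi R H \<phi> U t Q)"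
    if Q: "Q \<in> preimg sm (Spec H) U" for Q
  proof -
    have QQ: "Q \<in> Spec H" "sm Q \<in> U" using preimg_D[OF Q] by auto
    have PS: "sm Q \<in> Spec R" using sm_spec[OF QQ(1)] .
    note fs = pk_facts[OF U s Q] and ft = pk_facts[OF U t Q] and fr = pk_facts[OF U rs Q]
    define a where "a = fst (pk s (sm Q))"
    define f where "f = snd (pk s (sm Q))"
    define b where "b = fst (pk t (sm Q))"
    define g where "g = snd (pk t (sm Q))"
    define c where "c = fst (pk r (sm Q))"
    define h where "h = snd (pk r (sm Q))"
    note defs = a_def[symmetric] f_def[symmetric] b_def[symmetric] g_def[symmetric] c_def[symmetric] h_def[symmetric]
    note fs = fs[unfolded defs] and ft = ft[unfolded defs] and fr = fr[unfolded defs]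
    have "r (sm Q) \<in> loc_add R (KR - sm Q) (Cc R (KR - sm Q) a f) (Cc R (KR - sm Q) b g)"
      using rP[OF QQ(2)] fs(8) ft(8) by simp
    then obtain y where y: "y \<in> hadd R (hmul R a g) (hmul R f b)" "r (sm Q) = Cc R (KR - sm Q) y (hmul R f g)"
      unfolding R.loc_add_C[OF PS fs(1) ft(1) fs(2) ft(2) fs(3) ft(3)] by blast
    have yK: "y \<in> KR" using R.add_in[OF R.mul_in[OF fs(1) ft(2)] R.mul_in[OF fs(2) ft(1)] y(1)] .
    have "pk r (sm Q) \<in> Cc R (KR - sm Q) y (hmul R f g)" using fr(9) y(2) by simp
    hence ch: "hmul R c (hmul R f g) = hmul R y h" using R.C_mem[of c h] unfolding c_def h_def by simp
    have "\<phi> y \<in> hadd H (\<phi> (hmul R a g)) (\<phi> (hmul R f b))"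
      using phi_add[OF R.mul_in[OF fs(1) ft(2)] R.mul_in[OF fs(2) ft(1)] y(1)] .
    hence py: "\<phi> y \<in> hadd H (hmul H (\<phi> a) (\<phi> g)) (hmul H (\<phi> f) (\<phi> b))"
      using phi_mul[OF fs(1) ft(2)] phi_mul[OF fs(2) ft(1)] by simp
    have fgz: "hmul H (\<phi> f) (\<phi> g) \<noteq> hzero H" using H.mul_nz[OF fs(5) ft(5) fs(7) ft(7)] .
    have eq: "hmul H (\<phi> c) (hmul H (\<phi> f) (\<phi> g)) = hmul H (\<phi> y) (\<phi> h)"
      using arg_cong[OF ch, of \<phi>] phi_mul fr(1,2) fs(2) ft(2) yK R.mul_in by metis
    have "fsphi R H \<phi> U r Q = Cc H (KH - Q) (\<phi> c) (\<phi> h)" using fsphi_apply[OF U rs Q] unfolding defs .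
    also have "\<dots> = Cc H (KH - Q) (\<phi> y) (hmul H (\<phi> f) (\<phi> g))"
      using H.C_cong[OF _ fr(6) phi_in[OF yK] fr(5) H.mul_in[OF fs(5) ft(5)] fr(7) fgz eq] by blast
    finally have e1: "fsphi R H \<phi> U r Q = Cc H (KH - Q) (\<phi> y) (hmul H (\<phi> f) (\<phi> g))" .
    have e2: "fsphi R H \<phi> U s Q = Cc H (KH - Q) (\<phi> a) (\<phi> f)" using fsphi_apply[OF U s Q] unfolding defs .
    have e3: "fsphi R H \<phi> U t Q = Cc H (KH - Q) (\<phi> b) (\<phi> g)" using fsphi_apply[OF U t Q] unfolding defs .
    show ?thesis unfolding e1 e2 e3 H.loc_add_C[OF QQ(1) fs(6) ft(6) fs(5) ft(5) fs(4) ft(4)]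
      using py by blast
  qed
  moreover have "fsphi R H \<phi> U r \<in> sections H (preimg sm (Spec H) U)" using fsphi_sec[OF U rs] .
  ultimately show ?thesis unfolding OXa by blast
qed

lemma fsphi_mul: assumes U: "zariski_open R U" and s: "s \<in> sections R U" and t: "t \<in> sections R U"
  shows "fsphi R H \<phi> U (hmul (OX R U) s t) = hmul (OX H (preimg sm (Spec H) U)) (fsphi R H \<phi> U s) (fsphi R H \<phi> U t)"
proof (rule extensionalityI)
  have rs: "hmul (OX R U) s t \<in> sections R U" using R.OX_mul_sec[OF U s t] .
  show "fsphi R H \<phi> U (hmul (OX R U) s t) \<in> extensional (preimg sm (Spec H) U)" using fsphi_ext[OF U rs] .
  show "hmul (OX H (preimg sm (Spec H) U)) (fsphi R H \<phi> U s) (fsphi R H \<phi> U t) \<in> extensional (preimg sm (Spec H) U)"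
    unfolding OX_def by simp
  fix Q assume Q: "Q \<in> preimg sm (Spec H) U"
  have QQ: "Q \<in> Spec H" "sm Q \<in> U" using preimg_D[OF Q] by auto
  have PS: "sm Q \<in> Spec R" using sm_spec[OF QQ(1)] .
  note fs = pk_facts[OF U s Q] and ft = pk_facts[OF U t Q] and fr = pk_facts[OF U rs Q]
  define a where "a = fst (pk s (sm Q))"
  define f where "f = snd (pk s (sm Q))"
  define b where "b = fst (pk t (sm Q))"
  define g where "g = snd (pk t (sm Q))"
  define c where "c = fst (pk (hmul (OX R U) s t) (sm Q))"
  define h where "h = snd (pk (hmul (OX R U) s t) (sm Q))"
  note defs = a_def[symmetric] f_def[symmetric] b_def[symmetric] g_def[symmetric] c_def[symmetric] h_def[symmetric]
  note fs = fs[unfolded defs] and ft = ft[unfolded defs] and fr = fr[unfolded defs]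
  have "hmul (OX R U) s t (sm Q) = loc_mul R (KR - sm Q) (s (sm Q)) (t (sm Q))" unfolding OX_def using QQ(2) by simp
  also have "\<dots> = Cc R (KR - sm Q) (hmul R a b) (hmul R f g)"
    using fs(8) ft(8) R.loc_mul_C[OF PS fs(1) ft(1) fs(2) ft(2) fs(3) ft(3)] by simp
  finally have "pk (hmul (OX R U) s t) (sm Q) \<in> Cc R (KR - sm Q) (hmul R a b) (hmul R f g)" using fr(9) by simp
  hence ch: "hmul R c (hmul R f g) = hmul R (hmul R a b) h" using R.C_mem[of c h] unfolding c_def h_def by simp
  have fgz: "hmul H (\<phi> f) (\<phi> g) \<noteq> hzero H" using H.mul_nz[OF fs(5) ft(5) fs(7) ft(7)] .
  have eq: "hmul H (\<phi> c) (hmul H (\<phi> f) (\<phi> g)) = hmul H (hmul H (\<phi> a) (\<phi> b)) (\<phi> h)"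
    using arg_cong[OF ch, of \<phi>] phi_mul fr(1,2) fs(1,2) ft(1,2) R.mul_in by metis
  have "fsphi R H \<phi> U (hmul (OX R U) s t) Q = Cc H (KH - Q) (\<phi> c) (\<phi> h)" using fsphi_apply[OF U rs Q] unfolding defs .
  also have "\<dots> = Cc H (KH - Q) (hmul H (\<phi> a) (\<phi> b)) (hmul H (\<phi> f) (\<phi> g))"
    using H.C_cong[OF _ fr(6) H.mul_in[OF fs(6) ft(6)] fr(5) H.mul_in[OF fs(5) ft(5)] fr(7) fgz eq] by blast
  also have "\<dots> = loc_mul H (KH - Q) (Cc H (KH - Q) (\<phi> a) (\<phi> f)) (Cc H (KH - Q) (\<phi> b) (\<phi> g))"
    using H.loc_mul_C[OF QQ(1) fs(6) ft(6) fs(5) ft(5) fs(4) ft(4)] by simp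
  also have "\<dots> = hmul (OX H (preimg sm (Spec H) U)) (fsphi R H \<phi> U s) (fsphi R H \<phi> U t) Q"
    unfolding OX_def using Q fsphi_apply[OF U s Q] fsphi_apply[OF U t Q] unfolding defs by simp
  finally show "fsphi R H \<phi> U (hmul (OX R U) s t) Q = hmul (OX H (preimg sm (Spec H) U)) (fsphi R H \<phi> U s) (fsphi R H \<phi> U t) Q" .
qed

lemma fsphi_const: assumes U: "zariski_open R U" and c: "c \<in> KR"
  shows "fsphi R H \<phi> U (\<lambda>P\<in>U. loc_class R (KR - P) c (hone R)) = (\<lambda>P\<in>preimg sm (Spec H) U. loc_class H (KH - P) (\<phi> c) (hone H))"
proof (rule extensionalityI)
  have cv: "hasval R U (\<lambda>P\<in>U. loc_class R (KR - P) c (hone R)) c (hone R)" using R.OX_const_val[OF R.open_sub[OF U] c] .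
  have rs: "(\<lambda>P\<in>U. loc_class R (KR - P) c (hone R)) \<in> sections R U" using R.sec_iff[OF U] cv by auto
  show "fsphi R H \<phi> U (\<lambda>P\<in>U. loc_class R (KR - P) c (hone R)) \<in> extensional (preimg sm (Spec H) U)" using fsphi_ext[OF U rs] .
  show "(\<lambda>P\<in>preimg sm (Spec H) U. loc_class H (KH - P) (\<phi> c) (hone H)) \<in> extensional (preimg sm (Spec H) U)" by simp
  fix Q assume Q: "Q \<in> preimg sm (Spec H) U"
  have QQ: "Q \<in> Spec H" "sm Q \<in> U" using preimg_D[OF Q] by auto
  note fr = pk_facts[OF U rs Q]
  define a where "a = fst (pk (\<lambda>P\<in>U. loc_class R (KR - P) c (hone R)) (sm Q))"
  define h where "h = snd (pk (\<lambda>P\<in>U. loc_class R (KR - P) c (hone R)) (sm Q))"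
  note defs = a_def[symmetric] h_def[symmetric]
  note fr = fr[unfolded defs]
  have "pk (\<lambda>P\<in>U. loc_class R (KR - P) c (hone R)) (sm Q) \<in> Cc R (KR - sm Q) c (hone R)"
    using fr(9) R.hasvalD(4)[OF cv QQ(2)] by simp
  hence ah: "hmul R a (hone R) = hmul R c h" using R.C_mem[of a h] unfolding a_def h_def by simp
  hence ah': "a = hmul R c h" using fr(1) by simp
  have pc: "\<phi> c \<in> KH" using phi_in[OF c] .
  have eq: "hmul H (\<phi> a) (hone H) = hmul H (\<phi> c) (\<phi> h)"
    using ah' phi_mul[OF c fr(2)] H.mul_one[OF fr(6)] by simp
  have "fsphi R H \<phi> U (\<lambda>P\<in>U. loc_class R (KR - P) c (hone R)) Q = Cc H (KH - Q) (\<phi> a) (\<phi> h)"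
    using fsphi_apply[OF U rs Q] unfolding defs .
  also have "\<dots> = Cc H (KH - Q) (\<phi> c) (hone H)"
    using H.C_cong[OF _ fr(6) pc fr(5) H.one_in fr(7) H.zero_ne_one(2) eq] by blast
  also have "\<dots> = loc_class H (KH - Q) (\<phi> c) (hone H)" using H.loc_class_C[OF QQ(1) pc H.one_in H.spec_one[OF QQ(1)]] by simp
  finally show "fsphi R H \<phi> U (\<lambda>P\<in>U. loc_class R (KR - P) c (hone R)) Q = (\<lambda>P\<in>preimg sm (Spec H) U. loc_class H (KH - P) (\<phi> c) (hone H)) Q"
    using Q by simp
qed

lemma fsphi_hom: assumes U: "zariski_open R U"
  shows "hyperring_hom (OX R U) (OX H (preimg sm (Spec H) U)) (fsphi R H \<phi> U)"
  unfolding hyperring_hom_def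
proof (intro conjI ballI)
  have cR: "carrier (OX R U) = sections R U" and cH: "carrier (OX H (preimg sm (Spec H) U)) = sections H (preimg sm (Spec H) U)"
    unfolding OX_def by simp_all
  show "fsphi R H \<phi> U \<in> carrier (OX R U) \<rightarrow> carrier (OX H (preimg sm (Spec H) U))"
    unfolding cR cH using fsphi_sec[OF U] by blast
  fix s t assume s: "s \<in> carrier (OX R U)" and t: "t \<in> carrier (OX R U)"
  show "fsphi R H \<phi> U ` hadd (OX R U) s t \<subseteq> hadd (OX H (preimg sm (Spec H) U)) (fsphi R H \<phi> U s) (fsphi R H \<phi> U t)"
    using fsphi_add[OF U s[unfolded cR] t[unfolded cR]] by blast
  show "fsphi R H \<phi> U (hmul (OX R U) s t) = hmul (OX H (preimg sm (Spec H) U)) (fsphi R H \<phi> U s) (fsphi R H \<phi> U t)"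
    using fsphi_mul[OF U s[unfolded cR] t[unfolded cR]] .
next
  show "fsphi R H \<phi> U (hzero (OX R U)) = hzero (OX H (preimg sm (Spec H) U))"
    unfolding OX_def using fsphi_const[OF U R.zero_in] phi_zero by (simp add: OX_def)
  show "fsphi R H \<phi> U (hone (OX R U)) = hone (OX H (preimg sm (Spec H) U))"
    unfolding OX_def using fsphi_const[OF U R.one_in] phi_one by (simp add: OX_def)
qed

end

context hdom begin
lemma pk_restrict: "P \<in> V \<Longrightarrow> pk (restrict s V) P = pk s P"
  unfolding pk_def by simp
end

context hphi begin

lemma fsphi_restrict: assumes U: "zariski_open R U" and V: "zariski_open R V" "V \<subseteq> U" and s: "s \<in> sections R U"
  shows "fsphi R H \<phi> V (restrict s V) = restrict (fsphi R H \<phi> U s) (preimg sm (Spec H) V)"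
proof (rule extensionalityI)
  have rs: "restrict s V \<in> sections R V" using R.sec_restrict[OF V(1) U V(2) s] .
  show "fsphi R H \<phi> V (restrict s V) \<in> extensional (preimg sm (Spec H) V)" using fsphi_ext[OF V(1) rs] .
  show "restrict (fsphi R H \<phi> U s) (preimg sm (Spec H) V) \<in> extensional (preimg sm (Spec H) V)" by simp
  fix Q assume Q: "Q \<in> preimg sm (Spec H) V"
  have QQ: "Q \<in> Spec H" "sm Q \<in> V" using preimg_D[OF Q] by auto
  have QU: "Q \<in> preimg sm (Spec H) U" using Q V(2) unfolding preimg_def by blast
  show "fsphi R H \<phi> V (restrict s V) Q = restrict (fsphi R H \<phi> U s) (preimg sm (Spec H) V) Q"
    using fsphi_apply[OF V(1) rs Q] fsphi_apply[OF U s QU] R.pk_restrict[OF QQ(2)] Q by simp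
qed

lemma stalk_map_phi: assumes P: "P \<in> Spec H" and g: "g \<in> stalk_carrier R (sm P)"
  shows "stalk_map H sm (fsphi R H \<phi>) P g \<in> stalk_carrier H P"
    "g \<in> NUS R (sm P) \<longleftrightarrow> stalk_map H sm (fsphi R H \<phi>) P g \<in> NUS H P"
proof -
  obtain U s where x: "(SOME x. x \<in> g) = (U,s)" by fastforce
  note sg = R.stalk_some[OF g, unfolded x, simplified]
  have sm_e: "stalk_map H sm (fsphi R H \<phi>) P g = germ H P (preimg sm (Spec H) U) (fsphi R H \<phi> U s)"
    unfolding stalk_map_def x by simp
  have PU: "P \<in> preimg sm (Spec H) U" unfolding preimg_def using P sg(3) by blast
  note o = preimg_open[OF sg(2)] and fsec = fsphi_sec[OF sg(2) sg(4)]
  show "stalk_map H sm (fsphi R H \<phi>) P g \<in> stalk_carrier H P" using H.germ_in[OF o PU fsec] sm_e by simp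
  have pvH: "pv H P (stalk_map H sm (fsphi R H \<phi>) P g) = fsphi R H \<phi> U s P" using H.germ_pv[OF o PU fsec] sm_e by simp
  note f = pk_facts[OF sg(2) sg(4) PU]
  have PS: "sm P \<in> Spec R" using sm_spec[OF P] .
  have "g \<in> NUS R (sm P) \<longleftrightarrow> pv R (sm P) g \<in> NUL R (sm P)" unfolding NUS_def using g by blast
  also have "\<dots> \<longleftrightarrow> fst (pk s (sm P)) \<in> sm P" using sg(5) f(8) R.NUL_C[OF PS f(1,2,3)] by simp
  also have "\<dots> \<longleftrightarrow> \<phi> (fst (pk s (sm P))) \<in> P" using sm_in_iff[OF P f(1)] .
  also have "\<dots> \<longleftrightarrow> fsphi R H \<phi> U s P \<in> NUL H P"
    using fsphi_apply[OF sg(2) sg(4) PU] H.NUL_C[OF P f(6,5,4)] by simp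
  also have "\<dots> \<longleftrightarrow> stalk_map H sm (fsphi R H \<phi>) P g \<in> NUS H P"
    unfolding NUS_def using pvH H.germ_in[OF o PU fsec] sm_e by simp
  finally show "g \<in> NUS R (sm P) \<longleftrightarrow> stalk_map H sm (fsphi R H \<phi>) P g \<in> NUS H P" .
qed

lemma stalk_carrier_eq: "carrier (stalk A P) = stalk_carrier A P" unfolding stalk_def by simp

lemma phi_lhs: "(sm, fsphi R H \<phi>) \<in> lhs_morphisms H R"
proof -
  have smS: "sm \<in> Spec H \<rightarrow> Spec R" using sm_spec by blast
  have loc: "\<forall>P\<in>Spec H. \<forall>m n. maximal_hyperideal (stalk R (sm P)) m \<and> maximal_hyperideal (stalk H P) n \<longrightarrow>
        {g \<in> carrier (stalk R (sm P)). stalk_map H sm (fsphi R H \<phi>) P g \<in> n} = m"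
  proof (intro ballI allI impI)
    fix P m n assume P: "P \<in> Spec H" and mn: "maximal_hyperideal (stalk R (sm P)) m \<and> maximal_hyperideal (stalk H P) n"
    have m: "m = NUS R (sm P)" using mn R.NUS_max[OF sm_spec[OF P]] by blast
    have n: "n = NUS H P" using mn H.NUS_max[OF P] by blast
    show "{g \<in> carrier (stalk R (sm P)). stalk_map H sm (fsphi R H \<phi>) P g \<in> n} = m"
      unfolding m n stalk_carrier_eq using stalk_map_phi[OF P] unfolding NUS_def by blast
  qed
  have "is_lhs_morphism H R sm (fsphi R H \<phi>)" unfolding is_lhs_morphism_def
    using smS preimg_open fsphi_hom fsphi_restrict loc by blast
  moreover have "sm \<in> extensional (Spec H)" unfolding spec_map_def by simp
  moreover have "\<forall>U. if zariski_open R U then fsphi R H \<phi> U \<in> extensional (sections R U) else fsphi R H \<phi> U = undefined"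
    unfolding fsphi_def by simp
  ultimately show ?thesis unfolding lhs_morphisms_def by blast
qed

lemma fsphi_gc: assumes r: "r \<in> KR"
  shows "fsphi R H \<phi> (Spec R) (global_canon R r) = global_canon H (\<phi> r)"
  using fsphi_const[OF R.open_Spec r] preimg_X unfolding global_canon_def by simp

lemma phi_global: assumes e: "\<phi> \<in> extensional KR" shows "global_hom R H (sm, fsphi R H \<phi>) = \<phi>"
proof (rule ext)
  fix r show "global_hom R H (sm, fsphi R H \<phi>) r = \<phi> r"
  proof (cases "r \<in> KR")
    case True
    have "(THE h. h \<in> KH \<and> global_canon H h = fsphi R H \<phi> (Spec R) (global_canon R r)) = \<phi> r"
    proof (rule the_equality)
      show "\<phi> r \<in> KH \<and> global_canon H (\<phi> r) = fsphi R H \<phi> (Spec R) (global_canon R r)"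
        using phi_in[OF True] fsphi_gc[OF True] by simp
      fix h assume "h \<in> KH \<and> global_canon H h = fsphi R H \<phi> (Spec R) (global_canon R r)"
      thus "h = \<phi> r" using H.gc_inj[OF _ phi_in[OF True]] fsphi_gc[OF True] by simp
    qed
    thus ?thesis unfolding global_hom_def using True by simp
  next
    case False thus ?thesis unfolding global_hom_def using e by (simp add: extensional_def)
  qed
qed

end

locale hmor = hdom2 + fixes f :: "'b set \<Rightarrow> 'a set" and fs :: "('a, 'b) sheaf_map"
  assumes mem: "(f, fs) \<in> lhs_morphisms H R"
begin

abbreviation "KR \<equiv> carrier R"
abbreviation "KH \<equiv> carrier H"
abbreviation "\<psi> \<equiv> global_hom R H (f, fs)"

lemma F: "f \<in> Spec H \<rightarrow> Spec R"
  "\<And>U. zariski_open R U \<Longrightarrow> zariski_open H (preimg f (Spec H) U)"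
  "\<And>U. zariski_open R U \<Longrightarrow> hyperring_hom (OX R U) (OX H (preimg f (Spec H) U)) (fs U)"
  "\<And>U V s. zariski_open R U \<Longrightarrow> zariski_open R V \<Longrightarrow> V \<subseteq> U \<Longrightarrow> s \<in> sections R U \<Longrightarrow>
        fs V (restrict s V) = restrict (fs U s) (preimg f (Spec H) V)"
  "\<And>P m n. P \<in> Spec H \<Longrightarrow> maximal_hyperideal (stalk R (f P)) m \<Longrightarrow> maximal_hyperideal (stalk H P) n \<Longrightarrow>
        {g \<in> carrier (stalk R (f P)). stalk_map H f fs P g \<in> n} = m"
  "f \<in> extensional (Spec H)"
  "\<And>U. zariski_open R U \<Longrightarrow> fs U \<in> extensional (sections R U)"
  "\<And>U. \<not> zariski_open R U \<Longrightarrow> fs U = undefined"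
  using mem unfolding lhs_morphisms_def is_lhs_morphism_def by auto

lemma fS: "P \<in> Spec H \<Longrightarrow> f P \<in> Spec R" using F(1) by blast

lemma preimg_fX: "preimg f (Spec H) (Spec R) = Spec H"
  unfolding preimg_def using fS by blast

lemma preimg_fD: "Q \<in> preimg f (Spec H) U \<Longrightarrow> Q \<in> Spec H \<and> f Q \<in> U" unfolding preimg_def by simp

lemma cOX: "carrier (OX A U) = sections A U" unfolding OX_def by simp

lemma fs_sec: assumes U: "zariski_open R U" and s: "s \<in> sections R U"
  shows "fs U s \<in> sections H (preimg f (Spec H) U)"
  using F(3)[OF U] s unfolding hyperring_hom_def cOX by blast

lemma fs_hom: assumes U: "zariski_open R U"
  shows "\<And>s t. s \<in> sections R U \<Longrightarrow> t \<in> sections R U \<Longrightarrow>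
      fs U ` hadd (OX R U) s t \<subseteq> hadd (OX H (preimg f (Spec H) U)) (fs U s) (fs U t)"
    "\<And>s t. s \<in> sections R U \<Longrightarrow> t \<in> sections R U \<Longrightarrow>
      fs U (hmul (OX R U) s t) = hmul (OX H (preimg f (Spec H) U)) (fs U s) (fs U t)"
    "fs U (hzero (OX R U)) = hzero (OX H (preimg f (Spec H) U))"
    "fs U (hone (OX R U)) = hone (OX H (preimg f (Spec H) U))"
  using F(3)[OF U] unfolding hyperring_hom_def cOX by auto

lemma psi_char: assumes r: "r \<in> KR" shows "\<psi> r \<in> KH" "global_canon H (\<psi> r) = fs (Spec R) (global_canon R r)"
proof -
  have "fs (Spec R) (global_canon R r) \<in> sections H (Spec H)"
    using fs_sec[OF R.open_Spec R.gc_sec[OF r]] preimg_fX by simp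
  then obtain h where h: "h \<in> KH" "fs (Spec R) (global_canon R r) = global_canon H h" using H.glob_sec by blast
  have ex: "\<exists>!h. h \<in> KH \<and> global_canon H h = fs (Spec R) (global_canon R r)"
    using h H.gc_inj by metis
  have "\<psi> r = (THE h. h \<in> KH \<and> global_canon H h = fs (Spec R) (global_canon R r))"
    unfolding global_hom_def using r by simp
  hence "\<psi> r \<in> KH \<and> global_canon H (\<psi> r) = fs (Spec R) (global_canon R r)" using theI'[OF ex] by simp
  thus "\<psi> r \<in> KH" "global_canon H (\<psi> r) = fs (Spec R) (global_canon R r)" by auto
qed

lemma psi_hom: "\<psi> \<in> hyperring_homs R H"
proof -
  note X = R.open_Spec
  have pX: "preimg f (Spec H) (Spec R) = Spec H" using preimg_fX .
  have i1: "\<psi> \<in> KR \<rightarrow> KH" using psi_char(1) by blast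
  have i2: "\<forall>a\<in>KR. \<forall>b\<in>KR. \<psi> ` hadd R a b \<subseteq> hadd H (\<psi> a) (\<psi> b)"
  proof (intro ballI subsetI)
    fix a b z assume a: "a \<in> KR" and b: "b \<in> KR" and z: "z \<in> \<psi> ` hadd R a b"
    then obtain y where y: "y \<in> hadd R a b" "z = \<psi> y" by blast
    have yK: "y \<in> KR" using R.add_in[OF a b y(1)] .
    have "fs (Spec R) (global_canon R y) \<in> fs (Spec R) ` hadd (OX R (Spec R)) (global_canon R a) (global_canon R b)"
      using R.gc_add[OF a b y(1)] by (rule imageI)
    hence "fs (Spec R) (global_canon R y) \<in> hadd (OX H (Spec H)) (fs (Spec R) (global_canon R a)) (fs (Spec R) (global_canon R b))"
      using fs_hom(1)[OF X R.gc_sec[OF a] R.gc_sec[OF b]] pX by auto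
    hence "global_canon H (\<psi> y) \<in> hadd (OX H (Spec H)) (global_canon H (\<psi> a)) (global_canon H (\<psi> b))"
      using psi_char(2) a b yK by simp
    thus "z \<in> hadd H (\<psi> a) (\<psi> b)" using H.gc_add_rev[OF psi_char(1)[OF a] psi_char(1)[OF b] psi_char(1)[OF yK]] y(2) by simp
  qed
  have i3: "\<forall>a\<in>KR. \<forall>b\<in>KR. \<psi> (hmul R a b) = hmul H (\<psi> a) (\<psi> b)"
  proof (intro ballI)
    fix a b assume a: "a \<in> KR" and b: "b \<in> KR"
    have ab: "hmul R a b \<in> KR" using R.mul_in[OF a b] .
    have "global_canon H (\<psi> (hmul R a b)) = fs (Spec R) (global_canon R (hmul R a b))" using psi_char(2)[OF ab] .
    also have "\<dots> = fs (Spec R) (hmul (OX R (Spec R)) (global_canon R a) (global_canon R b))" using R.gc_mul[OF a b] by simp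
    also have "\<dots> = hmul (OX H (Spec H)) (fs (Spec R) (global_canon R a)) (fs (Spec R) (global_canon R b))"
      using fs_hom(2)[OF X R.gc_sec[OF a] R.gc_sec[OF b]] pX by simp
    also have "\<dots> = hmul (OX H (Spec H)) (global_canon H (\<psi> a)) (global_canon H (\<psi> b))" using psi_char(2) a b by simp
    also have "\<dots> = global_canon H (hmul H (\<psi> a) (\<psi> b))" using H.gc_mul psi_char(1) a b by simp
    finally show "\<psi> (hmul R a b) = hmul H (\<psi> a) (\<psi> b)"
      using H.gc_inj[OF psi_char(1)[OF ab] H.mul_in[OF psi_char(1)[OF a] psi_char(1)[OF b]]] by simp
  qed
  have i4: "\<psi> (hzero R) = hzero H"
  proof -
    have "global_canon H (\<psi> (hzero R)) = fs (Spec R) (hzero (OX R (Spec R)))" using psi_char(2)[OF R.zero_in] R.OX_hzero_gc by simp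
    also have "\<dots> = global_canon H (hzero H)" using fs_hom(3)[OF X] pX H.OX_hzero_gc by simp
    finally show ?thesis using H.gc_inj[OF psi_char(1)[OF R.zero_in] H.zero_in] by simp
  qed
  have i5: "\<psi> (hone R) = hone H"
  proof -
    have "global_canon H (\<psi> (hone R)) = fs (Spec R) (hone (OX R (Spec R)))" using psi_char(2)[OF R.one_in] R.OX_hone_gc by simp
    also have "\<dots> = global_canon H (hone H)" using fs_hom(4)[OF X] pX H.OX_hone_gc by simp
    finally show ?thesis using H.gc_inj[OF psi_char(1)[OF R.one_in] H.one_in] by simp
  qed
  have "\<psi> \<in> extensional KR" unfolding global_hom_def by simp
  thus ?thesis unfolding hyperring_homs_def hyperring_hom_def using i1 i2 i3 i4 i5 by blast
qed

lemma stalk_carrier_eq: "carrier (stalk A P) = stalk_carrier A P" unfolding stalk_def by simp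

lemma f_point: assumes P: "P \<in> Spec H" and r: "r \<in> KR" shows "r \<in> f P \<longleftrightarrow> \<psi> r \<in> P"
proof -
  have fP: "f P \<in> Spec R" using fS[OF P] .
  have loc: "{g \<in> stalk_carrier R (f P). stalk_map H f fs P g \<in> NUS H P} = NUS R (f P)"
  proof -
    have "{g \<in> carrier (stalk R (f P)). stalk_map H f fs P g \<in> NUS H P} = NUS R (f P)"
      using F(5)[OF P, of "NUS R (f P)" "NUS H P"] R.NUS_max[OF fP] H.NUS_max[OF P] by simp
    thus ?thesis unfolding stalk_carrier_eq .
  qed
  define g where "g = germ R (f P) (Spec R) (global_canon R r)"
  have gc: "g \<in> stalk_carrier R (f P)" unfolding g_def using R.germ_in[OF R.open_Spec fP R.gc_sec[OF r]] .
  have pvg: "pv R (f P) g = Cc R (KR - f P) r (hone R)"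
    unfolding g_def using R.germ_pv[OF R.open_Spec fP R.gc_sec[OF r]] R.gc_apply[OF fP r] by simp
  have "g \<in> NUS R (f P) \<longleftrightarrow> r \<in> f P"
    unfolding NUS_def using gc pvg R.NUL_C[OF fP r R.one_in R.spec_one[OF fP]] by simp
  moreover have "g \<in> NUS R (f P) \<longleftrightarrow> stalk_map H f fs P g \<in> NUS H P" using loc gc by blast
  moreover have "stalk_map H f fs P g \<in> NUS H P \<longleftrightarrow> \<psi> r \<in> P"
  proof -
    obtain U s where x: "(SOME x. x \<in> g) = (U,s)" by fastforce
    note sg = R.stalk_some[OF gc, unfolded x, simplified]
    have UX: "U \<subseteq> Spec R" using R.open_sub[OF sg(2)] .
    have "s (f P) = global_canon R r (f P)" using sg(5) unfolding g_def
      using R.germ_pv[OF R.open_Spec fP R.gc_sec[OF r]] by simp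
    hence s_eq: "s = restrict (global_canon R r) U"
      using R.sec_eq_restrict[OF sg(2) R.open_Spec UX sg(4) R.gc_sec[OF r] sg(3)] by simp
    have fsU: "fs U s = restrict (global_canon H (\<psi> r)) (preimg f (Spec H) U)"
      using F(4)[OF R.open_Spec sg(2) UX R.gc_sec[OF r]] s_eq psi_char(2)[OF r] preimg_fX by simp
    have sm_e: "stalk_map H f fs P g = germ H P (preimg f (Spec H) U) (fs U s)"
      unfolding stalk_map_def x by simp
    have PU: "P \<in> preimg f (Spec H) U" unfolding preimg_def using P sg(3) by blast
    note o = F(2)[OF sg(2)] and fsec = fs_sec[OF sg(2) sg(4)]
    have gin: "stalk_map H f fs P g \<in> stalk_carrier H P" using H.germ_in[OF o PU fsec] sm_e by simp
    have "pv H P (stalk_map H f fs P g) = fs U s P" using H.germ_pv[OF o PU fsec] sm_e by simp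
    also have "\<dots> = Cc H (KH - P) (\<psi> r) (hone H)" using fsU PU H.gc_apply[OF P psi_char(1)[OF r]] by simp
    finally have "pv H P (stalk_map H f fs P g) = Cc H (KH - P) (\<psi> r) (hone H)" .
    thus ?thesis unfolding NUS_def using gin H.NUL_C[OF P psi_char(1)[OF r] H.one_in H.spec_one[OF P]] by simp
  qed
  ultimately show ?thesis by simp
qed

lemma f_eq: "f = spec_map R H \<psi>"
proof (rule extensionalityI[OF F(6)])
  show "spec_map R H \<psi> \<in> extensional (Spec H)" unfolding spec_map_def by simp
  fix P assume P: "P \<in> Spec H"
  have "f P \<subseteq> KR" using R.spec_D(1)[OF fS[OF P]] .
  hence "f P = {x \<in> KR. \<psi> x \<in> P}" using f_point[OF P] by blast
  thus "f P = spec_map R H \<psi> P" unfolding spec_map_def using P by simp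
qed

end

context hmor begin

lemma fs_eq: "fs = fsphi R H \<psi>"
proof -
  have hom: "hyperring_hom R H \<psi>" using psi_hom unfolding hyperring_homs_def by blast
  interpret P: hphi R H \<psi> by (unfold_locales) (rule hom)
  have fe: "f = spec_map R H \<psi>" using f_eq .
  show ?thesis
  proof (rule ext)
    fix U show "fs U = fsphi R H \<psi> U"
    proof (cases "zariski_open R U")
      case False thus ?thesis using F(8) unfolding fsphi_def by simp
    next
      case U: True
      show ?thesis
      proof (rule extensionalityI[OF F(7)[OF U]])
        show "fsphi R H \<psi> U \<in> extensional (sections R U)" unfolding fsphi_def using U by simp
        fix s assume s: "s \<in> sections R U"
        show "fs U s = fsphi R H \<psi> U s"
        proof (rule extensionalityI)
          show "fs U s \<in> extensional (preimg f (Spec H) U)" using H.sec_ext[OF fs_sec[OF U s]] .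
          show "fsphi R H \<psi> U s \<in> extensional (preimg f (Spec H) U)" using P.fsphi_ext[OF U s] fe by simp
          fix Q assume Q: "Q \<in> preimg f (Spec H) U"
          have QQ: "Q \<in> Spec H" "f Q \<in> U" using preimg_fD[OF Q] by auto
          define P where "P = f Q"
          have PS: "P \<in> Spec R" using fS[OF QQ(1)] unfolding P_def .
          have PU: "P \<in> U" using QQ(2) unfolding P_def .
          note pk = R.pk_prop[OF s PU]
          define a where "a = fst (pk s P)"
          define g where "g = snd (pk s P)"
          have ag: "a \<in> KR" "g \<in> KR" "g \<notin> P" "s P = Cc R (KR - P) a g" using pk unfolding a_def g_def by auto
          have gz: "g \<noteq> hzero R" using ag(3) PS by auto
          let ?W = "U \<inter> {P'\<in>Spec R. g \<notin> P'}"
          have W: "zariski_open R ?W" using R.open_Int[OF U R.open_D1[OF ag(2)]] .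
          have PW: "P \<in> ?W" using PU PS ag(3) by blast
          have WU: "?W \<subseteq> U" by blast
          have WX: "?W \<subseteq> Spec R" by blast
          obtain a0 f0 where v0: "hasval R U s a0 f0" using R.sec_val[OF s] PU by blast
          have "pk s P \<in> Cc R (KR - P) a0 f0" using pk(5) R.hasvalD(4)[OF v0 PU] by simp
          hence e0: "hmul R a f0 = hmul R a0 g"
            using R.C_mem_cong(5)[OF PS R.hasvalD(1-3)[OF v0]] unfolding a_def g_def by blast
          have vs: "hasval R ?W (restrict s ?W) a g"
            using R.val_cong[OF R.val_mono[OF v0 WU] ag(1,2) gz] e0 by simp
          have vg: "hasval R ?W (restrict (global_canon R g) ?W) g (hone R)"
            using R.val_mono[OF R.gc_val[OF ag(2)] WX] by simp
          have va: "hasval R ?W (restrict (global_canon R a) ?W) a (hone R)"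
            using R.val_mono[OF R.gc_val[OF ag(1)] WX] by simp
          have ss: "restrict s ?W \<in> sections R ?W" using R.sec_restrict[OF W U WU s] .
          have sg: "restrict (global_canon R g) ?W \<in> sections R ?W"
            using R.sec_restrict[OF W R.open_Spec WX R.gc_sec[OF ag(2)]] .
          have sa: "restrict (global_canon R a) ?W \<in> sections R ?W"
            using R.sec_restrict[OF W R.open_Spec WX R.gc_sec[OF ag(1)]] .
          have vp: "hasval R ?W (hmul (OX R ?W) (restrict s ?W) (restrict (global_canon R g) ?W)) (hmul R a g) (hmul R g (hone R))"
            using R.OX_mul_val[OF WX vs vg] .
          have prod: "hmul (OX R ?W) (restrict s ?W) (restrict (global_canon R g) ?W) = restrict (global_canon R a) ?W"
          proof (rule R.val_eq[OF _ _ vp va])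
            show "hmul (OX R ?W) (restrict s ?W) (restrict (global_canon R g) ?W) \<in> extensional ?W" unfolding OX_def by simp
            show "restrict (global_canon R a) ?W \<in> extensional ?W" by simp
            show "hmul R (hmul R a g) (hone R) = hmul R a (hmul R g (hone R))" using ag(1,2) by simp
          qed
          let ?W' = "preimg f (Spec H) ?W"
          have h1: "fs ?W (restrict (global_canon R a) ?W) = hmul (OX H ?W') (fs ?W (restrict s ?W)) (fs ?W (restrict (global_canon R g) ?W))"
            using fs_hom(2)[OF W ss sg] prod by simp
          have h2: "fs ?W (restrict (global_canon R a) ?W) = restrict (global_canon H (\<psi> a)) ?W'"
            using F(4)[OF R.open_Spec W WX R.gc_sec[OF ag(1)]] psi_char(2)[OF ag(1)] by simp
          have h3: "fs ?W (restrict (global_canon R g) ?W) = restrict (global_canon H (\<psi> g)) ?W'"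
            using F(4)[OF R.open_Spec W WX R.gc_sec[OF ag(2)]] psi_char(2)[OF ag(2)] by simp
          have h4: "fs ?W (restrict s ?W) = restrict (fs U s) ?W'" using F(4)[OF U W WU s] .
          have QW: "Q \<in> ?W'" unfolding preimg_def using QQ(1) PW unfolding P_def by blast
          have "global_canon H (\<psi> a) Q = loc_mul H (KH - Q) (fs U s Q) (global_canon H (\<psi> g) Q)"
            using arg_cong[OF h1, of "\<lambda>x. x Q"] h2 h3 h4 QW unfolding OX_def by simp
          hence eq1: "Cc H (KH - Q) (\<psi> a) (hone H) = loc_mul H (KH - Q) (fs U s Q) (Cc H (KH - Q) (\<psi> g) (hone H))"
            using H.gc_apply[OF QQ(1) psi_char(1)[OF ag(1)]] H.gc_apply[OF QQ(1) psi_char(1)[OF ag(2)]] by simp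
          obtain b h where bh: "b \<in> KH" "h \<in> KH" "h \<notin> Q" "fs U s Q = Cc H (KH - Q) b h"
            using H.L_elem[OF QQ(1) H.sec_loc[OF fs_sec[OF U s] Q]] by blast
          have pa: "\<psi> a \<in> KH" and pg: "\<psi> g \<in> KH" using psi_char(1) ag by auto
          have pgQ: "\<psi> g \<notin> Q" using f_point[OF QQ(1) ag(2)] ag(3) unfolding P_def by simp
          have "Cc H (KH - Q) (\<psi> a) (hone H) = Cc H (KH - Q) (hmul H b (\<psi> g)) (hmul H h (hone H))"
            using eq1 bh(4) H.loc_mul_C[OF QQ(1) bh(1) pg bh(2) H.one_in bh(3) H.spec_one[OF QQ(1)]] by simp
          moreover have "(\<psi> a, hone H) \<in> Cc H (KH - Q) (\<psi> a) (hone H)" using H.C_self[of "\<psi> a" "hone H" "KH - Q"] pa QQ(1) by simp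
          ultimately have "hmul H (\<psi> a) (hmul H h (hone H)) = hmul H (hmul H b (\<psi> g)) (hone H)"
            using H.C_eq[OF H.T_sub[OF QQ(1)] pa H.mul_in[OF bh(1) pg] H.one_in H.mul_in[OF bh(2) H.one_in]] by blast
          hence bg: "hmul H b (\<psi> g) = hmul H (\<psi> a) h" using bh pa pg by simp
          have hz: "h \<noteq> hzero H" using bh(3) QQ(1) by auto
          have pgz: "\<psi> g \<noteq> hzero H" using pgQ QQ(1) by auto
          have "fs U s Q = Cc H (KH - Q) (\<psi> a) (\<psi> g)"
            using bh(4) H.C_cong[OF _ bh(1) pa bh(2) pg hz pgz bg] by blast
          moreover have "fsphi R H \<psi> U s Q = Cc H (KH - Q) (\<psi> a) (\<psi> g)"
            using P.fsphi_apply[OF U s] Q fe unfolding a_def g_def P_def by simp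
          ultimately show "fs U s Q = fsphi R H \<psi> U s Q" by simp
        qed
      qed
    qed
  qed
qed

end

theorem proposition4p31:
  fixes R :: "'a hyperring" and H :: "'b hyperring"
  assumes "hyperdomain R" and "hyperdomain H"
  shows "\<exists>\<Phi>. bij_betw \<Phi> (hyperring_homs R H) (lhs_morphisms H R) \<and>
           (\<forall>\<phi>\<in>hyperring_homs R H. fst (\<Phi> \<phi>) = spec_map R H \<phi> \<and> global_hom R H (\<Phi> \<phi>) = \<phi>)"
proof -
  interpret hdom2 R H by unfold_locales (use assms in auto)
  define \<Phi> where "\<Phi> = (\<lambda>\<phi>. (spec_map R H \<phi>, fsphi R H \<phi>))"
  have fw: "\<Phi> \<phi> \<in> lhs_morphisms H R \<and> global_hom R H (\<Phi> \<phi>) = \<phi>" if p: "\<phi> \<in> hyperring_homs R H" for \<phi>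
  proof -
    have hom: "hyperring_hom R H \<phi>" and ex: "\<phi> \<in> extensional (carrier R)" using p unfolding hyperring_homs_def by auto
    interpret hphi R H \<phi> by unfold_locales (rule hom)
    show ?thesis unfolding \<Phi>_def using phi_lhs phi_global[OF ex] by simp
  qed
  have bw: "global_hom R H m \<in> hyperring_homs R H \<and> \<Phi> (global_hom R H m) = m" if m: "m \<in> lhs_morphisms H R" for m
  proof -
    obtain f fs where mm: "m = (f, fs)" by fastforce
    interpret hmor R H f fs by unfold_locales (use m mm in simp)
    show ?thesis unfolding \<Phi>_def mm using psi_hom f_eq fs_eq by simp
  qed
  have "bij_betw \<Phi> (hyperring_homs R H) (lhs_morphisms H R)"
    unfolding bij_betw_def
  proof
    show "inj_on \<Phi> (hyperring_homs R H)"
    proof (rule inj_onI)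
      fix x y assume "x \<in> hyperring_homs R H" "y \<in> hyperring_homs R H" "\<Phi> x = \<Phi> y"
      thus "x = y" using fw by metis
    qed
    show "\<Phi> ` hyperring_homs R H = lhs_morphisms H R"
    proof
      show "\<Phi> ` hyperring_homs R H \<subseteq> lhs_morphisms H R" using fw by blast
      show "lhs_morphisms H R \<subseteq> \<Phi> ` hyperring_homs R H"
      proof
        fix m assume m: "m \<in> lhs_morphisms H R"
        thus "m \<in> \<Phi> ` hyperring_homs R H" using bw[OF m] by (metis imageI)
      qed
    qed
  qed
  moreover have "\<forall>\<phi>\<in>hyperring_homs R H. fst (\<Phi> \<phi>) = spec_map R H \<phi> \<and> global_hom R H (\<Phi> \<phi>) = \<phi>"
    using fw unfolding \<Phi>_def by simp
  ultimately show ?thesis by blast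
qed


end
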